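(* Let $n \geq 1$. The triple $(\mathcal{G}([n]), \mathbf{g}_{[n]}, (\gamma_1, \dots, \gamma_n))$ is an $n$-expansion group, and the unique homomorphism of $n$-expansion groups $\mathcal{C}([n]) \to \mathcal{G}([n])$ sending $x_i \mapsto \gamma_i$ is an isomorphism. Every $n$-expansion group $(G, \phi, (g_1, \dots, g_n))$ admits a unique epimorphism of $n$-expansion groups $(\mathcal{G}([n]), \mathbf{g}_{[n]}, (\gamma_1, \dots, \gamma_n)) \twoheadrightarrow (G, \phi, (g_1, \dots, g_n))$. In particular $\#G \leq 2^{n 2^{n-1} - 2^n + n + 1}$, with equality if and only if this epimorphism is an isomorphism.
   Context: $V_{[n]} = \mathbb{F}_2^n$ with standard basis $e_1,\dots,e_n$. An $n$-expansion group is a triple $(G, \phi, (g_1,\dots,g_n))$ where $G$ is a group, $\phi: G \to V_{[n]}$ is a homomorphism, $g_i \in G$ with $\phi(g_i) = e_i$ and $g_i^2 = 1$ for all $i$, $\ker\phi$ is an elementary abelian $2$-group, and $[G,G] = \ker \phi$. A homomorphism of $n$-expansion groups $(G,\phi,(g_i)) \to (G',\phi',(g_i'))$ is a group homomorphism $f$ with $f(g_i) = g_i'$ for all $i$. For $i \in [n]$, let $U_i$ be the $\mathbb{F}_2$-vector space with basis $\{e_A : A \subseteq [n], i \in A\}$, with $\mathbb{F}_2^{[n]\setminus\{i\}}$ acting linearly by $e_j \cdot e_A = e_A + e_{A \cup \{j\}}$ if $j \notin A$ and $e_j \cdot e_A = e_A$ if $j \in A$. Let $G_i([n]) = U_i \rtimes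 \mathbb{F}_2^{[n]\setminus\{i\}}$, let $g_{i,j} = (0, e_j)$ for $j \neq i$ and $g_{i,i} = (e_{\{i\}}, 0)$, and let $\phi_i: G_i([n]) \to V_{[n]}$ be the homomorphism $(u, w) \mapsto w + c(u) e_i$, where $c(u)$ is the coefficient of $e_{\{i\}}$ in $u$ (so $\phi_i(g_{i,j}) = e_j$). Let $\mathcal{G}([n])$ be the subgroup of $\prod_{i \in [n]} G_i([n])$ generated by $\gamma_j = (g_{1,j}, \dots, g_{n,j})$, $j \in [n]$, and $\mathbf{g}_{[n]}: \mathcal{G}([n]) \to V_{[n]}$ the restriction of $(\phi_1,\dots,\phi_n) \mapsto$ common value (i.e. $\mathbf{g}_{[n]}(\gamma_j) = e_j$). Let $F_{[n]}$ be the free group on $x_1,\dots,x_n$, $\widetilde{N}$ the smallest normal subgroup containing all squares of elements of $[F_{[n]},F_{[n]}]$ and $x_1^2,\dots,x_n^2$, $\mathcal{C}([n]) = F_{[n]}/\widetilde{N}$, viewed as an $n$-expansion group with generators the images of $x_i$ and the map to $V_{[n]}$ induced by $x_i \mapsto e_i$. *)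

theory Defs
  imports "HOL-Algebra.Algebra"
begin

section \<open>The group V_[n] = F_2^n, elements are subsets of {1..n} (e_i = {i})\<close>

definition symdiff :: "'a set \<Rightarrow> 'a set \<Rightarrow> 'a set" where
  "symdiff A B = (A - B) \<union> (B - A)"

definition Vn :: "nat \<Rightarrow> nat set monoid" where
  "Vn n = \<lparr>carrier = Pow {1..n}, monoid.mult = symdiff, one = {}\<rparr>"

definition expansion_group ::
  "nat \<Rightarrow> ('a, 'b) monoid_scheme \<Rightarrow> ('a \<Rightarrow> nat set) \<Rightarrow> (nat \<Rightarrow> 'a) \<Rightarrow> bool" where
  "expansion_group n G \<phi> g \<longleftrightarrow>
     group G \<and> \<phi> \<in> hom G (Vn n) \<and>
     (\<forall>i\<in>{1..n}. g i \<in> carrier G \<and> \<phi> (g i) = {i} \<and> g i \<otimes>\<^bsub>G\<^esub> g i = \<one>\<^bsub>G\<^esub>) \<and>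
     (\<forall>x\<in>kernel G (Vn n) \<phi>. \<forall>y\<in>kernel G (Vn n) \<phi>. x \<otimes>\<^bsub>G\<^esub> y = y \<otimes>\<^bsub>G\<^esub> x) \<and>
     (\<forall>x\<in>kernel G (Vn n) \<phi>. x \<otimes>\<^bsub>G\<^esub> x = \<one>\<^bsub>G\<^esub>) \<and>
     derived G (carrier G) = kernel G (Vn n) \<phi>"

definition expansion_hom ::
  "nat \<Rightarrow> ('a, 'b) monoid_scheme \<Rightarrow> (nat \<Rightarrow> 'a) \<Rightarrow> ('c, 'd) monoid_scheme \<Rightarrow> (nat \<Rightarrow> 'c)
     \<Rightarrow> ('a \<Rightarrow> 'c) \<Rightarrow> bool" where
  "expansion_hom n G g H h f \<longleftrightarrow> f \<in> hom G H \<and> (\<forall>i\<in>{1..n}. f (g i) = h i)"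

text \<open>An element of U_i is the set of those A (A \<subseteq> [n], i \<in> A) whose basis vector e_A
  has coefficient 1. An element of F_2^([n]-{i}) is a subset w of [n]-{i}.\<close>

definition Ucar :: "nat \<Rightarrow> nat \<Rightarrow> nat set set set" where
  "Ucar n i = Pow {A. A \<subseteq> {1..n} \<and> i \<in> A}"

text \<open>Linear action of the basis vector e_j: e_A \<mapsto> e_A + e_(A \<union> {j}) if j \<notin> A, e_A otherwise.\<close>
definition act_gen :: "nat \<Rightarrow> nat set set \<Rightarrow> nat set set" where
  "act_gen j u = symdiff u {insert j A | A. A \<in> u \<and> j \<notin> A}"

text \<open>Action of w = sum of e_j (j \<in> w): composition of the (commuting) generator actions.\<close>
definition act :: "nat set \<Rightarrow> nat set set \<Rightarrow> nat set set" where
  "act w u = Finite_Set.fold act_gen u w"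

definition Gi :: "nat \<Rightarrow> nat \<Rightarrow> (nat set set \<times> nat set) monoid" where
  "Gi n i = \<lparr>carrier = Ucar n i \<times> Pow ({1..n} - {i}),
             monoid.mult = (\<lambda>(u, w) (u', w'). (symdiff u (act w u'), symdiff w w')),
             one = ({}, {})\<rparr>"

definition gi :: "nat \<Rightarrow> nat \<Rightarrow> nat set set \<times> nat set" where
  "gi i j = (if j = i then ({{i}}, {}) else ({}, {j}))"

definition phii :: "nat \<Rightarrow> nat set set \<times> nat set \<Rightarrow> nat set" where
  "phii i x = symdiff (snd x) (if {i} \<in> fst x then {i} else {})"

definition ProdG :: "nat \<Rightarrow> (nat \<Rightarrow> nat set set \<times> nat set) monoid" where
  "ProdG n = product_group {1..n} (Gi n)"

definition gamma :: "nat \<Rightarrow> nat \<Rightarrow> (nat \<Rightarrow> nat set set \<times> nat set)" where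
  "gamma n j = (\<lambda>i\<in>{1..n}. gi i j)"

definition GG :: "nat \<Rightarrow> (nat \<Rightarrow> nat set set \<times> nat set) monoid" where
  "GG n = subgroup_generated (ProdG n) (gamma n ` {1..n})"

definition gbold :: "nat \<Rightarrow> (nat \<Rightarrow> nat set set \<times> nat set) \<Rightarrow> nat set" where
  "gbold n x = (THE v. \<forall>i\<in>{1..n}. phii i (x i) = v)"

text \<open>Letters: (False, a) is x_a, (True, a) is x_a^(-1). Elements: reduced words.\<close>

definition cancels :: "bool \<times> nat \<Rightarrow> bool \<times> nat \<Rightarrow> bool" where
  "cancels l m \<longleftrightarrow> snd l = snd m \<and> fst l \<noteq> fst m"

fun reduced :: "(bool \<times> nat) list \<Rightarrow> bool" where
  "reduced (l # m # ws) = (\<not> cancels l m \<and> reduced (m # ws))"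
| "reduced _ = True"

fun cons_red :: "bool \<times> nat \<Rightarrow> (bool \<times> nat) list \<Rightarrow> (bool \<times> nat) list" where
  "cons_red l [] = [l]"
| "cons_red l (m # ms) = (if cancels l m then ms else l # m # ms)"

definition FreeGrp :: "nat \<Rightarrow> (bool \<times> nat) list monoid" where
  "FreeGrp n = \<lparr>carrier = {w. reduced w \<and> snd ` set w \<subseteq> {1..n}},
                monoid.mult = (\<lambda>v w. foldr cons_red v w),
                one = []\<rparr>"

definition xgen :: "nat \<Rightarrow> (bool \<times> nat) list" where
  "xgen i = [(False, i)]"

definition normal_closure :: "('a, 'b) monoid_scheme \<Rightarrow> 'a set \<Rightarrow> 'a set" where
  "normal_closure G S =
     generate G {g \<otimes>\<^bsub>G\<^esub> s \<otimes>\<^bsub>G\<^esub> inv\<^bsub>G\<^esub> g | g s. g \<in> carrier G \<and> s \<in> S}"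

definition Ntilde :: "nat \<Rightarrow> (bool \<times> nat) list set" where
  "Ntilde n = normal_closure (FreeGrp n)
     ({h \<otimes>\<^bsub>FreeGrp n\<^esub> h | h. h \<in> derived (FreeGrp n) (carrier (FreeGrp n))}
      \<union> {xgen i \<otimes>\<^bsub>FreeGrp n\<^esub> xgen i | i. i \<in> {1..n}})"

definition CC :: "nat \<Rightarrow> (bool \<times> nat) list set monoid" where
  "CC n = FreeGrp n Mod Ntilde n"

definition cgen :: "nat \<Rightarrow> nat \<Rightarrow> (bool \<times> nat) list set" where
  "cgen n i = Ntilde n #>\<^bsub>FreeGrp n\<^esub> xgen i"

definition parity_map :: "(bool \<times> nat) list \<Rightarrow> nat set" where
  "parity_map w = {a. odd (length (filter (\<lambda>l. snd l = a) w))}"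

definition cphi :: "nat \<Rightarrow> (bool \<times> nat) list set \<Rightarrow> nat set" where
  "cphi n C = (THE v. \<exists>w\<in>C. parity_map w = v)"

definition bound_exp :: "nat \<Rightarrow> nat" where
  "bound_exp n = n * 2 ^ (n - 1) + n + 1 - 2 ^ n"

end

theory Submission
  imports Defs
begin

lemma (in group) conj_gen_closed:
  assumes A: "A \<subseteq> carrier G" and a: "a \<in> carrier G" and aa: "a \<otimes> a = \<one>"
    and cj: "\<forall>x\<in>A. a \<otimes> x \<otimes> a \<in> generate G A"
    and y: "y \<in> generate G A"
  shows "a \<otimes> y \<otimes> a \<in> generate G A"
proof -
  have aax: "\<And>x. x \<in> carrier G \<Longrightarrow> a \<otimes> (a \<otimes> x) = x"
    using a aa by (simp flip: m_assoc)
  show ?thesis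
  using y
proof (induction rule: generate.induct)
  case one
  then show ?case using aa a by (simp add: generate.one)
next
  case (incl h)
  then show ?case using cj by blast
next
  case (inv h)
  have ainv: "inv a = a" using aa a by (simp add: inv_equality)
  have h: "h \<in> carrier G" using inv A by auto
  have "a \<otimes> inv h \<otimes> a = inv (a \<otimes> h \<otimes> a)"
    using h a ainv by (simp add: inv_mult_group m_assoc)
  moreover have "a \<otimes> h \<otimes> a \<in> generate G A" using cj inv by blast
  ultimately show ?case using generate_m_inv_closed[OF A] by simp
next
  case (eng h1 h2)
  have h1: "h1 \<in> carrier G" and h2: "h2 \<in> carrier G"
    using eng generate_in_carrier[OF A] by auto
  have "a \<otimes> (h1 \<otimes> h2) \<otimes> a = (a \<otimes> h1 \<otimes> a) \<otimes> (a \<otimes> h2 \<otimes> a)"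
    using h1 h2 a aa by (simp add: m_assoc aax)
  then show ?case using eng generate.eng by metis
qed
qed

lemma (in group) ins_gen_subset:
  assumes A: "A \<subseteq> carrier G" and a: "a \<in> carrier G" and aa: "a \<otimes> a = \<one>"
    and cj: "\<forall>x\<in>A. a \<otimes> x \<otimes> a \<in> generate G A"
  shows "generate G (insert a A) \<subseteq> generate G A \<union> (\<lambda>x. a \<otimes> x) ` generate G A"
proof (rule generate_subgroup_incl)
  let ?H = "generate G A"
  have aax: "\<And>x. x \<in> carrier G \<Longrightarrow> a \<otimes> (a \<otimes> x) = x"
    using a aa by (simp flip: m_assoc)
  have Hc: "?H \<subseteq> carrier G" using generate_incl[OF A] .
  have cH: "\<And>y. y \<in> ?H \<Longrightarrow> a \<otimes> y \<otimes> a \<in> ?H" using conj_gen_closed[OF A a aa cj] by blast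
  have ainv: "inv a = a" using aa a by (simp add: inv_equality)
  have mH: "\<And>x y. x \<in> ?H \<Longrightarrow> y \<in> ?H \<Longrightarrow> x \<otimes> y \<in> ?H" by (rule generate.eng)
  have iH: "\<And>x. x \<in> ?H \<Longrightarrow> inv x \<in> ?H" using generate_m_inv_closed[OF A] by blast
  show "insert a A \<subseteq> ?H \<union> (\<lambda>x. a \<otimes> x) ` ?H"
  proof -
    have "a = a \<otimes> \<one>" using a by simp
    hence "a \<in> (\<lambda>x. a \<otimes> x) ` ?H" by (rule image_eqI) (rule generate.one)
    moreover have "A \<subseteq> ?H" by (auto intro: generate.incl)
    ultimately show ?thesis by blast
  qed
  show "subgroup (?H \<union> (\<lambda>x. a \<otimes> x) ` ?H) G"
  proof
    show "?H \<union> (\<lambda>x. a \<otimes> x) ` ?H \<subseteq> carrier G" using Hc a by auto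
    show "\<one> \<in> ?H \<union> (\<lambda>x. a \<otimes> x) ` ?H" by (simp add: generate.one)
  next
    fix x y assume x: "x \<in> ?H \<union> (\<lambda>x. a \<otimes> x) ` ?H" and y: "y \<in> ?H \<union> (\<lambda>x. a \<otimes> x) ` ?H"
    show "x \<otimes> y \<in> ?H \<union> (\<lambda>x. a \<otimes> x) ` ?H"
    proof (cases "x \<in> ?H")
      case True
      show ?thesis
      proof (cases "y \<in> ?H")
        case True
        then show ?thesis using mH[OF \<open>x \<in> ?H\<close> True] by simp
      next
        case False
        then obtain y' where y': "y' \<in> ?H" "y = a \<otimes> y'" using y by auto
        have xc: "x \<in> carrier G" using True Hc by auto
        have yc: "y' \<in> carrier G" using y' Hc by auto
        have "x \<otimes> y = a \<otimes> ((a \<otimes> x \<otimes> a) \<otimes> y')"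
          using xc yc a aa y'(2) by (simp add: m_assoc aax)
        moreover have "(a \<otimes> x \<otimes> a) \<otimes> y' \<in> ?H" using mH[OF cH[OF True] y'(1)] .
        ultimately show ?thesis by auto
      qed
    next
      case False
      then obtain x' where x': "x' \<in> ?H" "x = a \<otimes> x'" using x by auto
      have xc: "x' \<in> carrier G" using x' Hc by auto
      show ?thesis
      proof (cases "y \<in> ?H")
        case True
        have yc: "y \<in> carrier G" using True Hc by auto
        have "x \<otimes> y = a \<otimes> (x' \<otimes> y)" using x' xc yc a by (simp add: m_assoc)
        then show ?thesis using mH[OF x'(1) True] by auto
      next
        case False
        then obtain y' where y': "y' \<in> ?H" "y = a \<otimes> y'" using y by auto
        have yc: "y' \<in> carrier G" using y' Hc by auto
        have "x \<otimes> y = (a \<otimes> x' \<otimes> a) \<otimes> y'" using x' y' xc yc a by (simp add: m_assoc)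
        then show ?thesis using mH cH x' y' by auto
      qed
    qed
  next
    fix x assume x: "x \<in> ?H \<union> (\<lambda>x. a \<otimes> x) ` ?H"
    show "inv x \<in> ?H \<union> (\<lambda>x. a \<otimes> x) ` ?H"
    proof (cases "x \<in> ?H")
      case True then show ?thesis using iH[OF True] by simp
    next
      case False
      then obtain x' where x': "x' \<in> ?H" "x = a \<otimes> x'" using x by auto
      have xc: "x' \<in> carrier G" using x' Hc by auto
      have "inv x = a \<otimes> (a \<otimes> inv x' \<otimes> a)"
        using x' xc a aa ainv by (simp add: inv_mult_group m_assoc aax)
      moreover have "a \<otimes> inv x' \<otimes> a \<in> ?H" using cH[OF iH[OF x'(1)]] .
      ultimately show ?thesis by auto
    qed
  qed
qed

lemma (in group) ins_gen_card:
  assumes A: "A \<subseteq> carrier G" and a: "a \<in> carrier G" and aa: "a \<otimes> a = \<one>"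
    and cj: "\<forall>x\<in>A. a \<otimes> x \<otimes> a \<in> generate G A"
    and fin: "finite (generate G A)"
  shows "finite (generate G (insert a A)) \<and> card (generate G (insert a A)) \<le> 2 * card (generate G A)"
proof -
  have s: "generate G (insert a A) \<subseteq> generate G A \<union> (\<lambda>x. a \<otimes> x) ` generate G A"
    using ins_gen_subset[OF assms(1-4)] .
  have f2: "finite (generate G A \<union> (\<lambda>x. a \<otimes> x) ` generate G A)" using fin by auto
  have "card (generate G (insert a A)) \<le> card (generate G A \<union> (\<lambda>x. a \<otimes> x) ` generate G A)"
    using card_mono[OF f2 s] .
  also have "\<dots> \<le> card (generate G A) + card ((\<lambda>x. a \<otimes> x) ` generate G A)"
    by (rule card_Un_le)
  also have "\<dots> \<le> card (generate G A) + card (generate G A)"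
    using card_image_le[OF fin] by simp
  finally show ?thesis using f2 s finite_subset by auto
qed

lemma (in group) commuting_invols_card:
  assumes fin: "finite B" and Bc: "B \<subseteq> carrier G"
    and com: "\<forall>x\<in>B. \<forall>y\<in>B. x \<otimes> y = y \<otimes> x" and inv2: "\<forall>x\<in>B. x \<otimes> x = \<one>"
  shows "finite (generate G B) \<and> card (generate G B) \<le> 2 ^ card B"
  using fin Bc com inv2
proof (induction B rule: finite_induct)
  case empty
  then show ?case by (simp add: generate_empty)
next
  case (insert a A)
  have A: "A \<subseteq> carrier G" and a: "a \<in> carrier G" using insert.prems(1) by auto
  have comA: "\<forall>x\<in>A. \<forall>y\<in>A. x \<otimes> y = y \<otimes> x" using insert.prems(2) by blast
  have invA: "\<forall>x\<in>A. x \<otimes> x = \<one>" using insert.prems(3) by blast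
  have aa: "a \<otimes> a = \<one>" using insert.prems(3) by blast
  have IH: "finite (generate G A) \<and> card (generate G A) \<le> 2 ^ card A"
    using insert.IH[OF A comA invA] .
  have cj: "\<forall>x\<in>A. a \<otimes> x \<otimes> a \<in> generate G A"
  proof
    fix x assume x: "x \<in> A"
    have xc: "x \<in> carrier G" using x A by auto
    have ax: "a \<otimes> x = x \<otimes> a" using insert.prems(2) x by blast
    have "a \<otimes> x \<otimes> a = x \<otimes> (a \<otimes> a)" unfolding ax using xc a by (simp add: m_assoc)
    also have "\<dots> = x" using aa xc by simp
    finally show "a \<otimes> x \<otimes> a \<in> generate G A" using generate.incl[OF x] by simp
  qed
  have "finite (generate G (insert a A)) \<and> card (generate G (insert a A)) \<le> 2 * card (generate G A)"
    using ins_gen_card[OF A a aa cj] IH by blast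
  moreover have "card (insert a A) = Suc (card A)" using insert.hyps by simp
  ultimately show ?case using IH by simp
qed

lemma (in group) inv_invol:
  assumes "x \<in> carrier G" "x \<otimes> x = \<one>" shows "inv x = x"
  using inv_equality[OF assms(2) assms(1) assms(1)] .

lemma (in group) exp2_comm:
  assumes D: "subgroup D G" and e: "\<forall>z\<in>D. z \<otimes> z = \<one>" and x: "x \<in> D" and y: "y \<in> D"
  shows "x \<otimes> y = y \<otimes> x"
proof -
  have xc: "x \<in> carrier G" using subgroup.mem_carrier[OF D x] .
  have yc: "y \<in> carrier G" using subgroup.mem_carrier[OF D y] .
  have xy: "x \<otimes> y \<in> D" using subgroup.m_closed[OF D x y] .
  have "x \<otimes> y = inv (x \<otimes> y)"
    using inv_invol[of "x \<otimes> y"] xy e xc yc by simp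
  also have "\<dots> = inv y \<otimes> inv x" using xc yc by (simp add: inv_mult_group)
  also have "inv y = y" using inv_invol[of y] e y yc by simp
  also have "inv x = x" using inv_invol[of x] e x xc by simp
  finally show ?thesis .
qed

lemma (in group) hom_agree_gen:
  assumes "group H" and h1: "h1 \<in> hom G H" and h2: "h2 \<in> hom G H" and S: "S \<subseteq> carrier G"
    and ag: "\<forall>s\<in>S. h1 s = h2 s" and x: "x \<in> generate G S"
  shows "h1 x = h2 x"
  using x
proof (induction rule: generate.induct)
  case one
  interpret h1: group_hom G H h1 using h1 assms(1) by (simp add: group_hom_def group_hom_axioms_def is_group)
  interpret h2: group_hom G H h2 using h2 assms(1) by (simp add: group_hom_def group_hom_axioms_def is_group)
  show ?case by simp
next
  case (incl h)
  then show ?case using ag by blast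
next
  case (inv h)
  have "h \<in> carrier G" using inv S by auto
  interpret h1: group_hom G H h1 using h1 assms(1) by (simp add: group_hom_def group_hom_axioms_def is_group)
  interpret h2: group_hom G H h2 using h2 assms(1) by (simp add: group_hom_def group_hom_axioms_def is_group)
  show ?case using ag inv \<open>h \<in> carrier G\<close> by simp
next
  case (eng a b)
  have "a \<in> carrier G" "b \<in> carrier G" using eng generate_in_carrier[OF S] by auto
  then show ?case using eng h1 h2 by (simp add: hom_mult)
qed


lemma mem_symdiff [simp]: "x \<in> symdiff A B \<longleftrightarrow> (x \<in> A) \<noteq> (x \<in> B)"
  by (auto simp: symdiff_def)

lemma symdiff_empty1 [simp]: "symdiff {} A = A" by (auto simp: symdiff_def)
lemma symdiff_empty2 [simp]: "symdiff A {} = A" by (auto simp: symdiff_def)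
lemma symdiff_self [simp]: "symdiff A A = {}" by (auto simp: symdiff_def)
lemma symdiff_comm: "symdiff A B = symdiff B A" by (auto simp: symdiff_def)
lemma symdiff_assoc: "symdiff (symdiff A B) C = symdiff A (symdiff B C)" by (auto simp: symdiff_def)
lemma symdiff_left_self [simp]: "symdiff A (symdiff A B) = B" by (auto simp: symdiff_def)
lemma symdiff_right_self [simp]: "symdiff (symdiff A B) B = A" by (auto simp: symdiff_def)
lemma symdiff_sub: "A \<subseteq> C \<Longrightarrow> B \<subseteq> C \<Longrightarrow> symdiff A B \<subseteq> C" by (auto simp: symdiff_def)
lemma finite_symdiff: "finite A \<Longrightarrow> finite B \<Longrightarrow> finite (symdiff A B)" by (auto simp: symdiff_def)

lemma Vn_group: "group (Vn n)"
proof (rule groupI)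
  show "\<And>x y. x \<in> carrier (Vn n) \<Longrightarrow> y \<in> carrier (Vn n) \<Longrightarrow> x \<otimes>\<^bsub>Vn n\<^esub> y \<in> carrier (Vn n)"
    by (auto simp: Vn_def symdiff_def)
  show "\<one>\<^bsub>Vn n\<^esub> \<in> carrier (Vn n)" by (simp add: Vn_def)
  show "\<And>x y z. x \<in> carrier (Vn n) \<Longrightarrow> y \<in> carrier (Vn n) \<Longrightarrow> z \<in> carrier (Vn n) \<Longrightarrow>
      x \<otimes>\<^bsub>Vn n\<^esub> y \<otimes>\<^bsub>Vn n\<^esub> z = x \<otimes>\<^bsub>Vn n\<^esub> (y \<otimes>\<^bsub>Vn n\<^esub> z)"
    by (simp add: Vn_def symdiff_assoc)
  show "\<And>x. x \<in> carrier (Vn n) \<Longrightarrow> \<one>\<^bsub>Vn n\<^esub> \<otimes>\<^bsub>Vn n\<^esub> x = x" by (simp add: Vn_def)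
  show "\<And>x. x \<in> carrier (Vn n) \<Longrightarrow> \<exists>y\<in>carrier (Vn n). y \<otimes>\<^bsub>Vn n\<^esub> x = \<one>\<^bsub>Vn n\<^esub>"
    by (auto simp: Vn_def)
qed

lemma Vn_comm_group: "comm_group (Vn n)"
proof -
  interpret group "Vn n" by (rule Vn_group)
  show ?thesis
    by unfold_locales (simp add: Vn_def symdiff_comm)
qed

lemma Vn_simps [simp]: "carrier (Vn n) = Pow {1..n}" "x \<otimes>\<^bsub>Vn n\<^esub> y = symdiff x y" "\<one>\<^bsub>Vn n\<^esub> = {}"
  by (simp_all add: Vn_def)

section \<open>The action\<close>

lemma mem_act_gen: "B \<in> act_gen j u \<longleftrightarrow> (B \<in> u) \<noteq> (j \<in> B \<and> B - {j} \<in> u)"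
proof -
  have "B \<in> {insert j A | A. A \<in> u \<and> j \<notin> A} \<longleftrightarrow> (j \<in> B \<and> B - {j} \<in> u)"
  proof
    assume "B \<in> {insert j A | A. A \<in> u \<and> j \<notin> A}"
    then obtain A where "B = insert j A" "A \<in> u" "j \<notin> A" by blast
    then show "j \<in> B \<and> B - {j} \<in> u" by simp
  next
    assume h: "j \<in> B \<and> B - {j} \<in> u"
    then have "B = insert j (B - {j})" by auto
    then show "B \<in> {insert j A | A. A \<in> u \<and> j \<notin> A}" using h by blast
  qed
  then show ?thesis by (simp add: act_gen_def)
qed

lemma act_gen_comm: "act_gen j (act_gen k u) = act_gen k (act_gen j u)"
proof (cases "j = k")
  case True then show ?thesis by simp
next
  case False
  have e: "B - {j} - {k} = B - {k} - {j}" for B :: "nat set" by auto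
  show ?thesis
    by (rule Set.set_eqI) (simp add: mem_act_gen e False False[symmetric], blast)
qed

lemma act_gen_invol [simp]: "act_gen j (act_gen j u) = u"
  by (rule Set.set_eqI) (simp add: mem_act_gen, blast)

lemma act_gen_symdiff: "act_gen j (symdiff u v) = symdiff (act_gen j u) (act_gen j v)"
  by (rule Set.set_eqI) (simp add: mem_act_gen, blast)

interpretation act_cfc: comp_fun_commute act_gen
  by unfold_locales (rule ext, simp add: act_gen_comm)

lemma act_empty [simp]: "act {} u = u"
  by (simp add: act_def)

lemma act_insert: "finite w \<Longrightarrow> j \<notin> w \<Longrightarrow> act (insert j w) u = act_gen j (act w u)"
  by (simp add: act_def act_cfc.fold_insert)

lemma act_single [simp]: "act {j} u = act_gen j u"
  using act_insert[of "{}" j u] by simp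

lemma act_symdiff: "finite w \<Longrightarrow> act w (symdiff u v) = symdiff (act w u) (act w v)"
  by (induction w rule: finite_induct) (simp_all add: act_insert act_gen_symdiff)

lemma act_empty_set [simp]: "finite w \<Longrightarrow> act w {} = {}"
  using act_symdiff[of w "{}" "{}"] by simp

lemma act_gen_act: "finite v \<Longrightarrow> act_gen j (act v u) = act (symdiff v {j}) u"
proof (cases "j \<in> v")
  case True
  assume f: "finite v"
  have v: "v = insert j (v - {j})" using True by auto
  have "act v u = act_gen j (act (v - {j}) u)"
    by (subst v, rule act_insert) (use f in auto)
  moreover have "symdiff v {j} = v - {j}" using True by auto
  ultimately show ?thesis by simp
next
  case False
  assume f: "finite v"
  have "symdiff v {j} = insert j v" using False by auto
  then show ?thesis using act_insert[OF f False] by simp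
qed

lemma act_act: "finite w \<Longrightarrow> finite w' \<Longrightarrow> act w (act w' u) = act (symdiff w w') u"
proof (induction w rule: finite_induct)
  case empty
  then show ?case by simp
next
  case (insert j w)
  have "act (insert j w) (act w' u) = act_gen j (act w (act w' u))"
    using act_insert insert by simp
  also have "\<dots> = act_gen j (act (symdiff w w') u)" using insert by simp
  also have "\<dots> = act (symdiff (symdiff w w') {j}) u"
    using act_gen_act insert finite_symdiff by blast
  also have "symdiff (symdiff w w') {j} = symdiff (insert j w) w'"
    using insert.hyps by auto
  finally show ?case .
qed

lemma act_gen_keeps: "u \<subseteq> {A. A \<subseteq> {1..n} \<and> i \<in> A} \<Longrightarrow> j \<in> {1..n} \<Longrightarrow>
    act_gen j u \<subseteq> {A. A \<subseteq> {1..n} \<and> i \<in> A}"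
proof
  fix B assume u: "u \<subseteq> {A. A \<subseteq> {1..n} \<and> i \<in> A}" and j: "j \<in> {1..n}" and B: "B \<in> act_gen j u"
  show "B \<in> {A. A \<subseteq> {1..n} \<and> i \<in> A}"
  proof (cases "B \<in> u")
    case True then show ?thesis using u by blast
  next
    case False
    then have "j \<in> B" "B - {j} \<in> u" using B by (simp_all add: mem_act_gen)
    then have "B - {j} \<subseteq> {1..n}" "i \<in> B - {j}" using u by blast+
    then show ?thesis using j \<open>j \<in> B\<close> by auto
  qed
qed

lemma act_keeps: "finite w \<Longrightarrow> w \<subseteq> {1..n} \<Longrightarrow> u \<subseteq> {A. A \<subseteq> {1..n} \<and> i \<in> A} \<Longrightarrow>
    act w u \<subseteq> {A. A \<subseteq> {1..n} \<and> i \<in> A}"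
proof (induction w rule: finite_induct)
  case empty then show ?case by simp
next
  case (insert j w)
  then show ?case using act_gen_keeps[of "act w u" n i j] by (simp add: act_insert)
qed

lemma act_single_coef: "finite w \<Longrightarrow> i \<notin> w \<Longrightarrow> {i} \<in> act w u \<longleftrightarrow> {i} \<in> u"
  by (induction w rule: finite_induct) (auto simp: act_insert mem_act_gen)

lemma Gi_carrier: "carrier (Gi n i) = Ucar n i \<times> Pow ({1..n} - {i})"
  by (simp add: Gi_def)

lemma Gi_mult: "(u, w) \<otimes>\<^bsub>Gi n i\<^esub> (u', w') = (symdiff u (act w u'), symdiff w w')"
  by (simp add: Gi_def)

lemma Gi_one: "\<one>\<^bsub>Gi n i\<^esub> = ({}, {})"
  by (simp add: Gi_def)

lemma fin_w: "w \<in> Pow ({1..(n::nat)} - {i}) \<Longrightarrow> finite w"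
  by (rule finite_subset[where B="{1..n}"]) auto

lemma Gi_group: "group (Gi n i)"
proof (rule groupI)
  fix x y assume x: "x \<in> carrier (Gi n i)" and y: "y \<in> carrier (Gi n i)"
  obtain u w where xu: "x = (u, w)" by fastforce
  obtain u' w' where yu: "y = (u', w')" by fastforce
  have "act w u' \<subseteq> {A. A \<subseteq> {1..n} \<and> i \<in> A}"
  proof (rule act_keeps)
    have "w \<in> Pow ({1..n} - {i})" using x by (auto simp: xu Gi_carrier)
    then show "finite w" "w \<subseteq> {1..n}" using fin_w by blast+
    show "u' \<subseteq> {A. A \<subseteq> {1..n} \<and> i \<in> A}" using y by (auto simp: yu Gi_carrier Ucar_def)
  qed
  then show "x \<otimes>\<^bsub>Gi n i\<^esub> y \<in> carrier (Gi n i)"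
    using x y by (auto simp: xu yu Gi_carrier Gi_mult Ucar_def symdiff_def)
next
  show "\<one>\<^bsub>Gi n i\<^esub> \<in> carrier (Gi n i)" by (simp add: Gi_one Gi_carrier Ucar_def)
next
  fix x y z assume x: "x \<in> carrier (Gi n i)" and y: "y \<in> carrier (Gi n i)" and z: "z \<in> carrier (Gi n i)"
  obtain u w where xu: "x = (u, w)" by fastforce
  obtain u' w' where yu: "y = (u', w')" by fastforce
  obtain u'' w'' where zu: "z = (u'', w'')" by fastforce
  have "w \<in> Pow ({1..n} - {i})" "w' \<in> Pow ({1..n} - {i})" using x y by (auto simp: xu yu Gi_carrier)
  then have fw: "finite w" "finite w'" using fin_w by blast+
  show "x \<otimes>\<^bsub>Gi n i\<^esub> y \<otimes>\<^bsub>Gi n i\<^esub> z = x \<otimes>\<^bsub>Gi n i\<^esub> (y \<otimes>\<^bsub>Gi n i\<^esub> z)"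
    using fw by (simp add: xu yu zu Gi_mult act_symdiff act_act symdiff_assoc)
next
  fix x assume x: "x \<in> carrier (Gi n i)"
  obtain u w where xu: "x = (u, w)" by fastforce
  show "\<one>\<^bsub>Gi n i\<^esub> \<otimes>\<^bsub>Gi n i\<^esub> x = x" by (simp add: xu Gi_one Gi_mult)
next
  fix x assume x: "x \<in> carrier (Gi n i)"
  obtain u w where xu: "x = (u, w)" by fastforce
  have "w \<in> Pow ({1..n} - {i})" using x by (auto simp: xu Gi_carrier)
  then have fw: "finite w" using fin_w by blast
  have "act w u \<subseteq> {A. A \<subseteq> {1..n} \<and> i \<in> A}"
    using act_keeps[of w n u i] x fw by (auto simp: xu Gi_carrier Ucar_def)
  then have "(act w u, w) \<in> carrier (Gi n i)" using x by (auto simp: xu Gi_carrier Ucar_def)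
  moreover have "(act w u, w) \<otimes>\<^bsub>Gi n i\<^esub> x = \<one>\<^bsub>Gi n i\<^esub>" by (simp add: xu Gi_mult Gi_one)
  ultimately show "\<exists>y\<in>carrier (Gi n i). y \<otimes>\<^bsub>Gi n i\<^esub> x = \<one>\<^bsub>Gi n i\<^esub>" by blast
qed

lemma phii_hom: "i \<in> {1..n} \<Longrightarrow> phii i \<in> hom (Gi n i) (Vn n)"
proof (rule homI)
  fix x assume i: "i \<in> {1..n}" and x: "x \<in> carrier (Gi n i)"
  then show "phii i x \<in> carrier (Vn n)"
    by (auto simp: phii_def Gi_carrier symdiff_def)
next
  fix x y assume i: "i \<in> {1..n}" and x: "x \<in> carrier (Gi n i)" and y: "y \<in> carrier (Gi n i)"
  obtain u w where xu: "x = (u, w)" by fastforce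
  obtain u' w' where yu: "y = (u', w')" by fastforce
  have "w \<in> Pow ({1..n} - {i})" using x by (auto simp: xu Gi_carrier)
  then have fw: "finite w" "i \<notin> w" using fin_w by blast+
  have c: "{i} \<in> act w u' \<longleftrightarrow> {i} \<in> u'" using act_single_coef[OF fw] .
  show "phii i (x \<otimes>\<^bsub>Gi n i\<^esub> y) = phii i x \<otimes>\<^bsub>Vn n\<^esub> phii i y"
    by (rule Set.set_eqI) (simp add: xu yu Gi_mult phii_def c, blast)
qed


lemma Gi_mem: "(u, w) \<in> carrier (Gi n i) \<longleftrightarrow> u \<subseteq> {A. A \<subseteq> {1..n} \<and> i \<in> A} \<and> w \<subseteq> {1..n} - {i}"
  by (auto simp: Gi_carrier Ucar_def)

lemma ProdG_group: "group (ProdG n)"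
  unfolding ProdG_def by (rule product_group) (rule Gi_group)

lemma ProdG_carrier: "carrier (ProdG n) = (\<Pi>\<^sub>E i\<in>{1..n}. carrier (Gi n i))"
  by (simp add: ProdG_def)

lemma prod_app: "i \<in> {1..n} \<Longrightarrow> (x \<otimes>\<^bsub>ProdG n\<^esub> y) i = x i \<otimes>\<^bsub>Gi n i\<^esub> y i"
  by (simp add: ProdG_def)

lemma ProdG_one_app: "i \<in> {1..n} \<Longrightarrow> \<one>\<^bsub>ProdG n\<^esub> i = ({}, {})"
  by (simp add: ProdG_def Gi_one)

lemma ProdG_eqI: "x \<in> carrier (ProdG n) \<Longrightarrow> y \<in> carrier (ProdG n) \<Longrightarrow> (\<And>i. i \<in> {1..n} \<Longrightarrow> x i = y i) \<Longrightarrow> x = y"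
  unfolding ProdG_carrier by (rule PiE_ext)

lemma gi_carrier: "i \<in> {1..n} \<Longrightarrow> j \<in> {1..n} \<Longrightarrow> gi i j \<in> carrier (Gi n i)"
  by (auto simp: gi_def Gi_mem)

lemma gamma_carrier: "j \<in> {1..n} \<Longrightarrow> gamma n j \<in> carrier (ProdG n)"
  by (auto simp: gamma_def ProdG_carrier gi_carrier)

lemma gamma_app: "i \<in> {1..n} \<Longrightarrow> gamma n j i = gi i j"
  by (simp add: gamma_def)

lemma gamma_set_carrier: "gamma n ` {1..n} \<subseteq> carrier (ProdG n)"
  using gamma_carrier by blast

lemma GG_carrier: "carrier (GG n) = generate (ProdG n) (gamma n ` {1..n})"
proof -
  have "carrier (ProdG n) \<inter> gamma n ` {1..n} = gamma n ` {1..n}" using gamma_set_carrier by blast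
  then show ?thesis by (simp add: GG_def carrier_subgroup_generated)
qed

lemma GG_mult [simp]: "(\<otimes>\<^bsub>GG n\<^esub>) = (\<otimes>\<^bsub>ProdG n\<^esub>)"
  by (simp add: GG_def)

lemma GG_one [simp]: "\<one>\<^bsub>GG n\<^esub> = \<one>\<^bsub>ProdG n\<^esub>"
  by (simp add: GG_def)

lemma GG_group: "group (GG n)"
  unfolding GG_def using group.group_subgroup_generated[OF ProdG_group] by blast

lemma GG_sub: "carrier (GG n) \<subseteq> carrier (ProdG n)"
  unfolding GG_carrier using group.generate_incl[OF ProdG_group gamma_set_carrier] .

lemma gamma_GG: "j \<in> {1..n} \<Longrightarrow> gamma n j \<in> carrier (GG n)"
  unfolding GG_carrier by (rule generate.incl) blast

lemma GG_m_closed: "x \<in> carrier (GG n) \<Longrightarrow> y \<in> carrier (GG n) \<Longrightarrow> x \<otimes>\<^bsub>ProdG n\<^esub> y \<in> carrier (GG n)"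
  unfolding GG_carrier by (rule generate.eng)

definition Esel :: "nat \<Rightarrow> nat set \<Rightarrow> nat \<Rightarrow> nat \<Rightarrow> (nat \<Rightarrow> nat set set \<times> nat set)" where
  "Esel n S m j = (\<lambda>i\<in>{1..n}. if i = m \<or> i = j then ({S}, {}) else ({}, {}))"

lemma Esel_carrier:
  assumes "m \<in> S" "j \<in> S" "S \<subseteq> {1..n}"
  shows "Esel n S m j \<in> carrier (ProdG n)"
  using assms by (auto simp: Esel_def ProdG_carrier Gi_mem)

lemma act_gen_sing: "k \<notin> S \<Longrightarrow> act_gen k {S} = {S, insert k S}"
  by (rule Set.set_eqI) (auto simp: mem_act_gen)

lemma act_gen_emp [simp]: "act_gen k {} = {}"
  by (rule Set.set_eqI) (auto simp: mem_act_gen)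

lemma comm_base:
  assumes m: "m \<in> {1..n}" and j: "j \<in> {1..n}" and mj: "m \<noteq> j"
  shows "gamma n m \<otimes>\<^bsub>ProdG n\<^esub> gamma n j \<otimes>\<^bsub>ProdG n\<^esub> gamma n m \<otimes>\<^bsub>ProdG n\<^esub> gamma n j = Esel n {m, j} m j"
proof (rule ProdG_eqI)
  interpret P: group "ProdG n" by (rule ProdG_group)
  show "gamma n m \<otimes>\<^bsub>ProdG n\<^esub> gamma n j \<otimes>\<^bsub>ProdG n\<^esub> gamma n m \<otimes>\<^bsub>ProdG n\<^esub> gamma n j \<in> carrier (ProdG n)"
    using gamma_carrier m j by simp
  show "Esel n {m, j} m j \<in> carrier (ProdG n)" using Esel_carrier m j by auto
  fix i assume i: "i \<in> {1..n}"
  have s1: "symdiff {{m}} {{m}, {m, j}} = {{m, j}}" using mj by (auto simp: symdiff_def)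
  have s2: "symdiff {{j}, {m, j}} {{j}} = {{m, j}}" using mj by (auto simp: symdiff_def)
  have a1: "act_gen j {{m}} = {{m}, {j, m}}" using act_gen_sing[of j "{m}"] mj by simp
  have a2: "act_gen m {{j}} = {{j}, {m, j}}" using act_gen_sing[of m "{j}"] mj by simp
  have "{j, m} = {m, j}" by auto
  show "(gamma n m \<otimes>\<^bsub>ProdG n\<^esub> gamma n j \<otimes>\<^bsub>ProdG n\<^esub> gamma n m \<otimes>\<^bsub>ProdG n\<^esub> gamma n j) i = Esel n {m, j} m j i"
  proof (cases "i = m")
    case True
    then show ?thesis using i mj
      by (simp add: prod_app gamma_app gi_def Gi_mult Esel_def a1 s1 \<open>{j, m} = {m, j}\<close>)
  next
    case False
    note im = False
    show ?thesis
    proof (cases "i = j")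
      case True
      then show ?thesis using i mj
        by (simp add: prod_app gamma_app gi_def Gi_mult Esel_def a2 symdiff_comm[of "{}"] s2)
    next
      case False
      have e: "symdiff (symdiff {m} {j}) {m} = {j}" using mj by (auto simp: symdiff_def)
      show ?thesis using False i mj im
        by (simp add: prod_app gamma_app gi_def Gi_mult Esel_def e finite_symdiff)
    qed
  qed
qed

lemma conj_step:
  assumes k: "k \<in> {1..n}" and kS: "k \<notin> S" and mS: "m \<in> S" and jS: "j \<in> S" and S: "S \<subseteq> {1..n}"
  shows "Esel n S m j \<otimes>\<^bsub>ProdG n\<^esub> (gamma n k \<otimes>\<^bsub>ProdG n\<^esub> Esel n S m j \<otimes>\<^bsub>ProdG n\<^esub> gamma n k)
         = Esel n (insert k S) m j"
proof (rule ProdG_eqI)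
  interpret P: group "ProdG n" by (rule ProdG_group)
  have E: "Esel n S m j \<in> carrier (ProdG n)" using Esel_carrier mS jS S by auto
  show "Esel n S m j \<otimes>\<^bsub>ProdG n\<^esub> (gamma n k \<otimes>\<^bsub>ProdG n\<^esub> Esel n S m j \<otimes>\<^bsub>ProdG n\<^esub> gamma n k) \<in> carrier (ProdG n)"
    using gamma_carrier[OF k] E by simp
  show "Esel n (insert k S) m j \<in> carrier (ProdG n)" using Esel_carrier mS jS S k by auto
  fix i assume i: "i \<in> {1..n}"
  have km: "k \<noteq> m" "k \<noteq> j" using kS mS jS by auto
  have a: "act_gen k {S} = {S, insert k S}" using act_gen_sing[OF kS] .
  have ne: "S \<noteq> insert k S" using kS by auto
  have s: "symdiff {S} {S, insert k S} = {insert k S}" using ne by (auto simp: symdiff_def)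
  show "(Esel n S m j \<otimes>\<^bsub>ProdG n\<^esub> (gamma n k \<otimes>\<^bsub>ProdG n\<^esub> Esel n S m j \<otimes>\<^bsub>ProdG n\<^esub> gamma n k)) i = Esel n (insert k S) m j i"
  proof (cases "i = k")
    case True
    then show ?thesis using i km
      by (simp add: prod_app gamma_app gi_def Gi_mult Esel_def)
  next
    case False
    then show ?thesis using i km
      by (simp add: prod_app gamma_app gi_def Gi_mult Esel_def a s)
  qed
qed

lemma Esel_GG_aux:
  assumes fin: "finite T"
  shows "T \<subseteq> {1..n} - {m, j} \<Longrightarrow> m \<in> {1..n} \<Longrightarrow> j \<in> {1..n} \<Longrightarrow> m \<noteq> j \<Longrightarrow>
     Esel n (T \<union> {m, j}) m j \<in> carrier (GG n)"
  using fin
proof (induction T rule: finite_induct)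
  case empty
  have "Esel n {m, j} m j = gamma n m \<otimes>\<^bsub>ProdG n\<^esub> gamma n j \<otimes>\<^bsub>ProdG n\<^esub> gamma n m \<otimes>\<^bsub>ProdG n\<^esub> gamma n j"
    using comm_base[OF empty(2,3,4)] by simp
  moreover have "\<dots> \<in> carrier (GG n)"
    using gamma_GG empty GG_m_closed by metis
  ultimately show ?case by simp
next
  case (insert k T)
  have k: "k \<in> {1..n}" and kS: "k \<notin> T \<union> {m, j}" using insert by auto
  have S: "T \<union> {m, j} \<subseteq> {1..n}" using insert by auto
  have IH: "Esel n (T \<union> {m, j}) m j \<in> carrier (GG n)" using insert by auto
  have "Esel n (insert k (T \<union> {m, j})) m j = Esel n (T \<union> {m, j}) m j \<otimes>\<^bsub>ProdG n\<^esub>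
     (gamma n k \<otimes>\<^bsub>ProdG n\<^esub> Esel n (T \<union> {m, j}) m j \<otimes>\<^bsub>ProdG n\<^esub> gamma n k)"
    using conj_step[OF k kS _ _ S] by simp
  moreover have "\<dots> \<in> carrier (GG n)"
    using IH gamma_GG[OF k] GG_m_closed by metis
  moreover have "insert k T \<union> {m, j} = insert k (T \<union> {m, j})" by auto
  ultimately show ?case by (simp only:)
qed

lemma Esel_GG:
  assumes "m \<in> S" "j \<in> S" "m \<noteq> j" "S \<subseteq> {1..n}"
  shows "Esel n S m j \<in> carrier (GG n)"
proof -
  have "S = (S - {m, j}) \<union> {m, j}" using assms by auto
  moreover have "finite (S - {m, j})" using assms(4) finite_subset by auto
  moreover have "Esel n ((S - {m, j}) \<union> {m, j}) m j \<in> carrier (GG n)"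
    by (rule Esel_GG_aux) (use assms \<open>finite (S - {m, j})\<close> in auto)
  ultimately show ?thesis by (simp only:)
qed


declare One_nat_def [simp del]

lemma (in comm_group) finprod_symdiff:
  assumes fS: "finite S" and fT: "finite T" and q: "q \<in> (S \<union> T) \<rightarrow> carrier G"
    and sq: "\<forall>i\<in>S \<inter> T. q i \<otimes> q i = \<one>"
  shows "finprod G q (symdiff S T) = finprod G q S \<otimes> finprod G q T"
proof -
  have qST: "q \<in> (S - T) \<rightarrow> carrier G" "q \<in> (T - S) \<rightarrow> carrier G" "q \<in> (S \<inter> T) \<rightarrow> carrier G"
    using q by auto
  have f: "finite (S - T)" "finite (T - S)" "finite (S \<inter> T)" using fS fT by auto
  have e1: "symdiff S T = (S - T) \<union> (T - S)" by (auto simp: symdiff_def)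
  have e2: "S = (S - T) \<union> (S \<inter> T)" by auto
  have e3: "T = (T - S) \<union> (S \<inter> T)" by auto
  have A: "finprod G q (symdiff S T) = finprod G q (S - T) \<otimes> finprod G q (T - S)"
    unfolding e1 by (rule finprod_Un_disjoint) (use f qST in auto)
  have B: "finprod G q S = finprod G q (S - T) \<otimes> finprod G q (S \<inter> T)"
    by (subst e2, rule finprod_Un_disjoint) (use f qST in auto)
  have C: "finprod G q T = finprod G q (T - S) \<otimes> finprod G q (S \<inter> T)"
    by (subst e3, rule finprod_Un_disjoint) (use f qST in auto)
  have D: "finprod G q (S \<inter> T) \<otimes> finprod G q (S \<inter> T) = \<one>"
  proof -
    have "finprod G q (S \<inter> T) \<otimes> finprod G q (S \<inter> T) = finprod G (\<lambda>i. q i \<otimes> q i) (S \<inter> T)"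
      using qST(3) by simp
    also have "\<dots> = finprod G (\<lambda>i. \<one>) (S \<inter> T)"
      by (rule finprod_cong') (use sq in auto)
    also have "\<dots> = \<one>" by simp
    finally show ?thesis .
  qed
  have c: "finprod G q (S - T) \<in> carrier G" "finprod G q (T - S) \<in> carrier G" "finprod G q (S \<inter> T) \<in> carrier G"
    using qST by auto
  show ?thesis
    unfolding A B C using c D by (simp add: m_ac)
qed

lemma (in group) derived_sub_kernel:
  assumes H: "comm_group H" and f: "f \<in> hom G H"
  shows "derived G (carrier G) \<subseteq> kernel G H f"
proof -
  interpret H: comm_group H by (rule H)
  interpret f: group_hom G H f by (simp add: group_hom_def group_hom_axioms_def f is_group H.is_group)
  show ?thesis
    unfolding derived_def
  proof (rule generate_subgroup_incl[OF _ f.subgroup_kernel])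
    show "derived_set G (carrier G) \<subseteq> kernel G H f"
    proof
      fix x assume "x \<in> derived_set G (carrier G)"
      then obtain a b where ab: "a \<in> carrier G" "b \<in> carrier G" "x = a \<otimes> b \<otimes> inv a \<otimes> inv b" by blast
      have "f x = f a \<otimes>\<^bsub>H\<^esub> f b \<otimes>\<^bsub>H\<^esub> inv\<^bsub>H\<^esub> f a \<otimes>\<^bsub>H\<^esub> inv\<^bsub>H\<^esub> f b"
        using ab by simp
      also have "\<dots> = (f a \<otimes>\<^bsub>H\<^esub> f b) \<otimes>\<^bsub>H\<^esub> (inv\<^bsub>H\<^esub> f a \<otimes>\<^bsub>H\<^esub> inv\<^bsub>H\<^esub> f b)"
        using ab by (simp add: H.m_assoc)
      also have "\<dots> = (f a \<otimes>\<^bsub>H\<^esub> f b) \<otimes>\<^bsub>H\<^esub> inv\<^bsub>H\<^esub> (f a \<otimes>\<^bsub>H\<^esub> f b)"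
        using ab by (simp add: H.inv_mult)
      also have "\<dots> = \<one>\<^bsub>H\<^esub>"
        using ab by simp
      finally show "x \<in> kernel G H f" using ab by (simp add: kernel_def)
    qed
  qed
qed

lemma (in group) kernel_sub_derived:
  assumes phi: "\<phi> \<in> hom G (Vn n)"
    and g: "\<forall>i\<in>{1..n}. g i \<in> carrier G \<and> \<phi> (g i) = {i} \<and> g i \<otimes> g i = \<one>"
    and gen: "carrier G \<subseteq> generate G (g ` {1..n})"
  shows "kernel G (Vn n) \<phi> \<subseteq> derived G (carrier G)"
proof
  let ?D = "derived G (carrier G)"
  let ?Q = "G Mod ?D"
  interpret D: normal ?D G by (rule derived_self_is_normal)
  interpret Q: comm_group ?Q by (rule derived_quot_is_comm_group)
  have pi: "(\<lambda>x. ?D #> x) \<in> hom G ?Q" by (rule D.r_coset_hom_Mod)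
  interpret pi: group_hom G ?Q "\<lambda>x. ?D #> x"
    by (simp add: group_hom_def group_hom_axioms_def pi is_group Q.is_group)
  define q where "q = (\<lambda>i. ?D #> g i)"
  have qc: "\<And>i. i \<in> {1..n} \<Longrightarrow> q i \<in> carrier ?Q" unfolding q_def using g by auto
  have qq: "\<And>i. i \<in> {1..n} \<Longrightarrow> q i \<otimes>\<^bsub>?Q\<^esub> q i = \<one>\<^bsub>?Q\<^esub>"
  proof -
    fix i assume i: "i \<in> {1..n}"
    have "q i \<otimes>\<^bsub>?Q\<^esub> q i = ?D #> (g i \<otimes> g i)" unfolding q_def using g i by (simp add: D.rcos_sum)
    also have "\<dots> = ?D #> \<one>" using g i by simp
    also have "\<dots> = \<one>\<^bsub>?Q\<^esub>" using pi.hom_one by simp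
    finally show "q i \<otimes>\<^bsub>?Q\<^esub> q i = \<one>\<^bsub>?Q\<^esub>" .
  qed
  define psi where "psi = (\<lambda>S. finprod ?Q q S)"
  have psi_hom: "psi \<in> hom (Vn n) ?Q"
  proof (rule homI)
    fix S assume "S \<in> carrier (Vn n)"
    then show "psi S \<in> carrier ?Q" unfolding psi_def using qc by (auto intro!: Q.finprod_closed)
  next
    fix S T assume S: "S \<in> carrier (Vn n)" and T: "T \<in> carrier (Vn n)"
    have fS: "finite S" "finite T" using S T finite_subset by auto
    show "psi (S \<otimes>\<^bsub>Vn n\<^esub> T) = psi S \<otimes>\<^bsub>?Q\<^esub> psi T"
      unfolding psi_def Vn_simps
      by (rule Q.finprod_symdiff) (use fS S T qc qq in auto)
  qed
  have comp: "(\<lambda>x. psi (\<phi> x)) \<in> hom G ?Q"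
  proof (rule homI)
    fix x assume x: "x \<in> carrier G"
    show "psi (\<phi> x) \<in> carrier ?Q" using hom_in_carrier[OF psi_hom hom_in_carrier[OF phi x]] .
  next
    fix x y assume x: "x \<in> carrier G" and y: "y \<in> carrier G"
    show "psi (\<phi> (x \<otimes> y)) = psi (\<phi> x) \<otimes>\<^bsub>?Q\<^esub> psi (\<phi> y)"
      using x y hom_mult[OF psi_hom hom_in_carrier[OF phi x] hom_in_carrier[OF phi y]] hom_mult[OF phi x y] by simp
  qed
  have agree: "\<And>x. x \<in> carrier G \<Longrightarrow> ?D #> x = psi (\<phi> x)"
  proof -
    fix x assume x: "x \<in> carrier G"
    have gs: "g ` {1..n} \<subseteq> carrier G" using g by auto
    have "\<forall>s\<in>g ` {1..n}. ?D #> s = psi (\<phi> s)"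
    proof
      fix s assume "s \<in> g ` {1..n}"
      then obtain i where i: "i \<in> {1..n}" "s = g i" by blast
      have "psi (\<phi> s) = finprod ?Q q {i}" unfolding psi_def using g i by simp
      also have "\<dots> = q i \<otimes>\<^bsub>?Q\<^esub> finprod ?Q q {}"
        by (rule Q.finprod_insert) (use qc[OF i(1)] in auto)
      also have "\<dots> = q i"
        unfolding Q.finprod_empty by (rule Q.r_one) (rule qc[OF i(1)])
      finally show "?D #> s = psi (\<phi> s)" unfolding q_def using i by simp
    qed
    then show "?D #> x = psi (\<phi> x)"
      using hom_agree_gen[OF Q.is_group pi comp gs] gen x by blast
  qed
  fix x assume x: "x \<in> kernel G (Vn n) \<phi>"
  then have xc: "x \<in> carrier G" and px: "\<phi> x = {}" by (auto simp: kernel_def)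
  have "?D #> x = psi {}" using agree[OF xc] px by simp
  also have "\<dots> = \<one>\<^bsub>?Q\<^esub>" unfolding psi_def by simp
  also have "\<dots> = ?D" by simp
  finally have e: "?D #> x = ?D" .
  have "x \<in> ?D #> x" using rcos_self[OF xc D.subgroup_axioms] .
  then show "x \<in> ?D" using e by simp
qed

definition Sub :: "nat \<Rightarrow> (nat \<Rightarrow> nat set set \<times> nat set) set" where
  "Sub n = {x \<in> carrier (ProdG n). \<forall>i\<in>{1..n}. \<forall>j\<in>{1..n}. phii i (x i) = phii j (x j)}"

lemma phii_group_hom: "i \<in> {1..n} \<Longrightarrow> group_hom (Gi n i) (Vn n) (phii i)"
  by (simp add: group_hom_def group_hom_axioms_def Gi_group Vn_group phii_hom)

lemma Vn_inv: "S \<in> carrier (Vn n) \<Longrightarrow> inv\<^bsub>Vn n\<^esub> S = S"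
  using group.inv_invol[OF Vn_group] by simp

lemma Sub_subgroup: "subgroup (Sub n) (ProdG n)"
proof -
  interpret P: group "ProdG n" by (rule ProdG_group)
  show ?thesis
  proof
    show "Sub n \<subseteq> carrier (ProdG n)" by (auto simp: Sub_def)
  next
    fix x y assume x: "x \<in> Sub n" and y: "y \<in> Sub n"
    have xc: "x \<in> carrier (ProdG n)" and yc: "y \<in> carrier (ProdG n)" using x y by (auto simp: Sub_def)
    have xi: "\<And>i. i \<in> {1..n} \<Longrightarrow> x i \<in> carrier (Gi n i)" using xc by (auto simp: ProdG_carrier)
    have yi: "\<And>i. i \<in> {1..n} \<Longrightarrow> y i \<in> carrier (Gi n i)" using yc by (auto simp: ProdG_carrier)
    have "\<forall>i\<in>{1..n}. \<forall>j\<in>{1..n}. phii i ((x \<otimes>\<^bsub>ProdG n\<^esub> y) i) = phii j ((x \<otimes>\<^bsub>ProdG n\<^esub> y) j)"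
    proof (intro ballI)
      fix i j assume i: "i \<in> {1..n}" and j: "j \<in> {1..n}"
      interpret hi: group_hom "Gi n i" "Vn n" "phii i" using phii_group_hom[OF i] .
      interpret hj: group_hom "Gi n j" "Vn n" "phii j" using phii_group_hom[OF j] .
      have "phii i ((x \<otimes>\<^bsub>ProdG n\<^esub> y) i) = symdiff (phii i (x i)) (phii i (y i))"
        using i xi yi by (simp add: prod_app)
      also have "\<dots> = symdiff (phii j (x j)) (phii j (y j))"
      proof -
        have "phii i (x i) = phii j (x j)" "phii i (y i) = phii j (y j)"
          using x y i j unfolding Sub_def by blast+
        then show ?thesis by simp
      qed
      also have "\<dots> = phii j ((x \<otimes>\<^bsub>ProdG n\<^esub> y) j)" using j xi yi by (simp add: prod_app)
      finally show "phii i ((x \<otimes>\<^bsub>ProdG n\<^esub> y) i) = phii j ((x \<otimes>\<^bsub>ProdG n\<^esub> y) j)" .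
    qed
    moreover have "x \<otimes>\<^bsub>ProdG n\<^esub> y \<in> carrier (ProdG n)" using xc yc by simp
    ultimately show "x \<otimes>\<^bsub>ProdG n\<^esub> y \<in> Sub n" unfolding Sub_def by blast
  next
    show "\<one>\<^bsub>ProdG n\<^esub> \<in> Sub n" by (simp add: Sub_def ProdG_one_app phii_def)
  next
    fix x assume x: "x \<in> Sub n"
    have xc: "x \<in> carrier (ProdG n)" using x by (auto simp: Sub_def)
    have xi: "\<And>i. i \<in> {1..n} \<Longrightarrow> x i \<in> carrier (Gi n i)" using xc by (auto simp: ProdG_carrier)
    have ie: "inv\<^bsub>ProdG n\<^esub> x = (\<lambda>i\<in>{1..n}. inv\<^bsub>Gi n i\<^esub> x i)"
    proof -
      have xc': "x \<in> (\<Pi>\<^sub>E i\<in>{1..n}. carrier (Gi n i))" using xc by (simp add: ProdG_carrier)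
      show ?thesis unfolding ProdG_def by (rule inv_product_group[OF xc' Gi_group])
    qed
    have "\<forall>i\<in>{1..n}. \<forall>j\<in>{1..n}. phii i ((inv\<^bsub>ProdG n\<^esub> x) i) = phii j ((inv\<^bsub>ProdG n\<^esub> x) j)"
    proof (intro ballI)
      fix i j assume i: "i \<in> {1..n}" and j: "j \<in> {1..n}"
      interpret hi: group_hom "Gi n i" "Vn n" "phii i" using phii_group_hom[OF i] .
      interpret hj: group_hom "Gi n j" "Vn n" "phii j" using phii_group_hom[OF j] .
      have "phii i ((inv\<^bsub>ProdG n\<^esub> x) i) = phii i (x i)"
        using i xi[OF i] Vn_inv[OF hi.hom_closed[OF xi[OF i]]] by (simp add: ie)
      also have "\<dots> = phii j (x j)" using x i j unfolding Sub_def by blast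
      also have "\<dots> = phii j ((inv\<^bsub>ProdG n\<^esub> x) j)"
        using j xi[OF j] Vn_inv[OF hj.hom_closed[OF xi[OF j]]] by (simp add: ie)
      finally show "phii i ((inv\<^bsub>ProdG n\<^esub> x) i) = phii j ((inv\<^bsub>ProdG n\<^esub> x) j)" .
    qed
    moreover have "inv\<^bsub>ProdG n\<^esub> x \<in> carrier (ProdG n)" using xc by simp
    ultimately show "inv\<^bsub>ProdG n\<^esub> x \<in> Sub n" unfolding Sub_def by blast
  qed
qed

lemma phii_gi: "i \<in> {1..n} \<Longrightarrow> phii i (gi i j) = {j}"
  by (auto simp: phii_def gi_def symdiff_def)

lemma gamma_Sub: "j \<in> {1..n} \<Longrightarrow> gamma n j \<in> Sub n"
proof -
  assume j: "j \<in> {1..n}"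
  have e: "\<And>i. i \<in> {1..n} \<Longrightarrow> phii i (gamma n j i) = {j}"
    using gamma_app phii_gi by metis
  show ?thesis unfolding Sub_def using gamma_carrier[OF j] e by auto
qed

lemma GG_Sub: "carrier (GG n) \<subseteq> Sub n"
  unfolding GG_carrier
  by (rule group.generate_subgroup_incl[OF ProdG_group _ Sub_subgroup]) (use gamma_Sub in blast)

lemma gbold_eq:
  assumes n: "n \<ge> 1" and x: "x \<in> carrier (GG n)" and i: "i \<in> {1..n}"
  shows "gbold n x = phii i (x i)"
proof -
  have xs: "x \<in> Sub n" using GG_Sub x by blast
  have all: "\<forall>j\<in>{1..n}. phii j (x j) = phii i (x i)" using xs i unfolding Sub_def by blast
  show ?thesis unfolding gbold_def
  proof (rule the_equality)
    show "\<forall>j\<in>{1..n}. phii j (x j) = phii i (x i)" by (rule all)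
  next
    fix v assume "\<forall>j\<in>{1..n}. phii j (x j) = v"
    then show "v = phii i (x i)" using i by blast
  qed
qed

lemma GG_elem_app: "x \<in> carrier (GG n) \<Longrightarrow> i \<in> {1..n} \<Longrightarrow> x i \<in> carrier (Gi n i)"
proof -
  assume x: "x \<in> carrier (GG n)" and i: "i \<in> {1..n}"
  have "x \<in> (\<Pi>\<^sub>E i\<in>{1..n}. carrier (Gi n i))" using GG_sub[of n] x by (auto simp: ProdG_carrier)
  then show ?thesis using i by (auto simp: PiE_iff)
qed

lemma gbold_hom: "n \<ge> 1 \<Longrightarrow> gbold n \<in> hom (GG n) (Vn n)"
proof (rule homI)
  assume n: "n \<ge> 1"
  have one: "1 \<in> {1..n}" using n by simp
  interpret h1: group_hom "Gi n 1" "Vn n" "phii 1" using phii_group_hom[OF one] .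
  fix x assume x: "x \<in> carrier (GG n)"
  show "gbold n x \<in> carrier (Vn n)"
    using gbold_eq[OF n x one] h1.hom_closed[OF GG_elem_app[OF x one]] by simp
next
  assume n: "n \<ge> 1"
  have one: "1 \<in> {1..n}" using n by simp
  interpret h1: group_hom "Gi n 1" "Vn n" "phii 1" using phii_group_hom[OF one] .
  fix x y assume x: "x \<in> carrier (GG n)" and y: "y \<in> carrier (GG n)"
  have xy: "x \<otimes>\<^bsub>GG n\<^esub> y \<in> carrier (GG n)" using x y GG_m_closed by simp
  show "gbold n (x \<otimes>\<^bsub>GG n\<^esub> y) = gbold n x \<otimes>\<^bsub>Vn n\<^esub> gbold n y"
    using gbold_eq[OF n xy one] gbold_eq[OF n x one] gbold_eq[OF n y one]
      GG_elem_app[OF x one] GG_elem_app[OF y one] one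
    by (simp add: prod_app)
qed

lemma gbold_gamma: "n \<ge> 1 \<Longrightarrow> j \<in> {1..n} \<Longrightarrow> gbold n (gamma n j) = {j}"
proof -
  assume n: "n \<ge> 1" and j: "j \<in> {1..n}"
  have one: "1 \<in> {1..n}" using n by simp
  show ?thesis using gbold_eq[OF n gamma_GG[OF j] one] by (simp add: gamma_app[OF one] phii_gi[OF one])
qed

lemma gamma_sq: "j \<in> {1..n} \<Longrightarrow> gamma n j \<otimes>\<^bsub>ProdG n\<^esub> gamma n j = \<one>\<^bsub>ProdG n\<^esub>"
proof (rule ProdG_eqI)
  assume j: "j \<in> {1..n}"
  interpret P: group "ProdG n" by (rule ProdG_group)
  show "gamma n j \<otimes>\<^bsub>ProdG n\<^esub> gamma n j \<in> carrier (ProdG n)" using gamma_carrier[OF j] by simp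
  show "\<one>\<^bsub>ProdG n\<^esub> \<in> carrier (ProdG n)" by simp
  fix i assume i: "i \<in> {1..n}"
  show "(gamma n j \<otimes>\<^bsub>ProdG n\<^esub> gamma n j) i = \<one>\<^bsub>ProdG n\<^esub> i"
    using i by (simp add: prod_app gamma_app ProdG_one_app gi_def Gi_mult)
qed

lemma GG_kernel_char:
  assumes n: "n \<ge> 1" and x: "x \<in> kernel (GG n) (Vn n) (gbold n)" and i: "i \<in> {1..n}"
  shows "snd (x i) = {} \<and> {i} \<notin> fst (x i)"
proof -
  have xc: "x \<in> carrier (GG n)" and g: "gbold n x = {}" using x by (auto simp: kernel_def)
  have "phii i (x i) = {}" using gbold_eq[OF n xc i] g by simp
  moreover have "i \<notin> snd (x i)" using GG_elem_app[OF xc i] by (auto simp: Gi_carrier)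
  ultimately show ?thesis by (auto simp: phii_def symdiff_def split: if_splits)
qed

lemma GG_kernel_mult:
  assumes n: "n \<ge> 1" and x: "x \<in> kernel (GG n) (Vn n) (gbold n)" and y: "y \<in> kernel (GG n) (Vn n) (gbold n)"
    and i: "i \<in> {1..n}"
  shows "(x \<otimes>\<^bsub>ProdG n\<^esub> y) i = (symdiff (fst (x i)) (fst (y i)), {})"
proof -
  have "snd (x i) = {}" "snd (y i) = {}" using GG_kernel_char[OF n x i] GG_kernel_char[OF n y i] by auto
  then have "x i = (fst (x i), {})" "y i = (fst (y i), {})" by (metis prod.collapse)+
  then show ?thesis using i by (simp add: prod_app) (metis Gi_mult act_empty symdiff_self)
qed

lemma GG_kernel_comm:
  assumes n: "n \<ge> 1" and x: "x \<in> kernel (GG n) (Vn n) (gbold n)" and y: "y \<in> kernel (GG n) (Vn n) (gbold n)"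
  shows "x \<otimes>\<^bsub>GG n\<^esub> y = y \<otimes>\<^bsub>GG n\<^esub> x"
proof -
  interpret P: group "ProdG n" by (rule ProdG_group)
  have xc: "x \<in> carrier (ProdG n)" "y \<in> carrier (ProdG n)" using x y GG_sub by (auto simp: kernel_def)
  show ?thesis
    by (simp, rule ProdG_eqI) (use xc GG_kernel_mult[OF n x y] GG_kernel_mult[OF n y x] in \<open>auto simp: symdiff_comm\<close>)
qed

lemma GG_kernel_sq:
  assumes n: "n \<ge> 1" and x: "x \<in> kernel (GG n) (Vn n) (gbold n)"
  shows "x \<otimes>\<^bsub>GG n\<^esub> x = \<one>\<^bsub>GG n\<^esub>"
proof -
  interpret P: group "ProdG n" by (rule ProdG_group)
  have xc: "x \<in> carrier (ProdG n)" using x GG_sub by (auto simp: kernel_def)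
  show ?thesis
    by (simp, rule ProdG_eqI) (use xc GG_kernel_mult[OF n x x] in \<open>auto simp: ProdG_one_app\<close>)
qed

lemma GG_gen: "carrier (GG n) \<subseteq> generate (GG n) (gamma n ` {1..n})"
proof -
  interpret P: group "ProdG n" by (rule ProdG_group)
  have sub: "subgroup (carrier (GG n)) (ProdG n)"
    unfolding GG_carrier by (rule P.generate_is_subgroup[OF gamma_set_carrier])
  have inc: "gamma n ` {1..n} \<subseteq> carrier (GG n)" using gamma_GG by blast
  have e: "GG n = (ProdG n)\<lparr>carrier := carrier (GG n)\<rparr>"
    by (simp add: GG_def subgroup_generated_def)
  have "generate (GG n) (gamma n ` {1..n}) = generate (ProdG n) (gamma n ` {1..n})"
    by (subst e, rule P.generate_consistent[OF inc sub])
  then show ?thesis by (simp add: GG_carrier)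
qed


theorem GG_expansion: "n \<ge> 1 \<Longrightarrow> expansion_group n (GG n) (gbold n) (gamma n)"
proof -
  assume n: "n \<ge> 1"
  interpret GG: group "GG n" by (rule GG_group)
  have h: "gbold n \<in> hom (GG n) (Vn n)" by (rule gbold_hom[OF n])
  have g: "\<forall>i\<in>{1..n}. gamma n i \<in> carrier (GG n) \<and> gbold n (gamma n i) = {i} \<and>
      gamma n i \<otimes>\<^bsub>GG n\<^esub> gamma n i = \<one>\<^bsub>GG n\<^esub>"
    using gamma_GG gbold_gamma[OF n] gamma_sq by simp
  have d1: "derived (GG n) (carrier (GG n)) \<subseteq> kernel (GG n) (Vn n) (gbold n)"
    by (rule GG.derived_sub_kernel[OF Vn_comm_group h])
  have d2: "kernel (GG n) (Vn n) (gbold n) \<subseteq> derived (GG n) (carrier (GG n))"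
    by (rule GG.kernel_sub_derived[OF h g GG_gen])
  show ?thesis
    unfolding expansion_group_def
    using GG.is_group h g d1 d2 GG_kernel_comm[OF n] GG_kernel_sq[OF n] by blast
qed

section \<open>Counting\<close>

definition Jset :: "nat \<Rightarrow> (nat set \<times> nat) set" where
  "Jset n = {(S, j). S \<subseteq> {1..n} \<and> j \<in> S \<and> j \<noteq> Min S}"

lemma Jset_finite: "finite (Jset n)"
proof -
  have "Jset n \<subseteq> Pow {1..n} \<times> {1..n}" by (auto simp: Jset_def)
  then show ?thesis by (rule finite_subset) auto
qed

lemma card_with_j:
  assumes j: "j \<in> {1..(n::nat)}"
  shows "card {S. S \<subseteq> {1..n} \<and> j \<in> S} = 2 ^ (n - 1)"
proof -
  have "bij_betw (\<lambda>S. S - {j}) {S. S \<subseteq> {1..n} \<and> j \<in> S} (Pow ({1..n} - {j}))"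
  proof (rule bij_betw_byWitness[where f' = "insert j"])
    show "\<forall>a\<in>{S. S \<subseteq> {1..n} \<and> j \<in> S}. insert j (a - {j}) = a" by auto
    show "\<forall>a'\<in>Pow ({1..n} - {j}). insert j a' - {j} = a'" by auto
    show "(\<lambda>S. S - {j}) ` {S. S \<subseteq> {1..n} \<and> j \<in> S} \<subseteq> Pow ({1..n} - {j})" by auto
    show "insert j ` Pow ({1..n} - {j}) \<subseteq> {S. S \<subseteq> {1..n} \<and> j \<in> S}" using j by auto
  qed
  then have "card {S. S \<subseteq> {1..n} \<and> j \<in> S} = card (Pow ({1..n} - {j}))"
    by (rule bij_betw_same_card)
  also have "\<dots> = 2 ^ card ({1..n} - {j})" by (simp add: card_Pow)
  also have "card ({1..n} - {j}) = n - 1" using j by simp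
  finally show ?thesis .
qed

lemma card_Jset: "card (Jset n) = n * 2 ^ (n - 1) - (2 ^ n - 1)"
proof -
  define Jall where "Jall = {(S, j). S \<subseteq> {1..n} \<and> j \<in> S}"
  define Jmin where "Jmin = (\<lambda>S. (S, Min S)) ` (Pow {1..n} - {{}})"
  have fa: "finite Jall"
  proof -
    have "Jall \<subseteq> Pow {1..n} \<times> {1..n}" by (auto simp: Jall_def)
    then show ?thesis by (rule finite_subset) auto
  qed
  have sub: "Jmin \<subseteq> Jall"
  proof
    fix x assume "x \<in> Jmin"
    then obtain S where S: "S \<subseteq> {1..n}" "S \<noteq> {}" "x = (S, Min S)" by (auto simp: Jmin_def)
    have "finite S" using S(1) finite_subset by auto
    then have "Min S \<in> S" using S(2) by simp
    then show "x \<in> Jall" using S by (simp add: Jall_def)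
  qed
  have eq: "Jset n = Jall - Jmin"
  proof
    show "Jset n \<subseteq> Jall - Jmin"
    proof
      fix x assume "x \<in> Jset n"
      then obtain S j where x: "x = (S, j)" "S \<subseteq> {1..n}" "j \<in> S" "j \<noteq> Min S" by (auto simp: Jset_def)
      have "x \<notin> Jmin" using x by (auto simp: Jmin_def)
      then show "x \<in> Jall - Jmin" using x by (simp add: Jall_def)
    qed
  next
    show "Jall - Jmin \<subseteq> Jset n"
    proof
      fix x assume x: "x \<in> Jall - Jmin"
      then obtain S j where xs: "x = (S, j)" "S \<subseteq> {1..n}" "j \<in> S" by (auto simp: Jall_def)
      have "j \<noteq> Min S"
      proof
        assume "j = Min S"
        then have "x \<in> Jmin" using xs by (auto simp: Jmin_def)
        then show False using x by simp
      qed
      then show "x \<in> Jset n" using xs by (simp add: Jset_def)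
    qed
  qed
  have cmin: "card Jmin = 2 ^ n - 1"
  proof -
    have "inj_on (\<lambda>S. (S, Min S)) (Pow {1..n} - {{}})" by (rule inj_onI) simp
    then have "card Jmin = card (Pow {1..n} - {{}})" unfolding Jmin_def by (rule card_image)
    also have "\<dots> = 2 ^ n - 1" by (simp add: card_Pow)
    finally show ?thesis .
  qed
  have call: "card Jall = n * 2 ^ (n - 1)"
  proof -
    have "Jall = (\<lambda>(j, S). (S, j)) ` (SIGMA j:{1..n}. {S. S \<subseteq> {1..n} \<and> j \<in> S})"
      by (auto simp: Jall_def image_iff)
    moreover have "inj_on (\<lambda>(j, S). (S, j)) (SIGMA j:{1..n}. {S. S \<subseteq> {1..n} \<and> j \<in> S})"
      by (rule inj_onI) auto
    ultimately have "card Jall = card (SIGMA j:{1..n}. {S. S \<subseteq> {1..n} \<and> j \<in> S})"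
      by (simp add: card_image)
    also have "\<dots> = (\<Sum>j\<in>{1..n}. card {S. S \<subseteq> {1..n} \<and> j \<in> S})"
      by (rule card_SigmaI) auto
    also have "\<dots> = (\<Sum>j\<in>{1..n}. 2 ^ (n - 1))"
      by (rule sum.cong) (simp_all add: card_with_j)
    also have "\<dots> = n * 2 ^ (n - 1)" by simp
    finally show ?thesis .
  qed
  have "card (Jset n) = card Jall - card Jmin" unfolding eq by (rule card_Diff_subset) (use sub fa finite_subset in auto)
  then show ?thesis using cmin call by simp
qed

lemma bound_exp_eq: "n \<ge> 1 \<Longrightarrow> n + card (Jset n) = bound_exp n"
proof -
  assume n: "n \<ge> 1"
  have p: "(2::nat) ^ n = 2 * 2 ^ (n - 1)" using n by (cases n) auto
  have le: "2 ^ n - 1 \<le> n * 2 ^ (n - 1)"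
  proof (cases "n = 1")
    case True then show ?thesis by simp
  next
    case False
    then have "2 \<le> n" using n by simp
    then have "2 * 2 ^ (n - 1) \<le> n * (2::nat) ^ (n - 1)" by (rule mult_right_mono) simp
    then show ?thesis using p by linarith
  qed
  have one: "(1::nat) \<le> 2 ^ n" by simp
  define A where "A = n * (2::nat) ^ (n - 1)"
  define B where "B = (2::nat) ^ n"
  have "n + (A - (B - 1)) = A + n + 1 - B" using le one unfolding A_def[symmetric] B_def[symmetric] by linarith
  then show ?thesis unfolding card_Jset bound_exp_def A_def B_def .
qed

definition Psi :: "nat \<Rightarrow> (nat set \<times> nat) set \<Rightarrow> (nat \<Rightarrow> nat set set \<times> nat set)" where
  "Psi n B = (\<lambda>i\<in>{1..n}. ({S. (S, i) \<in> B} \<union> {S. i = Min S \<and> odd (card {j. (S, j) \<in> B})}, {}))"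

lemma Jset_mem: "(S, j) \<in> Jset n \<longleftrightarrow> S \<subseteq> {1..n} \<and> j \<in> S \<and> j \<noteq> Min S"
  by (simp add: Jset_def)

lemma Jset_Min: "(S, j) \<in> Jset n \<Longrightarrow> S \<noteq> {} \<and> finite S \<and> Min S \<in> S"
proof -
  assume h: "(S, j) \<in> Jset n"
  then have "S \<subseteq> {1..n}" "j \<in> S" by (auto simp: Jset_def)
  then have "finite S" "S \<noteq> {}" using finite_subset by auto
  then show ?thesis by simp
qed

lemma fin_sec: "finite B \<Longrightarrow> finite {j. (S, j) \<in> B}"
proof -
  assume "finite B"
  then have "finite (snd ` B)" by simp
  moreover have "{j. (S, j) \<in> B} \<subseteq> snd ` B" by force
  ultimately show ?thesis using finite_subset by blast
qed

lemma Psi_carrier: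
  assumes B: "B \<subseteq> Jset n"
  shows "Psi n B \<in> carrier (ProdG n)"
proof -
  have "\<And>i. i \<in> {1..n} \<Longrightarrow> Psi n B i \<in> carrier (Gi n i)"
  proof -
    fix i assume i: "i \<in> {1..n}"
    have "{S. (S, i) \<in> B} \<union> {S. i = Min S \<and> odd (card {j. (S, j) \<in> B})} \<subseteq> {A. A \<subseteq> {1..n} \<and> i \<in> A}"
    proof
      fix S assume S: "S \<in> {S. (S, i) \<in> B} \<union> {S. i = Min S \<and> odd (card {j. (S, j) \<in> B})}"
      show "S \<in> {A. A \<subseteq> {1..n} \<and> i \<in> A}"
      proof (cases "(S, i) \<in> B")
        case True then show ?thesis using B by (auto simp: Jset_def)
      next
        case False
        then have m: "i = Min S" and o: "odd (card {j. (S, j) \<in> B})" using S by auto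
        then have "{j. (S, j) \<in> B} \<noteq> {}" by (metis card.empty odd_card_imp_not_empty)
        then obtain j where "(S, j) \<in> B" by blast
        then have "(S, j) \<in> Jset n" using B by blast
        then show ?thesis using m Jset_Min[of S j n] by (auto simp: Jset_def)
      qed
    qed
    then show "Psi n B i \<in> carrier (Gi n i)" using i by (simp add: Psi_def Gi_mem)
  qed
  then show ?thesis by (auto simp: ProdG_carrier Psi_def)
qed

lemma Psi_empty: "Psi n {} = \<one>\<^bsub>ProdG n\<^esub>"
  by (rule ext) (simp add: Psi_def ProdG_def Gi_one)

lemma Psi_insert:
  assumes fB: "finite B" and B: "B \<subseteq> Jset n" and b: "(S, j) \<in> Jset n" and nb: "(S, j) \<notin> B"
  shows "Psi n (insert (S, j) B) = Psi n B \<otimes>\<^bsub>ProdG n\<^esub> Esel n S (Min S) j"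
proof (rule ProdG_eqI)
  interpret P: group "ProdG n" by (rule ProdG_group)
  have SM: "S \<noteq> {}" "finite S" "Min S \<in> S" using Jset_Min[OF b] by auto
  have bj: "S \<subseteq> {1..n}" "j \<in> S" "j \<noteq> Min S" using b by (auto simp: Jset_def)
  show "Psi n (insert (S, j) B) \<in> carrier (ProdG n)" using Psi_carrier B b by auto
  show "Psi n B \<otimes>\<^bsub>ProdG n\<^esub> Esel n S (Min S) j \<in> carrier (ProdG n)"
    using Psi_carrier[OF B] Esel_carrier[OF SM(3) bj(2) bj(1)] by simp
  fix i assume i: "i \<in> {1..n}"
  have cnt: "\<And>S'. card {j'. (S', j') \<in> insert (S, j) B} = (if S' = S then Suc (card {j'. (S, j') \<in> B}) else card {j'. (S', j') \<in> B})"
  proof -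
    fix S'
    show "card {j'. (S', j') \<in> insert (S, j) B} = (if S' = S then Suc (card {j'. (S, j') \<in> B}) else card {j'. (S', j') \<in> B})"
    proof (cases "S' = S")
      case True
      have "{j'. (S', j') \<in> insert (S, j) B} = insert j {j'. (S, j') \<in> B}" using True by auto
      moreover have "j \<notin> {j'. (S, j') \<in> B}" using nb by simp
      ultimately show ?thesis using True fin_sec[OF fB] by simp
    next
      case False
      then have "{j'. (S', j') \<in> insert (S, j) B} = {j'. (S', j') \<in> B}" by auto
      then show ?thesis using False by simp
    qed
  qed
  have Bi: "\<And>S'. (S', i) \<in> B \<Longrightarrow> i \<noteq> Min S'" using B by (auto simp: Jset_def)
  define u where "u = {S'. (S', i) \<in> B} \<union> {S'. i = Min S' \<and> odd (card {j'. (S', j') \<in> B})}"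
  define e where "e = (if i = Min S \<or> i = j then {S} else ({} :: nat set set))"
  have lhs: "Psi n (insert (S, j) B) i = ({S'. (S', i) \<in> insert (S, j) B} \<union> {S'. i = Min S' \<and> odd (card {j'. (S', j') \<in> insert (S, j) B})}, {})"
    using i by (simp add: Psi_def)
  have rhs: "(Psi n B \<otimes>\<^bsub>ProdG n\<^esub> Esel n S (Min S) j) i = (symdiff u e, {})"
    using i by (simp add: prod_app Psi_def Esel_def Gi_mult u_def e_def)
  have "{S'. (S', i) \<in> insert (S, j) B} \<union> {S'. i = Min S' \<and> odd (card {j'. (S', j') \<in> insert (S, j) B})} = symdiff u e"
  proof (rule Set.set_eqI)
    fix S'
    show "S' \<in> {S'. (S', i) \<in> insert (S, j) B} \<union> {S'. i = Min S' \<and> odd (card {j'. (S', j') \<in> insert (S, j) B})} \<longleftrightarrow> S' \<in> symdiff u e"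
    proof (cases "S' = S")
      case False
      then show ?thesis by (simp add: cnt u_def e_def)
    next
      case True
      have c: "card {j'. (S, j') \<in> insert (S, j) B} = Suc (card {j'. (S, j') \<in> B})"
        using cnt[of S] by simp
      have "(S, i) \<in> B \<Longrightarrow> i \<noteq> Min S" using Bi by blast
      then show ?thesis unfolding True u_def e_def Un_iff mem_Collect_eq c mem_symdiff
        using bj nb by auto
    qed
  qed
  then show "Psi n (insert (S, j) B) i = (Psi n B \<otimes>\<^bsub>ProdG n\<^esub> Esel n S (Min S) j) i"
    using lhs rhs by simp
qed

lemma Psi_GG:
  assumes fB: "finite B"
  shows "B \<subseteq> Jset n \<Longrightarrow> Psi n B \<in> carrier (GG n)"
  using fB
proof (induction B rule: finite_induct)
  case empty
  interpret GG: group "GG n" by (rule GG_group)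
  have "\<one>\<^bsub>GG n\<^esub> \<in> carrier (GG n)" by (rule GG.one_closed)
  then show ?case by (simp add: Psi_empty)
next
  case (insert b B)
  obtain S j where b: "b = (S, j)" by fastforce
  have bJ: "(S, j) \<in> Jset n" using insert b by auto
  have BJ: "B \<subseteq> Jset n" using insert by auto
  have SM: "Min S \<in> S" using Jset_Min[OF bJ] by auto
  have bj: "S \<subseteq> {1..n}" "j \<in> S" "j \<noteq> Min S" using bJ by (auto simp: Jset_def)
  have "Psi n (insert b B) = Psi n B \<otimes>\<^bsub>ProdG n\<^esub> Esel n S (Min S) j"
    unfolding b by (rule Psi_insert[OF insert(1) BJ bJ]) (use insert b in auto)
  moreover have "Esel n S (Min S) j \<in> carrier (GG n)"
    by (rule Esel_GG) (use SM bj in auto)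
  ultimately show ?case using insert.IH[OF BJ] GG_m_closed by metis
qed

lemma Psi_inj:
  assumes B: "B \<subseteq> Jset n" and B': "B' \<subseteq> Jset n" and e: "Psi n B = Psi n B'"
  shows "B \<subseteq> B'"
proof
  fix b assume bB: "b \<in> B"
  obtain S i where b: "b = (S, i)" by fastforce
  have bJ: "S \<subseteq> {1..n}" "i \<in> S" "i \<noteq> Min S" using bB b B by (auto simp: Jset_def)
  have i: "i \<in> {1..n}" using bJ by auto
  have "S \<in> fst (Psi n B i)" using i bB b by (simp add: Psi_def)
  then have "S \<in> fst (Psi n B' i)" using e by simp
  then show "b \<in> B'" using i b bJ by (simp add: Psi_def)
qed

lemma Psi_kernel:
  assumes n: "n \<ge> 1" and fB: "finite B" and B: "B \<subseteq> Jset n"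
  shows "gbold n (Psi n B) = {}"
proof -
  have one: "1 \<in> {1..n}" using n by simp
  have "{1} \<notin> fst (Psi n B 1)"
  proof
    assume "{1} \<in> fst (Psi n B 1)"
    then have "({1}, 1) \<in> B \<or> odd (card {j. ({1}, j) \<in> B})" using one by (simp add: Psi_def)
    moreover have "({1}, 1) \<notin> B" using B by (auto simp: Jset_def)
    moreover have "{j. ({1::nat}, j) \<in> B} = {}" using B by (auto simp: Jset_def)
    ultimately show False by simp
  qed
  then show ?thesis
    using gbold_eq[OF n Psi_GG[OF fB B] one] one by (simp add: Psi_def phii_def)
qed

section \<open>Lower bound\<close>

lemma finite_ProdG: "finite (carrier (ProdG n))"
proof -
  have "\<And>i. finite (carrier (Gi n i))"
  proof -
    fix i
    have "Ucar n i \<subseteq> Pow (Pow {1..n})" by (auto simp: Ucar_def)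
    then have "finite (Ucar n i)" by (rule finite_subset) simp
    then show "finite (carrier (Gi n i))" by (simp add: Gi_carrier)
  qed
  then show ?thesis by (simp add: ProdG_carrier finite_PiE)
qed

lemma finite_GG: "finite (carrier (GG n))"
  using finite_ProdG GG_sub finite_subset by blast

lemma gbold_surj:
  assumes n: "n \<ge> 1" and fP: "finite P"
  shows "P \<subseteq> {1..n} \<Longrightarrow> \<exists>x\<in>carrier (GG n). gbold n x = P"
  using fP
proof (induction P rule: finite_induct)
  case empty
  interpret h: group_hom "GG n" "Vn n" "gbold n"
    by (simp add: group_hom_def group_hom_axioms_def GG_group Vn_group gbold_hom[OF n])
  show ?case using h.hom_one h.G.one_closed by (metis Vn_simps(3))
next
  case (insert i P)
  interpret h: group_hom "GG n" "Vn n" "gbold n"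
    by (simp add: group_hom_def group_hom_axioms_def GG_group Vn_group gbold_hom[OF n])
  obtain x where x: "x \<in> carrier (GG n)" "gbold n x = P" using insert by auto
  have i: "i \<in> {1..n}" using insert by auto
  have "gbold n (x \<otimes>\<^bsub>GG n\<^esub> gamma n i) = symdiff P {i}"
    using h.hom_mult[OF x(1) gamma_GG[OF i]] x gbold_gamma[OF n i] by simp
  also have "symdiff P {i} = insert i P" using insert.hyps by auto
  finally show ?case using x gamma_GG[OF i] by (metis h.G.m_closed)
qed

theorem GG_card_lower:
  assumes n: "n \<ge> 1"
  shows "2 ^ bound_exp n \<le> card (carrier (GG n))"
proof -
  interpret GG: group "GG n" by (rule GG_group)
  interpret h: group_hom "GG n" "Vn n" "gbold n"
    by (simp add: group_hom_def group_hom_axioms_def GG_group Vn_group gbold_hom[OF n])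
  define p where "p = (\<lambda>P. SOME x. x \<in> carrier (GG n) \<and> gbold n x = P)"
  have p: "\<And>P. P \<subseteq> {1..n} \<Longrightarrow> p P \<in> carrier (GG n) \<and> gbold n (p P) = P"
  proof -
    fix P assume P: "P \<subseteq> {1..n}"
    have "finite P" using P finite_subset by auto
    then have "\<exists>x. x \<in> carrier (GG n) \<and> gbold n x = P" using gbold_surj[OF n _ P] by blast
    then show "p P \<in> carrier (GG n) \<and> gbold n (p P) = P" unfolding p_def by (rule someI_ex)
  qed
  define F where "F = (\<lambda>(P, B). p P \<otimes>\<^bsub>GG n\<^esub> Psi n B)"
  have JB: "\<And>B. B \<in> Pow (Jset n) \<Longrightarrow> finite B \<and> B \<subseteq> Jset n"
    using Jset_finite finite_subset by auto
  have img: "F ` (Pow {1..n} \<times> Pow (Jset n)) \<subseteq> carrier (GG n)"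
  proof (rule image_subsetI)
    fix a assume a: "a \<in> Pow {1..n} \<times> Pow (Jset n)"
    obtain P B where ab: "a = (P, B)" by fastforce
    have P: "P \<subseteq> {1..n}" "finite B" "B \<subseteq> Jset n" using a ab JB by auto
    show "F a \<in> carrier (GG n)"
      unfolding ab F_def using GG.m_closed[OF conjunct1[OF p[OF P(1)]] Psi_GG[OF P(2,3)]] by simp
  qed
  have inj: "inj_on F (Pow {1..n} \<times> Pow (Jset n))"
  proof (rule inj_onI)
    fix a b assume a: "a \<in> Pow {1..n} \<times> Pow (Jset n)" and b: "b \<in> Pow {1..n} \<times> Pow (Jset n)" and e: "F a = F b"
    obtain P B where ab: "a = (P, B)" by fastforce
    obtain P' B' where bb: "b = (P', B')" by fastforce
    have P: "P \<subseteq> {1..n}" "finite B" "B \<subseteq> Jset n" using a ab JB by auto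
    have P': "P' \<subseteq> {1..n}" "finite B'" "B' \<subseteq> Jset n" using b bb JB by auto
    have e2: "p P \<otimes>\<^bsub>GG n\<^esub> Psi n B = p P' \<otimes>\<^bsub>GG n\<^esub> Psi n B'" using e ab bb by (simp add: F_def)
    have "gbold n (p P \<otimes>\<^bsub>GG n\<^esub> Psi n B) = P"
      using h.hom_mult[OF conjunct1[OF p[OF P(1)]] Psi_GG[OF P(2,3)]] p[OF P(1)] Psi_kernel[OF n P(2,3)] by simp
    moreover have "gbold n (p P' \<otimes>\<^bsub>GG n\<^esub> Psi n B') = P'"
      using h.hom_mult[OF conjunct1[OF p[OF P'(1)]] Psi_GG[OF P'(2,3)]] p[OF P'(1)] Psi_kernel[OF n P'(2,3)] by simp
    ultimately have PP: "P = P'" using e2 by simp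
    then have "Psi n B = Psi n B'"
      using e2 GG.l_cancel[of "p P" "Psi n B" "Psi n B'"] p[OF P(1)] Psi_GG[OF P(2,3)] Psi_GG[OF P'(2,3)] by simp
    then have "B = B'" using Psi_inj[OF P(3) P'(3)] Psi_inj[OF P'(3) P(3)] by (intro equalityI) simp_all
    then show "a = b" using ab bb PP by simp
  qed
  have "card (Pow {1..n} \<times> Pow (Jset n)) \<le> card (carrier (GG n))"
    by (rule card_inj_on_le[OF inj img finite_GG])
  moreover have "card (Pow {1..n} \<times> Pow (Jset n)) = 2 ^ n * 2 ^ card (Jset n)"
    by (simp add: card_cartesian_product card_Pow Jset_finite)
  moreover have "2 ^ bound_exp n = (2::nat) ^ n * 2 ^ card (Jset n)"
    unfolding bound_exp_eq[OF n, symmetric] by (rule power_add)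
  ultimately show ?thesis by simp
qed


locale invgrp = group G for G (structure) +
  fixes n :: nat and g :: "nat \<Rightarrow> 'a"
  assumes g_car: "\<And>i. i \<in> {1..n} \<Longrightarrow> g i \<in> carrier G"
    and g_sq: "\<And>i. i \<in> {1..n} \<Longrightarrow> g i \<otimes> g i = \<one>"
    and der2: "\<And>x. x \<in> derived G (carrier G) \<Longrightarrow> x \<otimes> x = \<one>"
begin

abbreviation "DD \<equiv> derived G (carrier G)"

lemma DD_sub: "subgroup DD G"
  by (rule derived_is_subgroup) simp

lemma DD_car: "x \<in> DD \<Longrightarrow> x \<in> carrier G"
  by (rule subgroup.mem_carrier[OF DD_sub])

lemma DD_comm: "x \<in> DD \<Longrightarrow> y \<in> DD \<Longrightarrow> x \<otimes> y = y \<otimes> x"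
  by (rule exp2_comm[OF DD_sub]) (use der2 in auto)

lemma DD_inv: "x \<in> DD \<Longrightarrow> inv x = x"
  by (rule inv_invol[OF DD_car der2])

lemma DD_mult: "x \<in> DD \<Longrightarrow> y \<in> DD \<Longrightarrow> x \<otimes> y \<in> DD"
  by (rule subgroup.m_closed[OF DD_sub])

lemma DD_one: "\<one> \<in> DD"
  by (rule subgroup.one_closed[OF DD_sub])

lemma DD_conj: "a \<in> carrier G \<Longrightarrow> d \<in> DD \<Longrightarrow> a \<otimes> d \<otimes> inv a \<in> DD"
  by (rule normal.inv_op_closed2[OF derived_self_is_normal])

lemma DD_comm_elem: "a \<in> carrier G \<Longrightarrow> b \<in> carrier G \<Longrightarrow> a \<otimes> b \<otimes> inv a \<otimes> inv b \<in> DD"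
  unfolding derived_def by (rule generate.incl) auto

definition invol :: "'a \<Rightarrow> bool" where
  "invol a \<longleftrightarrow> a \<in> carrier G \<and> a \<otimes> a = \<one>"

lemma invol_g: "i \<in> {1..n} \<Longrightarrow> invol (g i)"
  by (simp add: invol_def g_car g_sq)

lemma invol_car: "invol a \<Longrightarrow> a \<in> carrier G"
  by (simp add: invol_def)

lemma invol_inv: "invol a \<Longrightarrow> inv a = a"
  unfolding invol_def by (intro inv_invol) simp_all

lemma invol_cancel: "invol a \<Longrightarrow> x \<in> carrier G \<Longrightarrow> a \<otimes> (a \<otimes> x) = x"
  unfolding invol_def by (simp flip: m_assoc)

lemma invol_sq: "invol a \<Longrightarrow> a \<otimes> a = \<one>"
  by (simp add: invol_def)

lemma DD_invol: "d \<in> DD \<Longrightarrow> invol d"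
  by (simp add: invol_def DD_car der2)

lemma conj_DD: "invol a \<Longrightarrow> d \<in> DD \<Longrightarrow> a \<otimes> d \<otimes> a \<in> DD"
  using DD_conj[of a d] invol_car invol_inv by simp

lemma comm_DD: "invol a \<Longrightarrow> invol b \<Longrightarrow> a \<otimes> b \<otimes> a \<otimes> b \<in> DD"
  using DD_comm_elem[of a b] invol_car invol_inv by simp

lemma conj_comm:
  assumes a: "invol a" and b: "invol b" and d: "d \<in> DD"
  shows "a \<otimes> (b \<otimes> d \<otimes> b) \<otimes> a = b \<otimes> (a \<otimes> d \<otimes> a) \<otimes> b"
proof -
  have ac: "a \<in> carrier G" and bc: "b \<in> carrier G" and dc: "d \<in> carrier G"
    using a b d invol_car DD_car by auto
  define e where "e = a \<otimes> b \<otimes> a \<otimes> b"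
  define Y where "Y = b \<otimes> (a \<otimes> d \<otimes> a) \<otimes> b"
  have eD: "e \<in> DD" unfolding e_def by (rule comm_DD[OF a b])
  have YD: "Y \<in> DD" unfolding Y_def by (rule conj_DD[OF b conj_DD[OF a d]])
  have ec: "e \<in> carrier G" and Yc: "Y \<in> carrier G" using eD YD DD_car by auto
  have w: "e \<otimes> Y \<otimes> inv e = a \<otimes> (b \<otimes> d \<otimes> b) \<otimes> a"
    unfolding e_def Y_def
    using ac bc dc invol_cancel[OF a] invol_cancel[OF b] invol_inv[OF a] invol_inv[OF b]
    by (simp add: m_assoc inv_mult_group)
  have "e \<otimes> Y \<otimes> inv e = Y \<otimes> e \<otimes> inv e" using DD_comm[OF eD YD] by simp
  also have "\<dots> = Y" using ec Yc by (simp add: m_assoc)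
  finally show ?thesis using w Y_def by simp
qed

definition cj :: "'a \<Rightarrow> 'a \<Rightarrow> 'a" where "cj a d = a \<otimes> d \<otimes> a"
definition dl :: "'a \<Rightarrow> 'a \<Rightarrow> 'a" where "dl a d = d \<otimes> (a \<otimes> d \<otimes> a)"

lemma cj_DD: "invol a \<Longrightarrow> d \<in> DD \<Longrightarrow> cj a d \<in> DD"
  unfolding cj_def by (rule conj_DD)

lemma dl_DD: "invol a \<Longrightarrow> d \<in> DD \<Longrightarrow> dl a d \<in> DD"
  unfolding dl_def by (rule DD_mult) (auto intro: conj_DD)

lemma cj_mult: "invol a \<Longrightarrow> d \<in> DD \<Longrightarrow> e \<in> DD \<Longrightarrow> cj a (d \<otimes> e) = cj a d \<otimes> cj a e"
proof -
  assume a: "invol a" and d: "d \<in> DD" and e: "e \<in> DD"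
  have "a \<in> carrier G" "d \<in> carrier G" "e \<in> carrier G" using a d e invol_car DD_car by auto
  then show ?thesis unfolding cj_def using invol_cancel[OF a] by (simp add: m_assoc)
qed

lemma dl_mult: "invol a \<Longrightarrow> d \<in> DD \<Longrightarrow> e \<in> DD \<Longrightarrow> dl a (d \<otimes> e) = dl a d \<otimes> dl a e"
proof -
  assume a: "invol a" and d: "d \<in> DD" and e: "e \<in> DD"
  have dc: "d \<in> carrier G" and ec: "e \<in> carrier G" using d e DD_car by auto
  have cd: "cj a d \<in> DD" and ce: "cj a e \<in> DD" using cj_DD a d e by auto
  have "dl a (d \<otimes> e) = (d \<otimes> e) \<otimes> (cj a d \<otimes> cj a e)"
    using cj_mult[OF a d e] by (simp add: dl_def cj_def)
  also have "\<dots> = d \<otimes> (e \<otimes> cj a d) \<otimes> cj a e"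
    using dc ec cd ce DD_car by (simp add: m_assoc)
  also have "e \<otimes> cj a d = cj a d \<otimes> e" using DD_comm[OF e cd] .
  also have "d \<otimes> (cj a d \<otimes> e) \<otimes> cj a e = (d \<otimes> cj a d) \<otimes> (e \<otimes> cj a e)"
    using dc ec cd ce DD_car by (simp add: m_assoc)
  finally show ?thesis by (simp add: dl_def cj_def)
qed

lemma cj_cj: "invol a \<Longrightarrow> d \<in> DD \<Longrightarrow> cj a (cj a d) = d"
  unfolding cj_def using invol_cancel DD_car invol_car invol_sq by (simp add: m_assoc)

lemma cj_comm: "invol a \<Longrightarrow> invol b \<Longrightarrow> d \<in> DD \<Longrightarrow> cj a (cj b d) = cj b (cj a d)"
  unfolding cj_def by (rule conj_comm)

lemma dl_eq: "invol a \<Longrightarrow> d \<in> DD \<Longrightarrow> dl a d = d \<otimes> cj a d"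
  by (simp add: dl_def cj_def)

lemma cj_from_dl: "invol a \<Longrightarrow> d \<in> DD \<Longrightarrow> cj a d = d \<otimes> dl a d"
proof -
  assume a: "invol a" and d: "d \<in> DD"
  have dc: "d \<in> carrier G" and cc: "cj a d \<in> carrier G" using d cj_DD[OF a d] DD_car by auto
  show ?thesis unfolding dl_eq[OF a d] using dc cc der2[OF d] by (simp flip: m_assoc)
qed

lemma dl_dl: "invol a \<Longrightarrow> d \<in> DD \<Longrightarrow> dl a (dl a d) = \<one>"
proof -
  assume a: "invol a" and d: "d \<in> DD"
  have cd: "cj a d \<in> DD" using cj_DD[OF a d] .
  have "dl a (dl a d) = dl a d \<otimes> cj a (d \<otimes> cj a d)"
    using dl_eq[OF a dl_DD[OF a d]] dl_eq[OF a d] by simp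
  also have "cj a (d \<otimes> cj a d) = cj a d \<otimes> d" using cj_mult[OF a d cd] cj_cj[OF a d] by simp
  also have "\<dots> = d \<otimes> cj a d" using DD_comm[OF cd d] .
  also have "dl a d \<otimes> (d \<otimes> cj a d) = \<one>" using dl_eq[OF a d] der2[OF DD_mult[OF d cd]] by simp
  finally show ?thesis .
qed

lemma cj_dl_comm: "invol a \<Longrightarrow> invol b \<Longrightarrow> d \<in> DD \<Longrightarrow> cj a (dl b d) = dl b (cj a d)"
proof -
  assume a: "invol a" and b: "invol b" and d: "d \<in> DD"
  have "cj a (dl b d) = cj a d \<otimes> cj a (cj b d)"
    using dl_eq[OF b d] cj_mult[OF a d cj_DD[OF b d]] by simp
  also have "\<dots> = cj a d \<otimes> cj b (cj a d)" using cj_comm[OF a b d] by simp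
  also have "\<dots> = dl b (cj a d)" using dl_eq[OF b cj_DD[OF a d]] by simp
  finally show ?thesis .
qed

lemma dl_comm: "invol a \<Longrightarrow> invol b \<Longrightarrow> d \<in> DD \<Longrightarrow> dl a (dl b d) = dl b (dl a d)"
proof -
  assume a: "invol a" and b: "invol b" and d: "d \<in> DD"
  have bd: "dl b d \<in> DD" and ad: "dl a d \<in> DD" using dl_DD a b d by auto
  have "dl a (dl b d) = dl b d \<otimes> cj a (dl b d)" using dl_eq[OF a bd] .
  also have "\<dots> = dl b d \<otimes> dl b (cj a d)" using cj_dl_comm[OF a b d] by simp
  also have "\<dots> = dl b (d \<otimes> cj a d)" using dl_mult[OF b d cj_DD[OF a d]] by simp
  also have "\<dots> = dl b (dl a d)" using dl_eq[OF a d] by simp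
  finally show ?thesis .
qed

lemma dl_one: "invol a \<Longrightarrow> dl a \<one> = \<one>"
  unfolding dl_def using invol_sq invol_car by simp


lemma DG_comm: "comm_group (G\<lparr>carrier := DD\<rparr>)"
proof -
  interpret DG: group "G\<lparr>carrier := DD\<rparr>" by (rule subgroup_imp_group[OF DD_sub])
  show ?thesis by (rule DG.group_comm_groupI) (simp add: DD_comm)
qed

lemma jacobi:
  assumes a: "invol a" and b: "invol b" and c: "invol c"
  shows "dl a (b \<otimes> c \<otimes> b \<otimes> c) = dl b (a \<otimes> c \<otimes> a \<otimes> c) \<otimes> dl c (a \<otimes> b \<otimes> a \<otimes> b)"
proof -
  interpret DG: comm_group "G\<lparr>carrier := DD\<rparr>" by (rule DG_comm)
  have ac: "a \<in> carrier G" and bc: "b \<in> carrier G" and cc: "c \<in> carrier G" using a b c invol_car by auto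
  note canc = invol_cancel[OF a] invol_cancel[OF b] invol_cancel[OF c]
  note invs = invol_inv[OF a] invol_inv[OF b] invol_inv[OF c]
  define p where "p = a \<otimes> b \<otimes> a \<otimes> b"
  define r where "r = a \<otimes> c \<otimes> a \<otimes> c"
  define q where "q = b \<otimes> c \<otimes> b \<otimes> c"
  have pD: "p \<in> DD" unfolding p_def by (rule comm_DD[OF a b])
  have rD: "r \<in> DD" unfolding r_def by (rule comm_DD[OF a c])
  have qD: "q \<in> DD" unfolding q_def by (rule comm_DD[OF b c])
  have pc: "p \<in> carrier G" and rc: "r \<in> carrier G" and qc: "q \<in> carrier G" using pD rD qD DD_car by auto
  have W1: "a \<otimes> b \<otimes> c \<otimes> a \<otimes> c \<otimes> b = p \<otimes> cj b r"
    unfolding p_def r_def cj_def using ac bc cc canc by (simp add: m_assoc)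
  have W2: "a \<otimes> c \<otimes> b \<otimes> a \<otimes> b \<otimes> c = r \<otimes> cj c p"
    unfolding p_def r_def cj_def using ac bc cc canc by (simp add: m_assoc)
  have W3: "a \<otimes> c \<otimes> b \<otimes> a \<otimes> b \<otimes> c = (a \<otimes> b \<otimes> c \<otimes> a \<otimes> c \<otimes> b) \<otimes>
      (b \<otimes> c \<otimes> (a \<otimes> (c \<otimes> b \<otimes> c \<otimes> b) \<otimes> a \<otimes> inv (c \<otimes> b \<otimes> c \<otimes> b)) \<otimes> c \<otimes> b)"
    using ac bc cc canc invs invol_sq[OF a] invol_sq[OF b] invol_sq[OF c] by (simp add: m_assoc inv_mult_group)
  have q': "c \<otimes> b \<otimes> c \<otimes> b = q"
  proof -
    have "c \<otimes> b \<otimes> c \<otimes> b = inv q" unfolding q_def using ac bc cc invs by (simp add: m_assoc inv_mult_group)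
    then show ?thesis using DD_inv[OF qD] by simp
  qed
  define XX where "XX = a \<otimes> q \<otimes> a \<otimes> q"
  have XD: "XX \<in> DD" unfolding XX_def using DD_mult[OF conj_DD[OF a qD] qD] by simp
  have Xc: "XX \<in> carrier G" using XD DD_car by auto
  have cjq_c: "cj c q = q" unfolding cj_def q_def using ac bc cc canc invol_sq[OF b] invol_sq[OF c] q'[unfolded q_def] by (simp add: m_assoc)
  have cjq_b: "cj b q = q" unfolding cj_def q_def using ac bc cc canc invol_sq[OF b] invol_sq[OF c] q'[unfolded q_def] by (simp add: m_assoc)
  have XX2: "XX = cj a q \<otimes> q" unfolding XX_def cj_def using ac qc by (simp add: m_assoc)
  have cX_c: "cj c XX = XX"
    unfolding XX2 using cj_mult[OF c cj_DD[OF a qD] qD] cj_comm[OF c a qD] cjq_c by simp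
  have cX_b: "cj b XX = XX"
    unfolding XX2 using cj_mult[OF b cj_DD[OF a qD] qD] cj_comm[OF b a qD] cjq_b by simp
  have bcX: "b \<otimes> c \<otimes> XX \<otimes> c \<otimes> b = XX"
  proof -
    have "b \<otimes> c \<otimes> XX \<otimes> c \<otimes> b = cj b (cj c XX)" unfolding cj_def using bc cc Xc by (simp add: m_assoc)
    then show ?thesis using cX_b cX_c by simp
  qed
  have inner: "a \<otimes> (c \<otimes> b \<otimes> c \<otimes> b) \<otimes> a \<otimes> inv (c \<otimes> b \<otimes> c \<otimes> b) = XX"
    unfolding q' XX_def using DD_inv[OF qD] by simp
  have W3': "a \<otimes> c \<otimes> b \<otimes> a \<otimes> b \<otimes> c = (a \<otimes> b \<otimes> c \<otimes> a \<otimes> c \<otimes> b) \<otimes> XX"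
  proof -
    have "b \<otimes> c \<otimes> (a \<otimes> (c \<otimes> b \<otimes> c \<otimes> b) \<otimes> a \<otimes> inv (c \<otimes> b \<otimes> c \<otimes> b)) \<otimes> c \<otimes> b = XX"
      unfolding inner using bcX .
    then show ?thesis using W3 by simp
  qed
  have main: "r \<otimes> cj c p = p \<otimes> cj b r \<otimes> XX" using W1 W2 W3' by simp
  have cbr: "cj b r \<in> DD" and ccp: "cj c p \<in> DD" and caq: "cj a q \<in> DD"
    using cj_DD b c a rD pD qD by auto
  have sq: "\<And>x. x \<in> DD \<Longrightarrow> x \<otimes> x = \<one>" by (rule der2)
  have XX3: "XX = (p \<otimes> cj b r) \<otimes> (r \<otimes> cj c p)"
  proof -
    have pr: "p \<otimes> cj b r \<in> DD" using DD_mult pD cbr by blast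
    have "(p \<otimes> cj b r) \<otimes> (r \<otimes> cj c p) = (p \<otimes> cj b r) \<otimes> (p \<otimes> cj b r \<otimes> XX)" using main by simp
    also have "\<dots> = ((p \<otimes> cj b r) \<otimes> (p \<otimes> cj b r)) \<otimes> XX"
      using pr XD DD_car by (simp add: m_assoc)
    also have "\<dots> = XX" using sq[OF pr] Xc by simp
    finally show ?thesis by simp
  qed
  have lhs: "dl a q = XX" unfolding dl_eq[OF a qD] XX2 using DD_comm[OF qD caq] .
  have rhs: "dl b r \<otimes> dl c p = XX"
  proof -
    have c1: "\<And>x y z. x \<in> DD \<Longrightarrow> y \<in> DD \<Longrightarrow> z \<in> carrier G \<Longrightarrow> x \<otimes> (y \<otimes> z) = y \<otimes> (x \<otimes> z)"
      by (metis DD_car DD_comm m_assoc)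
    have e1: "r \<otimes> cj b r \<otimes> (p \<otimes> cj c p) = r \<otimes> (cj b r \<otimes> (p \<otimes> cj c p))"
      using pD rD cbr ccp DD_car by (simp add: m_assoc)
    also have "\<dots> = cj b r \<otimes> (r \<otimes> (p \<otimes> cj c p))"
      by (rule c1) (use pD rD cbr ccp DD_car in auto)
    also have "r \<otimes> (p \<otimes> cj c p) = p \<otimes> (r \<otimes> cj c p)"
      by (rule c1) (use pD rD cbr ccp DD_car in auto)
    also have "cj b r \<otimes> (p \<otimes> (r \<otimes> cj c p)) = p \<otimes> (cj b r \<otimes> (r \<otimes> cj c p))"
      by (rule c1) (use pD rD cbr ccp DD_car in auto)
    also have "\<dots> = p \<otimes> cj b r \<otimes> (r \<otimes> cj c p)"
      using pD rD cbr ccp DD_car by (simp add: m_assoc)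
    finally show ?thesis unfolding dl_eq[OF b rD] dl_eq[OF c pD] XX3 .
  qed
  show ?thesis using lhs rhs unfolding p_def q_def r_def by simp
qed

definition cm :: "nat \<Rightarrow> nat \<Rightarrow> 'a" where "cm i j = g i \<otimes> g j \<otimes> g i \<otimes> g j"

lemma cm_DD: "i \<in> {1..n} \<Longrightarrow> j \<in> {1..n} \<Longrightarrow> cm i j \<in> DD"
  unfolding cm_def by (rule comm_DD) (simp_all add: invol_g)

lemma cm_sym: "i \<in> {1..n} \<Longrightarrow> j \<in> {1..n} \<Longrightarrow> cm j i = cm i j"
proof -
  assume i: "i \<in> {1..n}" and j: "j \<in> {1..n}"
  have "inv (cm i j) = cm j i" unfolding cm_def
    using g_car[OF i] g_car[OF j] invol_inv[OF invol_g[OF i]] invol_inv[OF invol_g[OF j]]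
    by (simp add: m_assoc inv_mult_group)
  then show ?thesis using DD_inv[OF cm_DD[OF i j]] by simp
qed

lemma dl_cm_self: "i \<in> {1..n} \<Longrightarrow> j \<in> {1..n} \<Longrightarrow> dl (g i) (cm i j) = \<one>"
proof -
  assume i: "i \<in> {1..n}" and j: "j \<in> {1..n}"
  have "cj (g i) (cm i j) = cm j i" unfolding cj_def cm_def
    using g_car[OF i] g_car[OF j] invol_cancel[OF invol_g[OF i]] by (simp add: m_assoc)
  then have "cj (g i) (cm i j) = cm i j" using cm_sym[OF i j] by simp
  then show ?thesis using dl_eq[OF invol_g[OF i] cm_DD[OF i j]] der2[OF cm_DD[OF i j]] by simp
qed

lemma jacobi_cm:
  assumes "i \<in> {1..n}" "m \<in> {1..n}" "j \<in> {1..n}"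
  shows "dl (g i) (cm m j) = dl (g m) (cm i j) \<otimes> dl (g j) (cm i m)"
  unfolding cm_def using jacobi[OF invol_g invol_g invol_g] assms by blast

definition dlT :: "nat set \<Rightarrow> 'a \<Rightarrow> 'a" where
  "dlT T d = foldr (\<lambda>t x. dl (g t) x) (sorted_list_of_set T) d"

abbreviation "FL xs d \<equiv> foldr (\<lambda>t x. dl (g t) x) xs d"

lemma FL_DD: "set xs \<subseteq> {1..n} \<Longrightarrow> d \<in> DD \<Longrightarrow> FL xs d \<in> DD"
  by (induction xs) (simp_all add: dl_DD[OF invol_g])

lemma FL_insort: "set xs \<subseteq> {1..n} \<Longrightarrow> t \<in> {1..n} \<Longrightarrow> d \<in> DD \<Longrightarrow> FL (insort t xs) d = dl (g t) (FL xs d)"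
proof (induction xs)
  case Nil
  then show ?case by simp
next
  case (Cons x xs)
  show ?case
  proof (cases "t \<le> x")
    case True then show ?thesis by simp
  next
    case False
    have x: "x \<in> {1..n}" and xs: "set xs \<subseteq> {1..n}" using Cons by auto
    have "FL (insort t (x # xs)) d = dl (g x) (FL (insort t xs) d)" using False by simp
    also have "\<dots> = dl (g x) (dl (g t) (FL xs d))" using Cons xs by simp
    also have "\<dots> = dl (g t) (dl (g x) (FL xs d))"
      by (rule dl_comm) (use x Cons xs in \<open>auto intro: invol_g FL_DD\<close>)
    finally show ?thesis by simp
  qed
qed

lemma dlT_empty [simp]: "dlT {} d = d"
  by (simp add: dlT_def)

lemma sl_sub: "T \<subseteq> {1..n} \<Longrightarrow> set (sorted_list_of_set T) \<subseteq> {1..n}"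
proof -
  assume T: "T \<subseteq> {1..n}"
  then have "finite T" using finite_subset by auto
  then show ?thesis using T by simp
qed

lemma dlT_DD: "T \<subseteq> {1..n} \<Longrightarrow> d \<in> DD \<Longrightarrow> dlT T d \<in> DD"
  unfolding dlT_def by (rule FL_DD[OF sl_sub])

lemma dlT_insert:
  assumes T: "T \<subseteq> {1..n}" and t: "t \<in> {1..n}" and tT: "t \<notin> T" and d: "d \<in> DD"
  shows "dlT (insert t T) d = dl (g t) (dlT T d)"
proof -
  have f: "finite T" using T finite_subset by auto
  have "sorted_list_of_set (insert t T) = insort t (sorted_list_of_set T)"
    using f tT by (simp add: sorted_list_of_set_insert)
  then show ?thesis unfolding dlT_def using FL_insort[OF sl_sub[OF T] t d] by simp
qed

lemma FL_mult: "set xs \<subseteq> {1..n} \<Longrightarrow> d \<in> DD \<Longrightarrow> e \<in> DD \<Longrightarrow> FL xs (d \<otimes> e) = FL xs d \<otimes> FL xs e"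
  by (induction xs) (auto simp: dl_mult[OF invol_g] FL_DD)

lemma dlT_mult: "T \<subseteq> {1..n} \<Longrightarrow> d \<in> DD \<Longrightarrow> e \<in> DD \<Longrightarrow> dlT T (d \<otimes> e) = dlT T d \<otimes> dlT T e"
  unfolding dlT_def by (rule FL_mult[OF sl_sub])

lemma FL_one: "set xs \<subseteq> {1..n} \<Longrightarrow> FL xs \<one> = \<one>"
  by (induction xs) (auto simp: dl_one[OF invol_g])

lemma dlT_one: "T \<subseteq> {1..n} \<Longrightarrow> dlT T \<one> = \<one>"
  unfolding dlT_def by (rule FL_one[OF sl_sub])

lemma FL_comm: "set xs \<subseteq> {1..n} \<Longrightarrow> i \<in> {1..n} \<Longrightarrow> d \<in> DD \<Longrightarrow> dl (g i) (FL xs d) = FL xs (dl (g i) d)"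
proof (induction xs)
  case Nil then show ?case by simp
next
  case (Cons x xs)
  have x: "x \<in> {1..n}" and xs: "set xs \<subseteq> {1..n}" using Cons by auto
  have "dl (g i) (FL (x # xs) d) = dl (g i) (dl (g x) (FL xs d))" by simp
  also have "\<dots> = dl (g x) (dl (g i) (FL xs d))"
    by (rule dl_comm) (use x Cons xs in \<open>auto intro: invol_g FL_DD\<close>)
  also have "\<dots> = dl (g x) (FL xs (dl (g i) d))" using Cons xs by simp
  finally show ?case by simp
qed

lemma dlT_comm: "T \<subseteq> {1..n} \<Longrightarrow> i \<in> {1..n} \<Longrightarrow> d \<in> DD \<Longrightarrow> dl (g i) (dlT T d) = dlT T (dl (g i) d)"
  unfolding dlT_def by (rule FL_comm[OF sl_sub])

lemma dlT_kill:
  assumes T: "T \<subseteq> {1..n}" and i: "i \<in> T" and d: "d \<in> DD"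
  shows "dl (g i) (dlT T d) = \<one>"
proof -
  have T': "T - {i} \<subseteq> {1..n}" using T by auto
  have i': "i \<in> {1..n}" using T i by auto
  have "T = insert i (T - {i})" using i by auto
  then have "dlT T d = dl (g i) (dlT (T - {i}) d)" using dlT_insert[OF T' i' _ d] by (metis Diff_iff insertI1)
  then show ?thesis using dl_dl[OF invol_g[OF i'] dlT_DD[OF T' d]] by simp
qed

end


context invgrp
begin

definition kel :: "nat set \<times> nat \<Rightarrow> 'a" where
  "kel x = dlT (fst x - {Min (fst x), snd x}) (cm (Min (fst x)) (snd x))"

abbreviation "KS \<equiv> kel ` Jset n"
abbreviation "MM \<equiv> generate G KS"

lemma Jset_props:
  assumes "(S, j) \<in> Jset n"
  shows "S \<subseteq> {1..n}" "j \<in> S" "j \<noteq> Min S" "Min S \<in> S" "finite S" "j \<in> {1..n}" "Min S \<in> {1..n}"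
proof -
  show S: "S \<subseteq> {1..n}" "j \<in> S" "j \<noteq> Min S" using assms by (auto simp: Jset_def)
  show f: "finite S" using S finite_subset by auto
  show m: "Min S \<in> S" using f S(2) by (metis Min_in empty_iff)
  show "j \<in> {1..n}" "Min S \<in> {1..n}" using S m by auto
qed

lemma kel_DD: "x \<in> Jset n \<Longrightarrow> kel x \<in> DD"
proof -
  assume x: "x \<in> Jset n"
  obtain S j where xs: "x = (S, j)" by fastforce
  note P = Jset_props[OF x[unfolded xs]]
  show ?thesis unfolding xs kel_def fst_conv snd_conv
    by (rule dlT_DD) (use P cm_DD in auto)
qed

lemma KS_sub: "KS \<subseteq> DD"
  using kel_DD by blast

lemma KS_car: "KS \<subseteq> carrier G"
  using KS_sub DD_car by blast

lemma MM_card: "finite MM \<and> card MM \<le> 2 ^ card (Jset n)"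
proof -
  have fin: "finite KS" using Jset_finite by simp
  have com: "\<forall>x\<in>KS. \<forall>y\<in>KS. x \<otimes> y = y \<otimes> x"
  proof (intro ballI)
    fix x y assume "x \<in> KS" "y \<in> KS"
    then show "x \<otimes> y = y \<otimes> x" using KS_sub DD_comm by (meson subsetD)
  qed
  have sq: "\<forall>x\<in>KS. x \<otimes> x = \<one>"
  proof
    fix x assume "x \<in> KS" then show "x \<otimes> x = \<one>" using KS_sub der2 by (meson subsetD)
  qed
  have "finite MM \<and> card MM \<le> 2 ^ card KS" by (rule commuting_invols_card[OF fin KS_car com sq])
  moreover have "card KS \<le> card (Jset n)" by (rule card_image_le[OF Jset_finite])
  moreover have "(2::nat) ^ card KS \<le> 2 ^ card (Jset n)" using calculation(2) by (rule power_increasing) simp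
  ultimately show ?thesis by linarith
qed

lemma MM_incl: "x \<in> Jset n \<Longrightarrow> kel x \<in> MM"
  by (rule generate.incl) (rule imageI)

lemma MM_mult: "x \<in> MM \<Longrightarrow> y \<in> MM \<Longrightarrow> x \<otimes> y \<in> MM"
  by (rule generate.eng)

lemma MM_one: "\<one> \<in> MM"
  by (rule generate.one)

lemma kel_eq: "(S, j) \<in> Jset n \<Longrightarrow> kel (S, j) = dlT (S - {Min S, j}) (cm (Min S) j)"
  by (simp add: kel_def)

lemma dl_kel_MM:
  assumes x: "x \<in> Jset n" and i: "i \<in> {1..n}"
  shows "dl (g i) (kel x) \<in> MM"
proof -
  obtain S j where xs: "x = (S, j)" by fastforce
  note P = Jset_props[OF x[unfolded xs]]
  define m where "m = Min S"
  define T where "T = S - {m, j}"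
  have T: "T \<subseteq> {1..n}" using P by (auto simp: T_def)
  have m: "m \<in> {1..n}" "m \<in> S" using P m_def by auto
  have j: "j \<in> {1..n}" "j \<in> S" "j \<noteq> m" using P m_def by auto
  have cmD: "cm m j \<in> DD" using cm_DD m j by auto
  have k: "kel x = dlT T (cm m j)" unfolding xs kel_def T_def m_def by simp
  show ?thesis
  proof (cases "i \<in> T")
    case True
    then show ?thesis unfolding k using dlT_kill[OF T True cmD] MM_one by simp
  next
    case notT: False
    show ?thesis
    proof (cases "i = m \<or> i = j")
      case True
      have "dl (g i) (cm m j) = \<one>"
      proof (cases "i = m")
        case True then show ?thesis using dl_cm_self m j by simp
      next
        case False
        then have "i = j" using \<open>i = m \<or> i = j\<close> by simp
        then show ?thesis using dl_cm_self[OF j(1) m(1)] cm_sym[OF m(1) j(1)] by simp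
      qed
      then show ?thesis unfolding k using dlT_comm[OF T i cmD] dlT_one[OF T] MM_one by simp
    next
      case False
      then have iS: "i \<notin> S" using notT by (auto simp: T_def)
      have fS: "finite S" using P by simp
      show ?thesis
      proof (cases "m < i")
        case True
        have "Min (insert i S) = min i (Min S)" by (rule Min_insert[OF fS]) (use m(2) in auto)
        then have mn: "Min (insert i S) = m" using True unfolding m_def[symmetric] by simp
        have xJ: "(insert i S, j) \<in> Jset n" using P i j mn by (auto simp: Jset_def)
        have "insert i S - {m, j} = insert i T" using False by (auto simp: T_def)
        then have "kel (insert i S, j) = dlT (insert i T) (cm m j)" using mn by (simp add: kel_def)
        also have "\<dots> = dl (g i) (dlT T (cm m j))"
          by (rule dlT_insert[OF T i _ cmD]) (use iS in \<open>auto simp: T_def\<close>)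
        finally show ?thesis unfolding k using MM_incl[OF xJ] by simp
      next
        case False
        then have im: "i < m" using \<open>\<not> (i = m \<or> i = j)\<close> by simp
        have "Min (insert i S) = min i (Min S)" by (rule Min_insert[OF fS]) (use m(2) in auto)
        then have mn: "Min (insert i S) = i" using im unfolding m_def[symmetric] by simp
        have x1: "(insert i S, j) \<in> Jset n" using P i j mn im iS by (auto simp: Jset_def)
        have x2: "(insert i S, m) \<in> Jset n" using P i m mn im iS by (auto simp: Jset_def)
        have e1: "insert i S - {i, j} = insert m T" using iS m j im by (auto simp: T_def)
        have e2: "insert i S - {i, m} = insert j T" using iS m j im by (auto simp: T_def)
        have mT: "m \<notin> T" and jT: "j \<notin> T" by (auto simp: T_def)
        have ciD: "cm i j \<in> DD" "cm i m \<in> DD" using cm_DD i j m by auto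
        have k1: "kel (insert i S, j) = dl (g m) (dlT T (cm i j))"
          unfolding kel_eq[OF x1] mn e1 by (rule dlT_insert[OF T m(1) mT ciD(1)])
        have k2: "kel (insert i S, m) = dl (g j) (dlT T (cm i m))"
          unfolding kel_eq[OF x2] mn e2 by (rule dlT_insert[OF T j(1) jT ciD(2)])
        have "dl (g i) (kel x) = dlT T (dl (g i) (cm m j))"
          unfolding k by (rule dlT_comm[OF T i cmD])
        also have "\<dots> = dlT T (dl (g m) (cm i j) \<otimes> dl (g j) (cm i m))"
          using jacobi_cm[OF i m(1) j(1)] by simp
        also have "\<dots> = dlT T (dl (g m) (cm i j)) \<otimes> dlT T (dl (g j) (cm i m))"
          by (rule dlT_mult[OF T]) (use dl_DD invol_g m j ciD in auto)
        also have "\<dots> = kel (insert i S, j) \<otimes> kel (insert i S, m)"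
          unfolding k1 k2 using dlT_comm[OF T m(1) ciD(1)] dlT_comm[OF T j(1) ciD(2)] by simp
        finally show ?thesis using MM_mult[OF MM_incl[OF x1] MM_incl[OF x2]] by simp
      qed
    qed
  qed
qed

lemma cj_kel_MM:
  assumes x: "x \<in> Jset n" and i: "i \<in> {1..n}"
  shows "g i \<otimes> kel x \<otimes> g i \<in> MM"
proof -
  have "g i \<otimes> kel x \<otimes> g i = kel x \<otimes> dl (g i) (kel x)"
    using cj_from_dl[OF invol_g[OF i] kel_DD[OF x]] by (simp add: cj_def)
  then show ?thesis using MM_mult[OF MM_incl[OF x] dl_kel_MM[OF x i]] by simp
qed

lemma cm_MM:
  assumes i: "i \<in> {1..n}" and j: "j \<in> {1..n}" and ij: "i \<noteq> j"
  shows "cm i j \<in> MM"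
proof (cases "i < j")
  case True
  have x: "({i, j}, j) \<in> Jset n" using i j True by (auto simp: Jset_def)
  have "kel ({i, j}, j) = cm i j" using True by (simp add: kel_def)
  then show ?thesis using MM_incl[OF x] by simp
next
  case False
  then have ji: "j < i" using ij by simp
  have x: "({i, j}, i) \<in> Jset n" using i j ji by (auto simp: Jset_def)
  have "Min {i, j} = j" using ji by simp
  then have "kel ({i, j}, i) = cm j i" by (simp add: kel_def)
  then show ?thesis using MM_incl[OF x] cm_sym[OF i j] by simp
qed

abbreviation "AA r \<equiv> KS \<union> g ` {1..r}"

lemma chain:
  shows "r \<le> n \<Longrightarrow> finite (generate G (AA r)) \<and> card (generate G (AA r)) \<le> 2 ^ r * 2 ^ card (Jset n)"
proof (induction r)
  case 0
  then show ?case using MM_card by simp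
next
  case (Suc r)
  have r: "r \<le> n" using Suc by simp
  have IH: "finite (generate G (AA r)) \<and> card (generate G (AA r)) \<le> 2 ^ r * 2 ^ card (Jset n)"
    using Suc.IH[OF r] .
  have a: "Suc r \<in> {1..n}" using Suc by simp
  have Ar: "AA r \<subseteq> carrier G" using KS_car g_car r by auto
  have "{1..Suc r} = insert (Suc r) {1..r}" by auto
  then have e: "AA (Suc r) = insert (g (Suc r)) (AA r)" by auto
  have MMsub: "MM \<subseteq> generate G (AA r)" by (rule mono_generate) blast
  have cj: "\<forall>x\<in>AA r. g (Suc r) \<otimes> x \<otimes> g (Suc r) \<in> generate G (AA r)"
  proof
    fix x assume x: "x \<in> AA r"
    show "g (Suc r) \<otimes> x \<otimes> g (Suc r) \<in> generate G (AA r)"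
    proof (cases "x \<in> KS")
      case True
      then obtain y where y: "y \<in> Jset n" "x = kel y" by blast
      then show ?thesis using cj_kel_MM[OF y(1) a] MMsub by auto
    next
      case False
      then obtain l where l: "l \<in> {1..r}" "x = g l" using x by blast
      have l': "l \<in> {1..n}" "l \<noteq> Suc r" using l r by auto
      have "g (Suc r) \<otimes> g l \<otimes> g (Suc r) = g l \<otimes> cm l (Suc r)"
        unfolding cm_def using g_car[OF a] g_car[OF l'(1)] invol_cancel[OF invol_g[OF l'(1)]]
        by (simp add: m_assoc)
      moreover have "g l \<in> generate G (AA r)" using l by (auto intro: generate.incl)
      moreover have "cm l (Suc r) \<in> generate G (AA r)" using cm_MM[OF l'(1) a l'(2)] MMsub by auto
      ultimately show ?thesis using l generate.eng by metis
    qed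
  qed
  have "finite (generate G (insert (g (Suc r)) (AA r))) \<and>
      card (generate G (insert (g (Suc r)) (AA r))) \<le> 2 * card (generate G (AA r))"
    by (rule ins_gen_card[OF Ar g_car[OF a] g_sq[OF a] cj]) (use IH in simp)
  then show ?case unfolding e using IH by simp
qed

theorem card_bound:
  assumes n: "n \<ge> 1" and gen: "carrier G \<subseteq> generate G (g ` {1..n})"
  shows "finite (carrier G) \<and> card (carrier G) \<le> 2 ^ bound_exp n"
proof -
  have c: "finite (generate G (AA n)) \<and> card (generate G (AA n)) \<le> 2 ^ n * 2 ^ card (Jset n)"
    using chain by simp
  have "generate G (g ` {1..n}) \<subseteq> generate G (AA n)" by (rule mono_generate) blast
  then have sub: "carrier G \<subseteq> generate G (AA n)" using gen by blast
  then have f: "finite (carrier G)" using c finite_subset by blast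
  have "card (carrier G) \<le> card (generate G (AA n))" using card_mono c sub by blast
  also have "\<dots> \<le> 2 ^ n * 2 ^ card (Jset n)" using c by simp
  also have "\<dots> = 2 ^ bound_exp n" using bound_exp_eq[OF n] by (simp add: power_add[symmetric])
  finally show ?thesis using f by simp
qed

end


section \<open>Reduced words\<close>

definition flip :: "bool \<times> nat \<Rightarrow> bool \<times> nat" where "flip l = (\<not> fst l, snd l)"

lemma cancels_iff: "cancels l m \<longleftrightarrow> m = flip l"
  by (cases l; cases m) (auto simp: cancels_def flip_def)

lemma cancels_flip [simp]: "cancels l (flip l)" "cancels (flip l) l"
  by (auto simp: cancels_def flip_def)

lemma flip_flip [simp]: "flip (flip l) = l"
  by (simp add: flip_def)

lemma snd_flip [simp]: "snd (flip l) = snd l"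
  by (simp add: flip_def)

lemma reduced_Cons: "reduced (l # ws) \<longleftrightarrow> reduced ws \<and> (ws = [] \<or> \<not> cancels l (hd ws))"
  by (cases ws) auto

lemma reduced_tl: "reduced (l # ws) \<Longrightarrow> reduced ws"
  by (simp add: reduced_Cons)

lemma cons_red_reduced: "reduced w \<Longrightarrow> reduced (cons_red l w)"
  by (cases w) (auto simp: reduced_Cons)

lemma cons_red_noncancel: "reduced (l # w) \<Longrightarrow> cons_red l w = l # w"
  by (cases w) (auto simp: reduced_Cons)

lemma cons_red_cancel: "reduced w \<Longrightarrow> cancels l m \<Longrightarrow> cons_red l (cons_red m w) = w"
proof (cases w)
  case Nil
  assume "cancels l m"
  then show ?thesis using Nil by (simp add: cancels_def)
next
  case (Cons y ys)
  assume r: "reduced w" and c: "cancels l m"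
  show ?thesis
  proof (cases "cancels m y")
    case True
    then have "y = l" using c by (auto simp: cancels_iff flip_def prod_eq_iff)
    have "cons_red m w = ys" using Cons True by simp
    moreover have "cons_red l ys = l # ys"
      using r Cons \<open>y = l\<close> by (simp add: cons_red_noncancel)
    ultimately show ?thesis using Cons \<open>y = l\<close> by simp
  next
    case False
    then show ?thesis using Cons c by simp
  qed
qed

lemma cons_red_letters: "snd ` set (cons_red l w) \<subseteq> insert (snd l) (snd ` set w)"
  by (cases w) auto

abbreviation wmul :: "(bool \<times> nat) list \<Rightarrow> (bool \<times> nat) list \<Rightarrow> (bool \<times> nat) list" where
  "wmul v w \<equiv> foldr cons_red v w"

lemma wmul_reduced: "reduced w \<Longrightarrow> reduced (wmul v w)"
  by (induction v) (auto simp: cons_red_reduced)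

lemma wmul_letters: "snd ` set (wmul v w) \<subseteq> snd ` set v \<union> snd ` set w"
proof (induction v)
  case Nil then show ?case by simp
next
  case (Cons l v)
  have e: "wmul (l # v) w = cons_red l (wmul v w)" by simp
  have s: "snd ` set v \<union> snd ` set w \<subseteq> snd ` set (l # v) \<union> snd ` set w" by auto
  show ?case unfolding e
  proof (rule subset_trans[OF cons_red_letters], rule insert_subsetI)
    show "snd l \<in> snd ` set (l # v) \<union> snd ` set w" by simp
    show "snd ` set (wmul v w) \<subseteq> snd ` set (l # v) \<union> snd ` set w"
      using subset_trans[OF Cons.IH s] .
  qed
qed

lemma wmul_cons_red: "reduced v \<Longrightarrow> reduced w \<Longrightarrow> wmul (cons_red l v) w = cons_red l (wmul v w)"
proof (cases v)
  case Nil then show ?thesis by simp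
next
  case (Cons m ms)
  assume rv: "reduced v" and rw: "reduced w"
  show ?thesis
  proof (cases "cancels l m")
    case True
    have "reduced ms" using rv Cons reduced_tl by blast
    then have "reduced (wmul ms w)" using rw wmul_reduced by blast
    then show ?thesis using True Cons cons_red_cancel by simp
  next
    case False
    then show ?thesis using Cons by simp
  qed
qed

lemma wmul_assoc: "reduced u \<Longrightarrow> reduced v \<Longrightarrow> reduced w \<Longrightarrow> wmul (wmul u v) w = wmul u (wmul v w)"
proof (induction u)
  case Nil then show ?case by simp
next
  case (Cons l us)
  have rus: "reduced us" using Cons reduced_tl by blast
  have "wmul (wmul (l # us) v) w = wmul (cons_red l (wmul us v)) w" by simp
  also have "\<dots> = cons_red l (wmul (wmul us v) w)"
    by (rule wmul_cons_red) (use Cons rus wmul_reduced in auto)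
  also have "\<dots> = cons_red l (wmul us (wmul v w))" using Cons rus by simp
  finally show ?case by simp
qed

lemma wmul_Nil: "reduced v \<Longrightarrow> wmul v [] = v"
proof (induction v)
  case Nil then show ?case by simp
next
  case (Cons l vs)
  then have "wmul vs [] = vs" using reduced_tl by blast
  then show ?case using Cons cons_red_noncancel by simp
qed

lemma wmul_append: "wmul (xs @ ys) w = wmul xs (wmul ys w)"
  by simp

definition winv :: "(bool \<times> nat) list \<Rightarrow> (bool \<times> nat) list" where
  "winv w = rev (map flip w)"

lemma reduced_snoc: "reduced (xs @ [x]) \<longleftrightarrow> reduced xs \<and> (xs = [] \<or> \<not> cancels (last xs) x)"
proof (induction xs)
  case Nil then show ?case by simp
next
  case (Cons y ys)
  show ?case
  proof (cases ys)
    case Nil then show ?thesis by simp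
  next
    case (Cons z zs)
    then show ?thesis using Cons.IH by (auto simp: reduced_Cons)
  qed
qed

lemma cancels_flip_iff: "cancels (flip a) (flip b) \<longleftrightarrow> cancels b a"
  by (auto simp: cancels_def flip_def)

lemma winv_reduced: "reduced w \<Longrightarrow> reduced (winv w)"
proof (induction w)
  case Nil then show ?case by (simp add: winv_def)
next
  case (Cons l ws)
  have rws: "reduced ws" using Cons reduced_tl by blast
  have "winv (l # ws) = winv ws @ [flip l]" by (simp add: winv_def)
  moreover have "winv ws = [] \<or> \<not> cancels (last (winv ws)) (flip l)"
  proof (cases ws)
    case Nil then show ?thesis by (simp add: winv_def)
  next
    case (Cons m ms)
    have "last (winv ws) = flip m" using Cons by (simp add: winv_def)
    moreover have "\<not> cancels l m" using \<open>reduced (l # ws)\<close> Cons by simp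
    ultimately show ?thesis using cancels_flip_iff by simp
  qed
  ultimately show ?case using Cons.IH[OF rws] by (simp add: reduced_snoc)
qed

lemma winv_letters: "snd ` set (winv w) = snd ` set w"
  by (simp add: winv_def image_image)

lemma winv_mul: "reduced w \<Longrightarrow> wmul (winv w) w = []"
proof (induction w)
  case Nil then show ?case by (simp add: winv_def)
next
  case (Cons l ws)
  have rws: "reduced ws" using Cons reduced_tl by blast
  have "wmul (winv (l # ws)) (l # ws) = wmul (winv ws) (cons_red (flip l) (l # ws))"
    by (simp add: winv_def)
  also have "cons_red (flip l) (l # ws) = ws" by simp
  finally show ?case using Cons.IH[OF rws] by simp
qed

section \<open>The free group\<close>

lemma FreeGrp_carrier: "w \<in> carrier (FreeGrp n) \<longleftrightarrow> reduced w \<and> snd ` set w \<subseteq> {1..n}"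
  by (simp add: FreeGrp_def)

lemma FreeGrp_mult: "v \<otimes>\<^bsub>FreeGrp n\<^esub> w = wmul v w"
  by (simp add: FreeGrp_def)

lemma FreeGrp_one: "\<one>\<^bsub>FreeGrp n\<^esub> = []"
  by (simp add: FreeGrp_def)

lemma FreeGrp_group: "group (FreeGrp n)"
proof (rule groupI)
  fix x y assume x: "x \<in> carrier (FreeGrp n)" and y: "y \<in> carrier (FreeGrp n)"
  then show "x \<otimes>\<^bsub>FreeGrp n\<^esub> y \<in> carrier (FreeGrp n)"
  proof -
    have "snd ` set (wmul x y) \<subseteq> {1..n}"
      using wmul_letters[of x y] x y unfolding FreeGrp_carrier by (meson Un_least subset_trans)
    then show ?thesis using wmul_reduced x y by (simp add: FreeGrp_carrier FreeGrp_mult)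
  qed
next
  show "\<one>\<^bsub>FreeGrp n\<^esub> \<in> carrier (FreeGrp n)" by (simp add: FreeGrp_carrier FreeGrp_one)
next
  fix x y z assume "x \<in> carrier (FreeGrp n)" "y \<in> carrier (FreeGrp n)" "z \<in> carrier (FreeGrp n)"
  then show "x \<otimes>\<^bsub>FreeGrp n\<^esub> y \<otimes>\<^bsub>FreeGrp n\<^esub> z = x \<otimes>\<^bsub>FreeGrp n\<^esub> (y \<otimes>\<^bsub>FreeGrp n\<^esub> z)"
    by (simp add: FreeGrp_carrier FreeGrp_mult wmul_assoc)
next
  fix x assume "x \<in> carrier (FreeGrp n)"
  then show "\<one>\<^bsub>FreeGrp n\<^esub> \<otimes>\<^bsub>FreeGrp n\<^esub> x = x" by (simp add: FreeGrp_mult FreeGrp_one)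
next
  fix x assume x: "x \<in> carrier (FreeGrp n)"
  have "winv x \<in> carrier (FreeGrp n)" using x winv_reduced winv_letters by (simp add: FreeGrp_carrier)
  moreover have "winv x \<otimes>\<^bsub>FreeGrp n\<^esub> x = \<one>\<^bsub>FreeGrp n\<^esub>"
    using x winv_mul by (simp add: FreeGrp_carrier FreeGrp_mult FreeGrp_one)
  ultimately show "\<exists>y\<in>carrier (FreeGrp n). y \<otimes>\<^bsub>FreeGrp n\<^esub> x = \<one>\<^bsub>FreeGrp n\<^esub>" by blast
qed

lemma xgen_carrier: "i \<in> {1..n} \<Longrightarrow> xgen i \<in> carrier (FreeGrp n)"
  by (simp add: xgen_def FreeGrp_carrier)

lemma FreeGrp_inv_letter: "a \<in> {1..n} \<Longrightarrow> inv\<^bsub>FreeGrp n\<^esub> (xgen a) = [(True, a)]"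
proof -
  assume a: "a \<in> {1..n}"
  interpret F: group "FreeGrp n" by (rule FreeGrp_group)
  show ?thesis
  proof (rule F.inv_equality)
    show "[(True, a)] \<otimes>\<^bsub>FreeGrp n\<^esub> xgen a = \<one>\<^bsub>FreeGrp n\<^esub>"
      by (simp add: FreeGrp_mult FreeGrp_one xgen_def cancels_def)
    show "xgen a \<in> carrier (FreeGrp n)" using xgen_carrier[OF a] .
    show "[(True, a)] \<in> carrier (FreeGrp n)" using a by (simp add: FreeGrp_carrier)
  qed
qed

lemma FreeGrp_gen: "carrier (FreeGrp n) \<subseteq> generate (FreeGrp n) (xgen ` {1..n})"
proof
  interpret F: group "FreeGrp n" by (rule FreeGrp_group)
  fix w assume "w \<in> carrier (FreeGrp n)"
  then show "w \<in> generate (FreeGrp n) (xgen ` {1..n})"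
  proof (induction w)
    case Nil
    then show ?case using generate.one[of "FreeGrp n"] by (simp add: FreeGrp_one)
  next
    case (Cons l ws)
    obtain b a where l: "l = (b, a)" by fastforce
    have a: "a \<in> {1..n}" using Cons l by (simp add: FreeGrp_carrier)
    have ws: "ws \<in> carrier (FreeGrp n)" using Cons.prems reduced_tl[of l ws] by (auto simp: FreeGrp_carrier)
    have e: "l # ws = [l] \<otimes>\<^bsub>FreeGrp n\<^esub> ws"
      using Cons cons_red_noncancel by (simp add: FreeGrp_mult FreeGrp_carrier)
    have "[l] \<in> generate (FreeGrp n) (xgen ` {1..n})"
    proof (cases b)
      case True
      have "[l] = inv\<^bsub>FreeGrp n\<^esub> (xgen a)" using FreeGrp_inv_letter[OF a] l True by simp
      then show ?thesis using a by (metis generate.inv imageI)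
    next
      case False
      then have "[l] = xgen a" using l by (simp add: xgen_def)
      then show ?thesis using a by (metis generate.incl imageI)
    qed
    then show ?case using e Cons.IH[OF ws] generate.eng by metis
  qed
qed

context group
begin

definition lv :: "(nat \<Rightarrow> 'a) \<Rightarrow> bool \<times> nat \<Rightarrow> 'a" where
  "lv h l = (if fst l then inv (h (snd l)) else h (snd l))"

definition ev :: "(nat \<Rightarrow> 'a) \<Rightarrow> (bool \<times> nat) list \<Rightarrow> 'a" where
  "ev h w = foldr (\<lambda>l acc. lv h l \<otimes> acc) w \<one>"

lemma lv_car: "h (snd l) \<in> carrier G \<Longrightarrow> lv h l \<in> carrier G"
  by (simp add: lv_def)

lemma ev_Cons [simp]: "ev h (l # w) = lv h l \<otimes> ev h w"
  by (simp add: ev_def)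

lemma ev_Nil [simp]: "ev h [] = \<one>"
  by (simp add: ev_def)

lemma ev_car: "(\<And>i. i \<in> {1..n} \<Longrightarrow> h i \<in> carrier G) \<Longrightarrow> snd ` set w \<subseteq> {1..n} \<Longrightarrow> ev h w \<in> carrier G"
  by (induction w) (auto simp: lv_def)

lemma lv_cancel: "h (snd l) \<in> carrier G \<Longrightarrow> cancels l m \<Longrightarrow> x \<in> carrier G \<Longrightarrow> lv h l \<otimes> (lv h m \<otimes> x) = x"
  by (cases l; cases m) (auto simp: lv_def cancels_def simp flip: m_assoc)

lemma ev_cons_red:
  assumes h: "\<And>i. i \<in> {1..n} \<Longrightarrow> h i \<in> carrier G" and l: "snd l \<in> {1..n}" and w: "snd ` set w \<subseteq> {1..n}"
  shows "ev h (cons_red l w) = lv h l \<otimes> ev h w"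
proof (cases w)
  case Nil then show ?thesis by simp
next
  case (Cons m ms)
  show ?thesis
  proof (cases "cancels l m")
    case True
    have "ev h ms \<in> carrier G" using ev_car[OF h] w Cons by auto
    then show ?thesis using Cons True lv_cancel[of h l m "ev h ms", OF h[OF l] True] by simp
  next
    case False then show ?thesis using Cons by simp
  qed
qed

lemma ev_wmul:
  assumes h: "\<And>i. i \<in> {1..n} \<Longrightarrow> h i \<in> carrier G"
  shows "snd ` set v \<subseteq> {1..n} \<Longrightarrow> snd ` set w \<subseteq> {1..n} \<Longrightarrow> ev h (wmul v w) = ev h v \<otimes> ev h w"
proof (induction v)
  case Nil
  then show ?case using ev_car[OF h] by simp
next
  case (Cons l vs)
  have l: "snd l \<in> {1..n}" and vs: "snd ` set vs \<subseteq> {1..n}" using Cons by auto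
  have "ev h (wmul (l # vs) w) = ev h (cons_red l (wmul vs w))" by simp
  also have "\<dots> = lv h l \<otimes> ev h (wmul vs w)"
    by (rule ev_cons_red[OF h l subset_trans[OF wmul_letters Un_least[OF vs Cons.prems(2)]]])
  also have "\<dots> = lv h l \<otimes> (ev h vs \<otimes> ev h w)" using Cons vs by simp
  finally show ?case using lv_car[of h l, OF h[OF l]] ev_car[OF h vs] ev_car[OF h Cons(3)] by (simp add: m_assoc)
qed

lemma ev_hom:
  assumes h: "\<And>i. i \<in> {1..n} \<Longrightarrow> h i \<in> carrier G"
  shows "ev h \<in> hom (FreeGrp n) G"
proof (rule homI)
  fix x assume "x \<in> carrier (FreeGrp n)"
  then show "ev h x \<in> carrier G" using ev_car[OF h] by (simp add: FreeGrp_carrier)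
next
  fix x y assume "x \<in> carrier (FreeGrp n)" "y \<in> carrier (FreeGrp n)"
  then show "ev h (x \<otimes>\<^bsub>FreeGrp n\<^esub> y) = ev h x \<otimes> ev h y"
    using ev_wmul[OF h] by (simp add: FreeGrp_carrier FreeGrp_mult)
qed

lemma ev_xgen: "h i \<in> carrier G \<Longrightarrow> ev h (xgen i) = h i"
  by (simp add: xgen_def lv_def)

end

definition Sgen :: "nat \<Rightarrow> (bool \<times> nat) list set" where
  "Sgen n = {h \<otimes>\<^bsub>FreeGrp n\<^esub> h | h. h \<in> derived (FreeGrp n) (carrier (FreeGrp n))}
      \<union> {xgen i \<otimes>\<^bsub>FreeGrp n\<^esub> xgen i | i. i \<in> {1..n}}"

lemma Ntilde_alt: "Ntilde n = normal_closure (FreeGrp n) (Sgen n)"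
  by (simp add: Ntilde_def Sgen_def)

lemma Sgen_car: "Sgen n \<subseteq> carrier (FreeGrp n)"
proof -
  interpret F: group "FreeGrp n" by (rule FreeGrp_group)
  have "derived (FreeGrp n) (carrier (FreeGrp n)) \<subseteq> carrier (FreeGrp n)" by (rule F.derived_in_carrier) simp
  then show ?thesis unfolding Sgen_def using xgen_carrier by auto
qed

lemma (in group) normal_closure_normal:
  assumes S: "S \<subseteq> carrier G"
  shows "normal_closure G S \<lhd> G"
  unfolding normal_closure_def
proof (rule normal_generateI)
  show "{g \<otimes> s \<otimes> inv g |g s. g \<in> carrier G \<and> s \<in> S} \<subseteq> carrier G" using S by auto
next
  fix h x assume h: "h \<in> {g \<otimes> s \<otimes> inv g |g s. g \<in> carrier G \<and> s \<in> S}" and x: "x \<in> carrier G"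
  then obtain y s where ys: "y \<in> carrier G" "s \<in> S" "h = y \<otimes> s \<otimes> inv y" by blast
  have sc: "s \<in> carrier G" using ys S by auto
  have "x \<otimes> h \<otimes> inv x = (x \<otimes> y) \<otimes> s \<otimes> inv (x \<otimes> y)"
    using ys sc x by (simp add: m_assoc inv_mult_group)
  moreover have "x \<otimes> y \<in> carrier G" using x ys by simp
  ultimately show "x \<otimes> h \<otimes> inv x \<in> {g \<otimes> s \<otimes> inv g |g s. g \<in> carrier G \<and> s \<in> S}"
    using ys(2) by blast
qed

lemma (in group) normal_closure_sub:
  assumes S: "S \<subseteq> N" and N: "N \<lhd> G"
  shows "normal_closure G S \<subseteq> N"
  unfolding normal_closure_def
proof (rule generate_subgroup_incl)
  show "subgroup N G" using N normal_imp_subgroup by blast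
  show "{g \<otimes> s \<otimes> inv g |g s. g \<in> carrier G \<and> s \<in> S} \<subseteq> N"
    using S normal.inv_op_closed2[OF N] by blast
qed

lemma Ntilde_normal: "Ntilde n \<lhd> FreeGrp n"
  unfolding Ntilde_alt by (rule group.normal_closure_normal[OF FreeGrp_group Sgen_car])

lemma CC_group: "group (CC n)"
  unfolding CC_def by (rule normal.factorgroup_is_group[OF Ntilde_normal])

lemma pi_hom: "(\<lambda>w. Ntilde n #>\<^bsub>FreeGrp n\<^esub> w) \<in> hom (FreeGrp n) (CC n)"
  unfolding CC_def by (rule normal.r_coset_hom_Mod[OF Ntilde_normal])

lemma CC_carrier: "carrier (CC n) = (\<lambda>w. Ntilde n #>\<^bsub>FreeGrp n\<^esub> w) ` carrier (FreeGrp n)"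
  by (auto simp: CC_def FactGroup_def RCOSETS_def)

lemma Sgen_sub_N: "Sgen n \<subseteq> Ntilde n"
  unfolding Ntilde_alt normal_closure_def
proof
  interpret F: group "FreeGrp n" by (rule FreeGrp_group)
  fix s assume s: "s \<in> Sgen n"
  have sc: "s \<in> carrier (FreeGrp n)" using s Sgen_car by blast
  have "s = \<one>\<^bsub>FreeGrp n\<^esub> \<otimes>\<^bsub>FreeGrp n\<^esub> s \<otimes>\<^bsub>FreeGrp n\<^esub> inv\<^bsub>FreeGrp n\<^esub> \<one>\<^bsub>FreeGrp n\<^esub>" using sc by simp
  then show "s \<in> generate (FreeGrp n) {g \<otimes>\<^bsub>FreeGrp n\<^esub> s \<otimes>\<^bsub>FreeGrp n\<^esub> inv\<^bsub>FreeGrp n\<^esub> g |g s. g \<in> carrier (FreeGrp n) \<and> s \<in> Sgen n}"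
    using s by (intro generate.incl) blast
qed


lemma mult_CC: "Xa \<otimes>\<^bsub>CC n\<^esub> Y = set_mult (FreeGrp n) Xa Y"
  by (simp add: CC_def FactGroup_def)

lemma one_CC: "\<one>\<^bsub>CC n\<^esub> = Ntilde n"
  by (simp add: CC_def)

lemma coset_mult:
  assumes v: "v \<in> carrier (FreeGrp n)" and w: "w \<in> carrier (FreeGrp n)"
  shows "(Ntilde n #>\<^bsub>FreeGrp n\<^esub> v) \<otimes>\<^bsub>CC n\<^esub> (Ntilde n #>\<^bsub>FreeGrp n\<^esub> w) = Ntilde n #>\<^bsub>FreeGrp n\<^esub> (v \<otimes>\<^bsub>FreeGrp n\<^esub> w)"
  unfolding mult_CC by (rule normal.rcos_sum[OF Ntilde_normal v w])

lemma coset_in_N: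
  assumes "w \<in> Ntilde n"
  shows "Ntilde n #>\<^bsub>FreeGrp n\<^esub> w = Ntilde n"
  by (rule subgroup.rcos_const[OF normal_imp_subgroup[OF Ntilde_normal] FreeGrp_group assms])

lemma cgen_carrier: "i \<in> {1..n} \<Longrightarrow> cgen n i \<in> carrier (CC n)"
  unfolding CC_carrier cgen_def using xgen_carrier by blast

lemma cgen_sq: "i \<in> {1..n} \<Longrightarrow> cgen n i \<otimes>\<^bsub>CC n\<^esub> cgen n i = \<one>\<^bsub>CC n\<^esub>"
proof -
  assume i: "i \<in> {1..n}"
  have "xgen i \<otimes>\<^bsub>FreeGrp n\<^esub> xgen i \<in> Ntilde n" using Sgen_sub_N i unfolding Sgen_def by blast
  then show ?thesis unfolding cgen_def one_CC
    using coset_mult[OF xgen_carrier[OF i] xgen_carrier[OF i]] coset_in_N by simp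
qed

lemma CC_gen: "carrier (CC n) \<subseteq> generate (CC n) (cgen n ` {1..n})"
proof -
  interpret pi: group_hom "FreeGrp n" "CC n" "\<lambda>w. Ntilde n #>\<^bsub>FreeGrp n\<^esub> w"
    by (simp add: group_hom_def group_hom_axioms_def FreeGrp_group CC_group pi_hom)
  have xs: "xgen ` {1..n} \<subseteq> carrier (FreeGrp n)" using xgen_carrier by blast
  have "carrier (CC n) \<subseteq> (\<lambda>w. Ntilde n #>\<^bsub>FreeGrp n\<^esub> w) ` generate (FreeGrp n) (xgen ` {1..n})"
    unfolding CC_carrier using FreeGrp_gen by blast
  also have "\<dots> = generate (CC n) ((\<lambda>w. Ntilde n #>\<^bsub>FreeGrp n\<^esub> w) ` xgen ` {1..n})"
    by (rule pi.generate_img[symmetric, OF xs])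
  also have "(\<lambda>w. Ntilde n #>\<^bsub>FreeGrp n\<^esub> w) ` xgen ` {1..n} = cgen n ` {1..n}"
    by (auto simp: cgen_def image_iff)
  finally show ?thesis .
qed

lemma CC_derived2:
  assumes x: "x \<in> derived (CC n) (carrier (CC n))"
  shows "x \<otimes>\<^bsub>CC n\<^esub> x = \<one>\<^bsub>CC n\<^esub>"
proof -
  interpret F: group "FreeGrp n" by (rule FreeGrp_group)
  interpret pi: group_hom "FreeGrp n" "CC n" "\<lambda>w. Ntilde n #>\<^bsub>FreeGrp n\<^esub> w"
    by (simp add: group_hom_def group_hom_axioms_def FreeGrp_group CC_group pi_hom)
  have "derived (CC n) (carrier (CC n)) = (\<lambda>w. Ntilde n #>\<^bsub>FreeGrp n\<^esub> w) ` derived (FreeGrp n) (carrier (FreeGrp n))"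
    unfolding CC_carrier by (rule pi.derived_img) simp
  then obtain y where y: "y \<in> derived (FreeGrp n) (carrier (FreeGrp n))" "x = Ntilde n #>\<^bsub>FreeGrp n\<^esub> y"
    using x by blast
  have yc: "y \<in> carrier (FreeGrp n)" using y(1) F.derived_in_carrier[of "carrier (FreeGrp n)"] by blast
  have "y \<otimes>\<^bsub>FreeGrp n\<^esub> y \<in> Ntilde n" using Sgen_sub_N y(1) unfolding Sgen_def by blast
  then show ?thesis unfolding y(2) one_CC using coset_mult[OF yc yc] coset_in_N by simp
qed

section \<open>Descending homomorphisms\<close>

definition fbar :: "('c, 'd) monoid_scheme \<Rightarrow> (nat \<Rightarrow> 'c) \<Rightarrow> (bool \<times> nat) list set \<Rightarrow> 'c" where
  "fbar H h Xa = the_elem (group.ev H h ` Xa)"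

locale desc = H: group H for H (structure) +
  fixes n :: nat and h :: "nat \<Rightarrow> 'a"
  assumes h_car: "\<And>i. i \<in> {1..n} \<Longrightarrow> h i \<in> carrier H"
    and h_sq: "\<And>i. i \<in> {1..n} \<Longrightarrow> h i \<otimes> h i = \<one>"
    and h_der: "\<And>x. x \<in> derived H (carrier H) \<Longrightarrow> x \<otimes> x = \<one>"
begin

lemma evh: "H.ev h \<in> hom (FreeGrp n) H"
  by (rule H.ev_hom[OF h_car])

lemma evh_gh: "group_hom (FreeGrp n) H (H.ev h)"
  by (simp add: group_hom_def group_hom_axioms_def FreeGrp_group H.is_group evh)

lemma N_kernel: "Ntilde n \<subseteq> kernel (FreeGrp n) H (H.ev h)"
proof -
  interpret F: group "FreeGrp n" by (rule FreeGrp_group)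
  interpret e: group_hom "FreeGrp n" H "H.ev h" by (rule evh_gh)
  show ?thesis unfolding Ntilde_alt
  proof (rule F.normal_closure_sub[OF _ e.normal_kernel])
    show "Sgen n \<subseteq> kernel (FreeGrp n) H (H.ev h)"
    proof
      fix s assume s: "s \<in> Sgen n"
      have sc: "s \<in> carrier (FreeGrp n)" using s Sgen_car by blast
      have "H.ev h s = \<one>"
      proof (cases "s \<in> {xgen i \<otimes>\<^bsub>FreeGrp n\<^esub> xgen i | i. i \<in> {1..n}}")
        case True
        then obtain i where i: "i \<in> {1..n}" "s = xgen i \<otimes>\<^bsub>FreeGrp n\<^esub> xgen i" by blast
        then show ?thesis using xgen_carrier[OF i(1)] H.ev_xgen[of h i, OF h_car[OF i(1)]] h_sq[OF i(1)] by simp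
      next
        case False
        then obtain y where y: "y \<in> derived (FreeGrp n) (carrier (FreeGrp n))" "s = y \<otimes>\<^bsub>FreeGrp n\<^esub> y"
          using s unfolding Sgen_def by blast
        have yc: "y \<in> carrier (FreeGrp n)" using y(1) F.derived_in_carrier[of "carrier (FreeGrp n)"] by blast
        have "H.ev h y \<in> H.ev h ` derived (FreeGrp n) (carrier (FreeGrp n))" using y(1) by blast
        also have "\<dots> = derived H (H.ev h ` carrier (FreeGrp n))" by (rule e.derived_img[symmetric]) simp
        also have "\<dots> \<subseteq> derived H (carrier H)" by (rule H.mono_derived) (use e.hom_closed in auto)
        finally have "H.ev h y \<otimes> H.ev h y = \<one>" by (rule h_der)
        then show ?thesis using y(2) yc by simp
      qed
      then show "s \<in> kernel (FreeGrp n) H (H.ev h)" using sc by (simp add: kernel_def)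
    qed
  qed
qed

lemma fbar_coset:
  assumes w: "w \<in> carrier (FreeGrp n)"
  shows "fbar H h (Ntilde n #>\<^bsub>FreeGrp n\<^esub> w) = H.ev h w"
proof -
  interpret F: group "FreeGrp n" by (rule FreeGrp_group)
  interpret e: group_hom "FreeGrp n" H "H.ev h" by (rule evh_gh)
  have Nc: "Ntilde n \<subseteq> carrier (FreeGrp n)" using normal_imp_subgroup[OF Ntilde_normal] subgroup.subset by blast
  have "H.ev h ` (Ntilde n #>\<^bsub>FreeGrp n\<^esub> w) = {H.ev h w}"
  proof
    show "H.ev h ` (Ntilde n #>\<^bsub>FreeGrp n\<^esub> w) \<subseteq> {H.ev h w}"
    proof
      fix z assume "z \<in> H.ev h ` (Ntilde n #>\<^bsub>FreeGrp n\<^esub> w)"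
      then obtain k where k: "k \<in> Ntilde n" "z = H.ev h (k \<otimes>\<^bsub>FreeGrp n\<^esub> w)"
        unfolding r_coset_def by blast
      have kc: "k \<in> carrier (FreeGrp n)" using k Nc by blast
      have "H.ev h k = \<one>" using N_kernel k by (auto simp: kernel_def)
      then show "z \<in> {H.ev h w}" using k kc w by simp
    qed
  next
    have "w \<in> Ntilde n #>\<^bsub>FreeGrp n\<^esub> w" by (rule F.rcos_self[OF w normal_imp_subgroup[OF Ntilde_normal]])
    then show "{H.ev h w} \<subseteq> H.ev h ` (Ntilde n #>\<^bsub>FreeGrp n\<^esub> w)" by blast
  qed
  then show ?thesis by (simp add: fbar_def)
qed

lemma fbar_hom: "fbar H h \<in> hom (CC n) H"
proof (rule homI)
  interpret e: group_hom "FreeGrp n" H "H.ev h" by (rule evh_gh)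
  fix Xa assume "Xa \<in> carrier (CC n)"
  then obtain w where w: "w \<in> carrier (FreeGrp n)" "Xa = Ntilde n #>\<^bsub>FreeGrp n\<^esub> w" unfolding CC_carrier by blast
  then show "fbar H h Xa \<in> carrier H" using fbar_coset by simp
next
  interpret e: group_hom "FreeGrp n" H "H.ev h" by (rule evh_gh)
  fix Xa Y assume "Xa \<in> carrier (CC n)" "Y \<in> carrier (CC n)"
  then obtain v w where v: "v \<in> carrier (FreeGrp n)" "Xa = Ntilde n #>\<^bsub>FreeGrp n\<^esub> v"
    and w: "w \<in> carrier (FreeGrp n)" "Y = Ntilde n #>\<^bsub>FreeGrp n\<^esub> w" unfolding CC_carrier by blast
  have vw: "v \<otimes>\<^bsub>FreeGrp n\<^esub> w \<in> carrier (FreeGrp n)" using v w group.subgroup_self[OF FreeGrp_group] subgroup.m_closed by blast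
  show "fbar H h (Xa \<otimes>\<^bsub>CC n\<^esub> Y) = fbar H h Xa \<otimes> fbar H h Y"
    unfolding v(2) w(2) coset_mult[OF v(1) w(1)] fbar_coset[OF vw] fbar_coset[OF v(1)] fbar_coset[OF w(1)]
    using v w by simp
qed

lemma fbar_cgen: "i \<in> {1..n} \<Longrightarrow> fbar H h (cgen n i) = h i"
proof -
  assume i: "i \<in> {1..n}"
  show ?thesis unfolding cgen_def using fbar_coset[OF xgen_carrier[OF i]] H.ev_xgen[of h i, OF h_car[OF i]] by simp
qed

end

lemma ev_Vn_parity:
  "snd ` set w \<subseteq> {1..n} \<Longrightarrow> group.ev (Vn n) (\<lambda>i. {i}) w = parity_map w"
proof (induction w)
  case Nil
  then show ?case using group.ev_Nil[OF Vn_group] by (simp add: parity_map_def)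
next
  case (Cons l ws)
  have a: "snd l \<in> {1..n}" and ws: "snd ` set ws \<subseteq> {1..n}" using Cons by auto
  have lvv: "group.lv (Vn n) (\<lambda>i. {i}) l = {snd l}"
    using Vn_inv[of "{snd l}" n] a by (simp add: group.lv_def[OF Vn_group])
  have "group.ev (Vn n) (\<lambda>i. {i}) (l # ws) = symdiff {snd l} (parity_map ws)"
    using group.ev_Cons[OF Vn_group] lvv Cons.IH[OF ws] by simp
  also have "\<dots> = parity_map (l # ws)"
    by (rule Set.set_eqI) (auto simp: parity_map_def)
  finally show ?case .
qed

lemma desc_Vn: "desc (Vn n) n (\<lambda>i. {i})"
proof -
  interpret V: comm_group "Vn n" by (rule Vn_comm_group)
  show ?thesis
  proof
    show "\<And>i. i \<in> {1..n} \<Longrightarrow> {i} \<in> carrier (Vn n)" by simp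
    show "\<And>i. i \<in> {1..n} \<Longrightarrow> {i} \<otimes>\<^bsub>Vn n\<^esub> {i} = \<one>\<^bsub>Vn n\<^esub>" by simp
    show "\<And>x. x \<in> derived (Vn n) (carrier (Vn n)) \<Longrightarrow> x \<otimes>\<^bsub>Vn n\<^esub> x = \<one>\<^bsub>Vn n\<^esub>"
      using V.derived_eq_singleton by simp
  qed
qed

lemma cphi_eq:
  assumes w: "w \<in> carrier (FreeGrp n)"
  shows "cphi n (Ntilde n #>\<^bsub>FreeGrp n\<^esub> w) = parity_map w"
proof -
  interpret V: desc "Vn n" n "\<lambda>i. {i}" by (rule desc_Vn)
  have Nc: "Ntilde n \<subseteq> carrier (FreeGrp n)" using normal_imp_subgroup[OF Ntilde_normal] subgroup.subset by blast
  have all: "\<And>v. v \<in> Ntilde n #>\<^bsub>FreeGrp n\<^esub> w \<Longrightarrow> parity_map v = parity_map w"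
  proof -
    fix v assume v: "v \<in> Ntilde n #>\<^bsub>FreeGrp n\<^esub> w"
    have vc: "v \<in> carrier (FreeGrp n)"
      using monoid.r_coset_subset_G[OF group.is_monoid[OF FreeGrp_group] Nc w] v by (rule subsetD)
    have "Ntilde n #>\<^bsub>FreeGrp n\<^esub> w = Ntilde n #>\<^bsub>FreeGrp n\<^esub> v"
      by (rule group.repr_independence[OF FreeGrp_group v w normal_imp_subgroup[OF Ntilde_normal]])
    then have "group.ev (Vn n) (\<lambda>i. {i}) v = group.ev (Vn n) (\<lambda>i. {i}) w"
      using V.fbar_coset[OF vc] V.fbar_coset[OF w] by simp
    then show "parity_map v = parity_map w"
      using ev_Vn_parity vc w by (simp add: FreeGrp_carrier)
  qed
  have wi: "w \<in> Ntilde n #>\<^bsub>FreeGrp n\<^esub> w"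
    by (rule group.rcos_self[OF FreeGrp_group w normal_imp_subgroup[OF Ntilde_normal]])
  show ?thesis unfolding cphi_def
  proof (rule the_equality)
    show "\<exists>v\<in>Ntilde n #>\<^bsub>FreeGrp n\<^esub> w. parity_map v = parity_map w" using wi by (rule bexI[rotated]) simp
  next
    fix u assume "\<exists>v\<in>Ntilde n #>\<^bsub>FreeGrp n\<^esub> w. parity_map v = u"
    then obtain v where "v \<in> Ntilde n #>\<^bsub>FreeGrp n\<^esub> w" "parity_map v = u" by (rule bexE)
    then show "u = parity_map w" using all by metis
  qed
qed

lemma cphi_fbar: "Xa \<in> carrier (CC n) \<Longrightarrow> cphi n Xa = fbar (Vn n) (\<lambda>i. {i}) Xa"
proof -
  interpret V: desc "Vn n" n "\<lambda>i. {i}" by (rule desc_Vn)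
  assume "Xa \<in> carrier (CC n)"
  then obtain w where w: "w \<in> carrier (FreeGrp n)" "Xa = Ntilde n #>\<^bsub>FreeGrp n\<^esub> w" unfolding CC_carrier by blast
  show ?thesis unfolding w(2) cphi_eq[OF w(1)] V.fbar_coset[OF w(1)]
    using ev_Vn_parity w(1) by (simp add: FreeGrp_carrier)
qed

lemma cphi_hom: "cphi n \<in> hom (CC n) (Vn n)"
proof -
  interpret V: desc "Vn n" n "\<lambda>i. {i}" by (rule desc_Vn)
  interpret C: group "CC n" by (rule CC_group)
  show ?thesis
  proof (rule homI)
    fix x assume x: "x \<in> carrier (CC n)"
    show "cphi n x \<in> carrier (Vn n)" using cphi_fbar[OF x] hom_in_carrier[OF V.fbar_hom x] by simp
  next
    fix x y assume x: "x \<in> carrier (CC n)" and y: "y \<in> carrier (CC n)"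
    show "cphi n (x \<otimes>\<^bsub>CC n\<^esub> y) = cphi n x \<otimes>\<^bsub>Vn n\<^esub> cphi n y"
      using cphi_fbar[OF C.m_closed[OF x y]] cphi_fbar[OF x] cphi_fbar[OF y] hom_mult[OF V.fbar_hom x y] by simp
  qed
qed

theorem CC_expansion: "expansion_group n (CC n) (cphi n) (cgen n)"
proof -
  interpret C: group "CC n" by (rule CC_group)
  interpret V: desc "Vn n" n "\<lambda>i. {i}" by (rule desc_Vn)
  have h: "cphi n \<in> hom (CC n) (Vn n)" by (rule cphi_hom)
  have g: "\<forall>i\<in>{1..n}. cgen n i \<in> carrier (CC n) \<and> cphi n (cgen n i) = {i} \<and>
      cgen n i \<otimes>\<^bsub>CC n\<^esub> cgen n i = \<one>\<^bsub>CC n\<^esub>"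
    using cgen_carrier cgen_sq cphi_fbar V.fbar_cgen by simp
  have d1: "derived (CC n) (carrier (CC n)) \<subseteq> kernel (CC n) (Vn n) (cphi n)"
    by (rule C.derived_sub_kernel[OF Vn_comm_group h])
  have d2: "kernel (CC n) (Vn n) (cphi n) \<subseteq> derived (CC n) (carrier (CC n))"
    by (rule C.kernel_sub_derived[OF h g CC_gen])
  have eq: "kernel (CC n) (Vn n) (cphi n) = derived (CC n) (carrier (CC n))" using d1 d2 by blast
  have sq: "\<forall>x\<in>kernel (CC n) (Vn n) (cphi n). x \<otimes>\<^bsub>CC n\<^esub> x = \<one>\<^bsub>CC n\<^esub>"
    unfolding eq using CC_derived2 by blast
  have com: "\<forall>x\<in>kernel (CC n) (Vn n) (cphi n). \<forall>y\<in>kernel (CC n) (Vn n) (cphi n). x \<otimes>\<^bsub>CC n\<^esub> y = y \<otimes>\<^bsub>CC n\<^esub> x"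
    unfolding eq using C.exp2_comm[OF C.derived_is_subgroup[OF order_refl]] CC_derived2 by blast
  show ?thesis
    unfolding expansion_group_def using C.is_group h g eq sq com by blast
qed


lemma (in group) canc1: "x \<in> carrier G \<Longrightarrow> y \<in> carrier G \<Longrightarrow> x \<otimes> (inv x \<otimes> y) = y"
  by (simp flip: m_assoc)

lemma (in group) canc2: "x \<in> carrier G \<Longrightarrow> y \<in> carrier G \<Longrightarrow> inv x \<otimes> (x \<otimes> y) = y"
  by (simp flip: m_assoc)

locale expg = invgrp +
  fixes \<phi>
  assumes phi_hom: "\<phi> \<in> hom G (Vn n)"
    and phi_g: "\<And>i. i \<in> {1..n} \<Longrightarrow> \<phi> (g i) = {i}"
    and ker_eq: "kernel G (Vn n) \<phi> = DD"
begin

abbreviation "HH \<equiv> generate G (g ` {1..n})"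
abbreviation "IK \<equiv> generate G {dl (g i) k | i k. i \<in> {1..n} \<and> k \<in> DD}"

lemma gset: "g ` {1..n} \<subseteq> carrier G" using g_car by blast

lemma HH_sub: "subgroup HH G" by (rule generate_is_subgroup[OF gset])

lemma HH_car: "x \<in> HH \<Longrightarrow> x \<in> carrier G" using generate_in_carrier[OF gset] by blast

lemma HH_mult: "x \<in> HH \<Longrightarrow> y \<in> HH \<Longrightarrow> x \<otimes> y \<in> HH" by (rule generate.eng)

lemma HH_inv: "x \<in> HH \<Longrightarrow> inv x \<in> HH" by (rule generate_m_inv_closed[OF gset])

lemma IKgen_sub: "{dl (g i) k | i k. i \<in> {1..n} \<and> k \<in> DD} \<subseteq> DD"
  using dl_DD[OF invol_g] by blast

lemma IK_sub: "IK \<subseteq> DD"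
  by (rule generate_subgroup_incl[OF IKgen_sub DD_sub])

lemma IKgen_car: "{dl (g i) k | i k. i \<in> {1..n} \<and> k \<in> DD} \<subseteq> carrier G"
  using IKgen_sub DD_car by blast

lemma IK_mult: "x \<in> IK \<Longrightarrow> y \<in> IK \<Longrightarrow> x \<otimes> y \<in> IK" by (rule generate.eng)

lemma IK_inv: "x \<in> IK \<Longrightarrow> inv x \<in> IK" by (rule generate_m_inv_closed[OF IKgen_car])

lemma IK_one: "\<one> \<in> IK" by (rule generate.one)

lemma IK_car: "x \<in> IK \<Longrightarrow> x \<in> carrier G" using IK_sub DD_car by blast

lemma IK_cj:
  assumes i: "i \<in> {1..n}" and y: "y \<in> IK"
  shows "g i \<otimes> y \<otimes> g i \<in> IK"
  using y
proof (induction rule: generate.induct)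
  case one
  then show ?case using g_sq[OF i] g_car[OF i] IK_one by simp
next
  case (incl h)
  then obtain j k where jk: "j \<in> {1..n}" "k \<in> DD" "h = dl (g j) k" by blast
  have "g i \<otimes> h \<otimes> g i = dl (g j) (cj (g i) k)"
    using cj_dl_comm[OF invol_g[OF i] invol_g[OF jk(1)] jk(2)] jk(3) by (simp add: cj_def)
  moreover have "cj (g i) k \<in> DD" by (rule cj_DD[OF invol_g[OF i] jk(2)])
  ultimately show ?case using jk(1) by (intro generate.incl) blast
next
  case (inv h)
  then obtain j k where jk: "j \<in> {1..n}" "k \<in> DD" "h = dl (g j) k" by blast
  have hD: "h \<in> DD" using jk dl_DD[OF invol_g] by blast
  have "g i \<otimes> inv h \<otimes> g i = dl (g j) (cj (g i) k)"
    using cj_dl_comm[OF invol_g[OF i] invol_g[OF jk(1)] jk(2)] jk(3) DD_inv[OF hD] by (simp add: cj_def)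
  moreover have "cj (g i) k \<in> DD" by (rule cj_DD[OF invol_g[OF i] jk(2)])
  ultimately show ?case using jk(1) by (intro generate.incl) blast
next
  case (eng h1 h2)
  have h: "h1 \<in> DD" "h2 \<in> DD" using eng IK_sub by auto
  have "g i \<otimes> (h1 \<otimes> h2) \<otimes> g i = (g i \<otimes> h1 \<otimes> g i) \<otimes> (g i \<otimes> h2 \<otimes> g i)"
    using cj_mult[OF invol_g[OF i] h] by (simp add: cj_def)
  then show ?case using eng IK_mult by simp
qed

lemma IK_conj_HH:
  assumes h: "h \<in> HH"
  shows "\<And>y. y \<in> IK \<Longrightarrow> h \<otimes> y \<otimes> inv h \<in> IK"
  using h
proof (induction rule: generate.induct)
  case one
  then show ?case using IK_car by simp
next
  case (incl x)
  then obtain i where i: "i \<in> {1..n}" "x = g i" by blast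
  then show ?case using IK_cj[OF i(1) incl(2)] invol_inv[OF invol_g[OF i(1)]] by simp
next
  case (inv x)
  then obtain i where i: "i \<in> {1..n}" "x = g i" by blast
  then show ?case using IK_cj[OF i(1) inv(2)] invol_inv[OF invol_g[OF i(1)]] by simp
next
  case (eng h1 h2)
  have c: "h1 \<in> carrier G" "h2 \<in> carrier G" "y \<in> carrier G" using eng HH_car IK_car by auto
  have "h1 \<otimes> h2 \<otimes> y \<otimes> inv (h1 \<otimes> h2) = h1 \<otimes> (h2 \<otimes> y \<otimes> inv h2) \<otimes> inv h1"
    using c by (simp add: m_assoc inv_mult_group canc1 canc2)
  then show ?case using eng by simp
qed

lemma key_HH:
  assumes h: "h \<in> HH"
  shows "\<And>k. k \<in> DD \<Longrightarrow> h \<otimes> k \<otimes> inv h \<otimes> inv k \<in> IK"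
  using h
proof (induction rule: generate.induct)
  case one
  then show ?case using DD_car IK_one by simp
next
  case (incl x)
  then obtain i where i: "i \<in> {1..n}" "x = g i" by blast
  have "x \<otimes> k \<otimes> inv x \<otimes> inv k = dl (g i) k"
    using i invol_inv[OF invol_g[OF i(1)]] DD_inv[OF incl(2)] DD_comm[OF incl(2) cj_DD[OF invol_g[OF i(1)] incl(2)]]
    by (simp add: dl_eq[OF invol_g[OF i(1)] incl(2)] cj_def)
  then show ?case using i incl(2) by (intro generate.incl) auto
next
  case (inv x)
  then obtain i where i: "i \<in> {1..n}" "x = g i" by blast
  have "inv x \<otimes> k \<otimes> inv (inv x) \<otimes> inv k = dl (g i) k"
    using i invol_inv[OF invol_g[OF i(1)]] DD_inv[OF inv(2)] DD_comm[OF inv(2) cj_DD[OF invol_g[OF i(1)] inv(2)]]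
    by (simp add: dl_eq[OF invol_g[OF i(1)] inv(2)] cj_def)
  then show ?case using i inv(2) by (intro generate.incl) auto
next
  case (eng h1 h2)
  have c: "h1 \<in> carrier G" "h2 \<in> carrier G" "k \<in> carrier G" using eng HH_car DD_car by auto
  have "h1 \<otimes> h2 \<otimes> k \<otimes> inv (h1 \<otimes> h2) \<otimes> inv k =
      (h1 \<otimes> (h2 \<otimes> k \<otimes> inv h2 \<otimes> inv k) \<otimes> inv h1) \<otimes> (h1 \<otimes> k \<otimes> inv h1 \<otimes> inv k)"
    using c by (simp add: m_assoc inv_mult_group canc1 canc2)
  moreover have "h1 \<otimes> (h2 \<otimes> k \<otimes> inv h2 \<otimes> inv k) \<otimes> inv h1 \<in> IK"
    using IK_conj_HH[OF eng(1) eng(4)[OF eng(5)]] .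
  ultimately show ?case using eng IK_mult by simp
qed

lemma surj_HH: "P \<subseteq> {1..n} \<Longrightarrow> \<exists>h\<in>HH. \<phi> h = P"
proof -
  assume P: "P \<subseteq> {1..n}"
  have fP: "finite P" using P finite_subset by auto
  interpret ph: group_hom G "Vn n" \<phi>
    by (simp add: group_hom_def group_hom_axioms_def is_group Vn_group phi_hom)
  show ?thesis using fP P
  proof (induction P rule: finite_induct)
    case empty
    show ?case using generate.one ph.hom_one by (metis Vn_simps(3))
  next
    case (insert i P)
    obtain h where h: "h \<in> HH" "\<phi> h = P" using insert by auto
    have i: "i \<in> {1..n}" using insert by auto
    have gi: "g i \<in> HH" using i by (intro generate.incl) auto
    have "\<phi> (h \<otimes> g i) = symdiff P {i}" using h HH_car[OF h(1)] g_car[OF i] phi_g[OF i] by simp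
    also have "\<dots> = insert i P" using insert.hyps by auto
    finally show ?case using HH_mult[OF h(1) gi] by blast
  qed
qed

lemma stepA: "x \<in> carrier G \<Longrightarrow> \<exists>h\<in>HH. inv h \<otimes> x \<in> DD"
proof -
  assume x: "x \<in> carrier G"
  interpret ph: group_hom G "Vn n" \<phi>
    by (simp add: group_hom_def group_hom_axioms_def is_group Vn_group phi_hom)
  have "\<phi> x \<subseteq> {1..n}" using ph.hom_closed[OF x] by simp
  then obtain h where h: "h \<in> HH" "\<phi> h = \<phi> x" using surj_HH by blast
  have hc: "h \<in> carrier G" using HH_car h by simp
  have "\<phi> (inv h \<otimes> x) = symdiff (inv\<^bsub>Vn n\<^esub> (\<phi> h)) (\<phi> x)" using hc x by simp
  also have "inv\<^bsub>Vn n\<^esub> (\<phi> h) = \<phi> h" using Vn_inv ph.hom_closed[OF hc] by blast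
  finally have "\<phi> (inv h \<otimes> x) = {}" using h by simp
  then have "inv h \<otimes> x \<in> kernel G (Vn n) \<phi>" using hc x by (simp add: kernel_def)
  then show ?thesis using h ker_eq by auto
qed

lemma key_G:
  assumes x: "x \<in> carrier G" and k: "k \<in> DD"
  shows "x \<otimes> k \<otimes> inv x \<otimes> inv k \<in> IK"
proof -
  obtain h where h: "h \<in> HH" "inv h \<otimes> x \<in> DD" using stepA[OF x] by blast
  define k' where "k' = inv h \<otimes> x"
  have hc: "h \<in> carrier G" using HH_car h by simp
  have k'D: "k' \<in> DD" using h k'_def by simp
  have kc: "k \<in> carrier G" "k' \<in> carrier G" using k k'D DD_car by auto
  have xe: "x = h \<otimes> k'" unfolding k'_def using hc x by (simp flip: m_assoc)
  have "x \<otimes> k \<otimes> inv x \<otimes> inv k = h \<otimes> (k' \<otimes> k) \<otimes> inv k' \<otimes> inv h \<otimes> inv k"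
    unfolding xe using hc kc by (simp add: m_assoc inv_mult_group canc1 canc2)
  also have "k' \<otimes> k = k \<otimes> k'" using DD_comm[OF k'D k] .
  also have "h \<otimes> (k \<otimes> k') \<otimes> inv k' \<otimes> inv h \<otimes> inv k = h \<otimes> k \<otimes> inv h \<otimes> inv k"
    using hc kc by (simp add: m_assoc)
  finally show ?thesis using key_HH[OF h(1) k] by simp
qed

lemma IK_conj_G:
  assumes x: "x \<in> carrier G" and y: "y \<in> IK"
  shows "x \<otimes> y \<otimes> inv x \<in> IK"
proof -
  obtain h where h: "h \<in> HH" "inv h \<otimes> x \<in> DD" using stepA[OF x] by blast
  define k' where "k' = inv h \<otimes> x"
  have hc: "h \<in> carrier G" using HH_car h by simp
  have k'D: "k' \<in> DD" using h k'_def by simp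
  have yD: "y \<in> DD" using y IK_sub by blast
  have kc: "y \<in> carrier G" "k' \<in> carrier G" using yD k'D DD_car by auto
  have xe: "x = h \<otimes> k'" unfolding k'_def using hc x by (simp flip: m_assoc)
  have "x \<otimes> y \<otimes> inv x = h \<otimes> (k' \<otimes> y) \<otimes> inv k' \<otimes> inv h"
    unfolding xe using hc kc by (simp add: m_assoc inv_mult_group canc1 canc2)
  also have "k' \<otimes> y = y \<otimes> k'" using DD_comm[OF k'D yD] .
  also have "h \<otimes> (y \<otimes> k') \<otimes> inv k' \<otimes> inv h = h \<otimes> y \<otimes> inv h"
    using hc kc by (simp add: m_assoc)
  finally show ?thesis using IK_conj_HH[OF h(1) y] by simp
qed

definition HI where "HI = {h \<otimes> m | h m. h \<in> HH \<and> m \<in> IK}"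

lemma HI_subgroup: "subgroup HI G"
proof
  show "HI \<subseteq> carrier G" unfolding HI_def using HH_car IK_car by auto
next
  show "\<one> \<in> HI" unfolding HI_def using generate.one[of G "g ` {1..n}"] IK_one by force
next
  fix x y assume x: "x \<in> HI" and y: "y \<in> HI"
  obtain h1 m1 where 1: "x = h1 \<otimes> m1" "h1 \<in> HH" "m1 \<in> IK" using x unfolding HI_def by blast
  obtain h2 m2 where 2: "y = h2 \<otimes> m2" "h2 \<in> HH" "m2 \<in> IK" using y unfolding HI_def by blast
  have c: "h1 \<in> carrier G" "h2 \<in> carrier G" "m1 \<in> carrier G" "m2 \<in> carrier G"
    using 1 2 HH_car IK_car by auto
  have "x \<otimes> y = (h1 \<otimes> h2) \<otimes> ((inv h2 \<otimes> m1 \<otimes> inv (inv h2)) \<otimes> m2)"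
    using 1 2 c by (simp add: m_assoc canc1 canc2)
  moreover have "inv h2 \<otimes> m1 \<otimes> inv (inv h2) \<in> IK" by (rule IK_conj_HH[OF HH_inv[OF 2(2)] 1(3)])
  ultimately show "x \<otimes> y \<in> HI" unfolding HI_def using HH_mult[OF 1(2) 2(2)] IK_mult[OF _ 2(3)] by blast
next
  fix x assume x: "x \<in> HI"
  obtain h m where 1: "x = h \<otimes> m" "h \<in> HH" "m \<in> IK" using x unfolding HI_def by blast
  have c: "h \<in> carrier G" "m \<in> carrier G" using 1 HH_car IK_car by auto
  have "inv x = inv h \<otimes> (h \<otimes> inv m \<otimes> inv h)"
    using 1 c by (simp add: m_assoc inv_mult_group canc1 canc2)
  moreover have "h \<otimes> inv m \<otimes> inv h \<in> IK"
    using IK_conj_HH[OF 1(2) IK_inv[OF 1(3)]] .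
  ultimately show "inv x \<in> HI" unfolding HI_def using HH_inv[OF 1(2)] by blast
qed

lemma comm_HI:
  assumes a: "a \<in> carrier G" and b: "b \<in> carrier G"
  shows "a \<otimes> b \<otimes> inv a \<otimes> inv b \<in> HI"
proof -
  obtain h1 where h1: "h1 \<in> HH" "inv h1 \<otimes> a \<in> DD" using stepA[OF a] by blast
  obtain h2 where h2: "h2 \<in> HH" "inv h2 \<otimes> b \<in> DD" using stepA[OF b] by blast
  define k1 where "k1 = inv h1 \<otimes> a"
  define k2 where "k2 = inv h2 \<otimes> b"
  have c: "h1 \<in> carrier G" "h2 \<in> carrier G" using h1 h2 HH_car by auto
  have kD: "k1 \<in> DD" "k2 \<in> DD" using h1 h2 k1_def k2_def by auto
  have kc: "k1 \<in> carrier G" "k2 \<in> carrier G" using kD DD_car by auto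
  have ae: "a = h1 \<otimes> k1" unfolding k1_def using c a by (simp flip: m_assoc)
  have be: "b = h2 \<otimes> k2" unfolding k2_def using c b by (simp flip: m_assoc)
  define m1 where "m1 = inv (b \<otimes> k1 \<otimes> inv b \<otimes> inv k1)"
  define m2 where "m2 = h1 \<otimes> k2 \<otimes> inv h1 \<otimes> inv k2"
  define cc where "cc = h1 \<otimes> h2 \<otimes> inv h1 \<otimes> inv h2"
  have m1: "m1 \<in> IK" unfolding m1_def using IK_inv[OF key_G[OF b kD(1)]] .
  have m2: "m2 \<in> IK" unfolding m2_def using key_HH[OF h1(1) kD(2)] .
  have ccH: "cc \<in> HH" unfolding cc_def using HH_mult HH_inv h1(1) h2(1) by metis
  have ccc: "cc \<in> carrier G" using ccH HH_car by simp
  have m1c: "m1 \<in> carrier G" and m2c: "m2 \<in> carrier G" using m1 m2 IK_car by auto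
  have ident: "a \<otimes> b \<otimes> inv a \<otimes> inv b = cc \<otimes> ((inv cc \<otimes> (h1 \<otimes> m1 \<otimes> inv h1) \<otimes> inv (inv cc)) \<otimes> (h2 \<otimes> m2 \<otimes> inv h2))"
    unfolding ae be m1_def m2_def cc_def using c kc by (simp add: m_assoc inv_mult_group canc1 canc2)
  have i1: "h1 \<otimes> m1 \<otimes> inv h1 \<in> IK" by (rule IK_conj_HH[OF h1(1) m1])
  have i2: "inv cc \<otimes> (h1 \<otimes> m1 \<otimes> inv h1) \<otimes> inv (inv cc) \<in> IK" by (rule IK_conj_HH[OF HH_inv[OF ccH] i1])
  have i3: "h2 \<otimes> m2 \<otimes> inv h2 \<in> IK" by (rule IK_conj_HH[OF h2(1) m2])
  show ?thesis unfolding ident HI_def using ccH IK_mult[OF i2 i3] by blast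
qed

lemma DD_HI: "DD \<subseteq> HI"
  unfolding derived_def
proof (rule generate_subgroup_incl[OF _ HI_subgroup])
  show "derived_set G (carrier G) \<subseteq> HI" using comm_HI by blast
qed

end


context expg
begin

lemma FL_HH: "set l \<subseteq> {1..n} \<Longrightarrow> h \<in> HH \<Longrightarrow> h \<in> DD \<Longrightarrow> FL l h \<in> HH \<and> FL l h \<in> DD"
proof (induction l)
  case Nil then show ?case by simp
next
  case (Cons i l)
  have i: "i \<in> {1..n}" and l: "set l \<subseteq> {1..n}" using Cons by auto
  have IH: "FL l h \<in> HH" "FL l h \<in> DD" using Cons.IH[OF l Cons.prems(2,3)] by auto
  have gi: "g i \<in> HH" using i by (intro generate.incl) auto
  have "dl (g i) (FL l h) = FL l h \<otimes> (g i \<otimes> FL l h \<otimes> g i)" by (simp add: dl_def)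
  moreover have "FL l h \<otimes> (g i \<otimes> FL l h \<otimes> g i) \<in> HH" using IH gi HH_mult by metis
  moreover have "dl (g i) (FL l h) \<in> DD" using dl_DD[OF invol_g[OF i] IH(2)] .
  ultimately show ?case by simp
qed

lemma FL_long: "set l \<subseteq> {1..n} \<Longrightarrow> n < length l \<Longrightarrow> k \<in> DD \<Longrightarrow> FL l k = \<one>"
proof -
  assume l: "set l \<subseteq> {1..n}" and len: "n < length l" and k: "k \<in> DD"
  have "card (set l) \<le> n" using card_mono[OF _ l] by simp
  then have "\<not> distinct l" using len distinct_card by fastforce
  then obtain xs y ys zs where e: "l = xs @ [y] @ ys @ [y] @ zs" using not_distinct_decomp by blast
  have y: "y \<in> {1..n}" and sets: "set xs \<subseteq> {1..n}" "set ys \<subseteq> {1..n}" "set zs \<subseteq> {1..n}" using l e by auto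
  have z: "FL zs k \<in> DD" using FL_DD[OF sets(3) k] .
  have "FL l k = FL xs (dl (g y) (FL ys (dl (g y) (FL zs k))))" using e by simp
  also have "dl (g y) (FL ys (dl (g y) (FL zs k))) = FL ys (dl (g y) (dl (g y) (FL zs k)))"
    by (rule FL_comm[OF sets(2) y dl_DD[OF invol_g[OF y] z]])
  also have "dl (g y) (dl (g y) (FL zs k)) = \<one>" by (rule dl_dl[OF invol_g[OF y] z])
  also have "FL ys \<one> = \<one>" by (rule FL_one[OF sets(2)])
  also have "FL xs \<one> = \<one>" by (rule FL_one[OF sets(1)])
  finally show ?thesis .
qed

lemma FL_IK:
  assumes l: "set l \<subseteq> {1..n}" and IH: "\<And>i k. i \<in> {1..n} \<Longrightarrow> k \<in> DD \<Longrightarrow> FL (l @ [i]) k \<in> HH"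
    and m: "m \<in> IK"
  shows "FL l m \<in> HH"
  using m
proof (induction rule: generate.induct)
  case one
  then show ?case using FL_one[OF l] generate.one by metis
next
  case (incl x)
  then obtain i k where ik: "i \<in> {1..n}" "k \<in> DD" "x = dl (g i) k" by blast
  then show ?case using IH[OF ik(1,2)] by simp
next
  case (inv x)
  then obtain i k where ik: "i \<in> {1..n}" "k \<in> DD" "x = dl (g i) k" by blast
  have "inv x = x" using DD_inv dl_DD[OF invol_g[OF ik(1)] ik(2)] ik(3) by simp
  then show ?case using IH[OF ik(1,2)] ik(3) by simp
next
  case (eng a b)
  have "a \<in> DD" "b \<in> DD" using eng IK_sub by auto
  then have "FL l (a \<otimes> b) = FL l a \<otimes> FL l b" using FL_mult[OF l] by simp
  then show ?case using eng HH_mult by simp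
qed

lemma FL_step:
  assumes l: "set l \<subseteq> {1..n}" and IH: "\<And>i k. i \<in> {1..n} \<Longrightarrow> k \<in> DD \<Longrightarrow> FL (l @ [i]) k \<in> HH"
    and k: "k \<in> DD"
  shows "FL l k \<in> HH"
proof -
  have "k \<in> HI" using DD_HI k by blast
  then obtain h m where hm: "k = h \<otimes> m" "h \<in> HH" "m \<in> IK" unfolding HI_def by blast
  have mD: "m \<in> DD" using hm IK_sub by blast
  have hc: "h \<in> carrier G" using hm HH_car by simp
  have mc: "m \<in> carrier G" using mD DD_car by simp
  have hD: "h \<in> DD"
  proof -
    have "h = k \<otimes> inv m" using hm hc mc by (simp add: m_assoc)
    then show ?thesis using DD_mult[OF k] DD_inv[OF mD] mD by simp
  qed
  have "FL l k = FL l h \<otimes> FL l m" using hm FL_mult[OF l hD mD] by simp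
  moreover have "FL l h \<in> HH" using FL_HH[OF l hm(2) hD] by simp
  moreover have "FL l m \<in> HH" using FL_IK[OF l IH hm(3)] .
  ultimately show ?thesis using HH_mult by simp
qed

lemma FL_all: "\<forall>l. set l \<subseteq> {1..n} \<longrightarrow> length l + d = Suc n \<longrightarrow> (\<forall>k\<in>DD. FL l k \<in> HH)"
proof (induction d)
  case 0
  show ?case
  proof (intro allI impI ballI)
    fix l k assume l: "set l \<subseteq> {1..n}" and len: "length l + 0 = Suc n" and k: "k \<in> DD"
    have "FL l k = \<one>" using FL_long[OF l _ k] len by simp
    then show "FL l k \<in> HH" using generate.one by metis
  qed
next
  case (Suc d)
  show ?case
  proof (intro allI impI ballI)
    fix l k assume l: "set l \<subseteq> {1..n}" and len: "length l + Suc d = Suc n" and k: "k \<in> DD"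
    have IH: "\<And>i k. i \<in> {1..n} \<Longrightarrow> k \<in> DD \<Longrightarrow> FL (l @ [i]) k \<in> HH"
    proof -
      fix i k assume i: "i \<in> {1..n}" and k: "k \<in> DD"
      have "set (l @ [i]) \<subseteq> {1..n}" "length (l @ [i]) + d = Suc n" using l i len by auto
      then show "FL (l @ [i]) k \<in> HH" using Suc.IH k by blast
    qed
    show "FL l k \<in> HH" by (rule FL_step[OF l IH k])
  qed
qed

lemma DD_HH: "DD \<subseteq> HH"
proof
  fix k assume k: "k \<in> DD"
  have "\<forall>k\<in>DD. FL [] k \<in> HH" using FL_all[of "Suc n"] by simp
  then show "k \<in> HH" using k by simp
qed

theorem generated: "carrier G \<subseteq> HH"
proof
  fix x assume x: "x \<in> carrier G"
  obtain h where h: "h \<in> HH" "inv h \<otimes> x \<in> DD" using stepA[OF x] by blast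
  have hc: "h \<in> carrier G" using h HH_car by simp
  have "x = h \<otimes> (inv h \<otimes> x)" using hc x by (simp flip: m_assoc)
  moreover have "h \<otimes> (inv h \<otimes> x) \<in> HH" using HH_mult[OF h(1)] DD_HH h(2) by blast
  ultimately show "x \<in> HH" by simp
qed

end


lemma exp_invgrp:
  assumes e: "expansion_group n G \<phi> g"
  shows "invgrp G n g"
proof -
  have grp: "group G" using e by (simp add: expansion_group_def)
  interpret G: group G by (rule grp)
  show ?thesis
  proof
    show "\<And>i. i \<in> {1..n} \<Longrightarrow> g i \<in> carrier G" using e by (simp add: expansion_group_def)
    show "\<And>i. i \<in> {1..n} \<Longrightarrow> g i \<otimes>\<^bsub>G\<^esub> g i = \<one>\<^bsub>G\<^esub>" using e by (simp add: expansion_group_def)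
    show "\<And>x. x \<in> derived G (carrier G) \<Longrightarrow> x \<otimes>\<^bsub>G\<^esub> x = \<one>\<^bsub>G\<^esub>"
      using e unfolding expansion_group_def by metis
  qed
qed

lemma exp_expg:
  assumes e: "expansion_group n G \<phi> g"
  shows "expg G n g \<phi>"
proof -
  interpret invgrp G n g by (rule exp_invgrp[OF e])
  show ?thesis
  proof
    show "\<phi> \<in> hom G (Vn n)" using e by (simp add: expansion_group_def)
    show "\<And>i. i \<in> {1..n} \<Longrightarrow> \<phi> (g i) = {i}" using e by (simp add: expansion_group_def)
    show "kernel G (Vn n) \<phi> = derived G (carrier G)" using e by (simp add: expansion_group_def)
  qed
qed

lemma exp_desc:
  assumes e: "expansion_group n G \<phi> g"
  shows "desc G n g"
proof -
  interpret invgrp G n g by (rule exp_invgrp[OF e])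
  show ?thesis by unfold_locales (simp_all add: g_car g_sq der2)
qed

lemma exp_gen:
  assumes e: "expansion_group n G \<phi> g"
  shows "carrier G \<subseteq> generate G (g ` {1..n})"
proof -
  interpret expg G n g \<phi> by (rule exp_expg[OF e])
  show ?thesis by (rule generated)
qed

lemma exp_card:
  assumes n: "n \<ge> 1" and e: "expansion_group n G \<phi> g"
  shows "finite (carrier G) \<and> card (carrier G) \<le> 2 ^ bound_exp n"
proof -
  interpret invgrp G n g by (rule exp_invgrp[OF e])
  show ?thesis by (rule card_bound[OF n exp_gen[OF e]])
qed

lemma GG_card: "n \<ge> 1 \<Longrightarrow> finite (carrier (GG n)) \<and> card (carrier (GG n)) = 2 ^ bound_exp n"
  using exp_card[OF _ GG_expansion] GG_card_lower by (meson le_antisym)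

lemma img_gen:
  assumes G: "group G" and H: "group H" and f: "f \<in> hom G H" and S: "S \<subseteq> carrier G"
    and gen: "carrier H \<subseteq> generate H (f ` S)"
  shows "f ` carrier G = carrier H"
proof
  interpret f: group_hom G H f by (simp add: group_hom_def group_hom_axioms_def G H f)
  show "f ` carrier G \<subseteq> carrier H" using f.hom_closed by blast
  have "generate H (f ` S) \<subseteq> f ` carrier G"
    by (rule f.H.generate_subgroup_incl[OF _ f.img_is_subgroup]) (use S in blast)
  then show "carrier H \<subseteq> f ` carrier G" using gen by blast
qed

definition f0 :: "nat \<Rightarrow> (bool \<times> nat) list set \<Rightarrow> (nat \<Rightarrow> nat set set \<times> nat set)" where
  "f0 n = fbar (GG n) (gamma n)"

lemma f0_props:
  assumes n: "n \<ge> 1"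
  shows "f0 n \<in> iso (CC n) (GG n) \<and> (\<forall>i\<in>{1..n}. f0 n (cgen n i) = gamma n i)"
proof -
  interpret D: desc "GG n" n "gamma n" by (rule exp_desc[OF GG_expansion[OF n]])
  have h: "f0 n \<in> hom (CC n) (GG n)" unfolding f0_def by (rule D.fbar_hom)
  have cg: "\<forall>i\<in>{1..n}. f0 n (cgen n i) = gamma n i" unfolding f0_def using D.fbar_cgen by blast
  have cs: "cgen n ` {1..n} \<subseteq> carrier (CC n)" using cgen_carrier by blast
  have "f0 n ` cgen n ` {1..n} = gamma n ` {1..n}" unfolding image_image by (rule image_cong) (use cg in auto)
  then have surj: "f0 n ` carrier (CC n) = carrier (GG n)"
    using img_gen[OF CC_group GG_group h cs] GG_gen by simp
  have cc: "finite (carrier (CC n)) \<and> card (carrier (CC n)) \<le> 2 ^ bound_exp n"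
    by (rule exp_card[OF n CC_expansion])
  have cg2: "card (carrier (GG n)) = 2 ^ bound_exp n" using GG_card[OF n] by simp
  have "card (f0 n ` carrier (CC n)) \<le> card (carrier (CC n))" using card_image_le cc by blast
  then have "card (f0 n ` carrier (CC n)) = card (carrier (CC n))" using surj cg2 cc by simp
  then have "inj_on (f0 n) (carrier (CC n))" using eq_card_imp_inj_on cc by blast
  then have "bij_betw (f0 n) (carrier (CC n)) (carrier (GG n))" using surj by (simp add: bij_betw_def)
  then show ?thesis using h cg by (simp add: iso_def)
qed

theorem theorem3p14:
  fixes n :: nat
  assumes "n \<ge> 1"
  shows "expansion_group n (GG n) (gbold n) (gamma n)
     \<and> expansion_group n (CC n) (cphi n) (cgen n)
     \<and> (\<exists>f. expansion_hom n (CC n) (cgen n) (GG n) (gamma n) f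
            \<and> (\<forall>f'. expansion_hom n (CC n) (cgen n) (GG n) (gamma n) f'
                     \<longrightarrow> (\<forall>c\<in>carrier (CC n). f' c = f c))
            \<and> f \<in> iso (CC n) (GG n))
     \<and> (\<forall>(G :: ('a, 'b) monoid_scheme) \<phi> g. expansion_group n G \<phi> g \<longrightarrow>
          (\<exists>f. f \<in> epi (GG n) G \<and> expansion_hom n (GG n) (gamma n) G g f
               \<and> (\<forall>f'. f' \<in> epi (GG n) G \<and> expansion_hom n (GG n) (gamma n) G g f'
                        \<longrightarrow> (\<forall>x\<in>carrier (GG n). f' x = f x)))
          \<and> finite (carrier G)
          \<and> order G \<le> 2 ^ bound_exp n
          \<and> (\<forall>f. f \<in> epi (GG n) G \<and> expansion_hom n (GG n) (gamma n) G g f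
                   \<longrightarrow> (order G = 2 ^ bound_exp n \<longleftrightarrow> f \<in> iso (GG n) G)))"
proof -
  have n: "n \<ge> 1" by (rule assms)
  interpret C: group "CC n" by (rule CC_group)
  interpret GGg: group "GG n" by (rule GG_group)
  have F0: "f0 n \<in> iso (CC n) (GG n)" and F0g: "\<forall>i\<in>{1..n}. f0 n (cgen n i) = gamma n i"
    using f0_props[OF n] by auto
  have F0h: "f0 n \<in> hom (CC n) (GG n)" using F0 by (simp add: iso_def)
  have F0b: "bij_betw (f0 n) (carrier (CC n)) (carrier (GG n))" using F0 by (simp add: iso_def)
  have cs: "cgen n ` {1..n} \<subseteq> carrier (CC n)" using cgen_carrier by blast
  have gs: "gamma n ` {1..n} \<subseteq> carrier (GG n)" using gamma_GG by blast
  have part3: "\<exists>f. expansion_hom n (CC n) (cgen n) (GG n) (gamma n) f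
            \<and> (\<forall>f'. expansion_hom n (CC n) (cgen n) (GG n) (gamma n) f'
                     \<longrightarrow> (\<forall>c\<in>carrier (CC n). f' c = f c))
            \<and> f \<in> iso (CC n) (GG n)"
  proof (intro exI conjI allI impI ballI)
    show "expansion_hom n (CC n) (cgen n) (GG n) (gamma n) (f0 n)"
      using F0h F0g by (simp add: expansion_hom_def)
    show "f0 n \<in> iso (CC n) (GG n)" by (rule F0)
  next
    fix f' c assume f': "expansion_hom n (CC n) (cgen n) (GG n) (gamma n) f'" and c: "c \<in> carrier (CC n)"
    have f'h: "f' \<in> hom (CC n) (GG n)" using f' by (simp add: expansion_hom_def)
    have ag: "\<forall>s\<in>cgen n ` {1..n}. f' s = f0 n s" using f' F0g by (auto simp: expansion_hom_def)
    show "f' c = f0 n c"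
      by (rule C.hom_agree_gen[OF GG_group f'h F0h cs ag]) (use CC_gen c in blast)
  qed
  have part4: "\<forall>(G :: ('a, 'b) monoid_scheme) \<phi> g. expansion_group n G \<phi> g \<longrightarrow>
          (\<exists>f. f \<in> epi (GG n) G \<and> expansion_hom n (GG n) (gamma n) G g f
               \<and> (\<forall>f'. f' \<in> epi (GG n) G \<and> expansion_hom n (GG n) (gamma n) G g f'
                        \<longrightarrow> (\<forall>x\<in>carrier (GG n). f' x = f x)))
          \<and> finite (carrier G)
          \<and> order G \<le> 2 ^ bound_exp n
          \<and> (\<forall>f. f \<in> epi (GG n) G \<and> expansion_hom n (GG n) (gamma n) G g f
                   \<longrightarrow> (order G = 2 ^ bound_exp n \<longleftrightarrow> f \<in> iso (GG n) G))"
  proof (intro allI impI)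
    fix G :: "('a, 'b) monoid_scheme" and \<phi> g
    assume e: "expansion_group n G \<phi> g"
    interpret D: desc G n g by (rule exp_desc[OF e])
    have gen: "carrier G \<subseteq> generate G (g ` {1..n})" by (rule exp_gen[OF e])
    have card: "finite (carrier G) \<and> card (carrier G) \<le> 2 ^ bound_exp n" by (rule exp_card[OF n e])
    have GGc: "finite (carrier (GG n)) \<and> card (carrier (GG n)) = 2 ^ bound_exp n" by (rule GG_card[OF n])
    define inv0 where "inv0 = inv_into (carrier (CC n)) (f0 n)"
    have inv0i: "inv0 \<in> iso (GG n) (CC n)" unfolding inv0_def by (rule C.iso_set_sym[OF F0])
    have inv0h: "inv0 \<in> hom (GG n) (CC n)" using inv0i by (simp add: iso_def)
    define F where "F = (\<lambda>x. fbar G g (inv0 x))"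
    have fbh: "fbar G g \<in> hom (CC n) G" by (rule D.fbar_hom)
    have Fh: "F \<in> hom (GG n) G"
    proof (rule homI)
      fix x assume x: "x \<in> carrier (GG n)"
      show "F x \<in> carrier G" unfolding F_def using hom_in_carrier[OF fbh hom_in_carrier[OF inv0h x]] .
    next
      fix x y assume x: "x \<in> carrier (GG n)" and y: "y \<in> carrier (GG n)"
      show "F (x \<otimes>\<^bsub>GG n\<^esub> y) = F x \<otimes>\<^bsub>G\<^esub> F y"
        unfolding F_def using hom_mult[OF inv0h x y] hom_mult[OF fbh hom_in_carrier[OF inv0h x] hom_in_carrier[OF inv0h y]]
        by simp
    qed
    have Fg: "\<forall>i\<in>{1..n}. F (gamma n i) = g i"
    proof
      fix i assume i: "i \<in> {1..n}"
      have "inv0 (gamma n i) = cgen n i"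
        unfolding inv0_def using F0g i cgen_carrier[OF i] bij_betw_imp_inj_on[OF F0b]
        by (metis inv_into_f_f)
      then show "F (gamma n i) = g i" unfolding F_def using D.fbar_cgen[OF i] by simp
    qed
    have Fsurj: "F ` carrier (GG n) = carrier G"
    proof -
      have "F ` gamma n ` {1..n} = g ` {1..n}" unfolding image_image by (rule image_cong) (use Fg in auto)
      then show ?thesis using img_gen[OF GG_group D.H.is_group Fh gs] gen by simp
    qed
    have Fepi: "F \<in> epi (GG n) G" using Fh Fsurj by (simp add: epi_def)
    have Fexp: "expansion_hom n (GG n) (gamma n) G g F" using Fh Fg by (simp add: expansion_hom_def)
    have uniq: "\<forall>f'. f' \<in> epi (GG n) G \<and> expansion_hom n (GG n) (gamma n) G g f' \<longrightarrow> (\<forall>x\<in>carrier (GG n). f' x = F x)"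
    proof (intro allI impI ballI)
      fix f' x assume f': "f' \<in> epi (GG n) G \<and> expansion_hom n (GG n) (gamma n) G g f'" and x: "x \<in> carrier (GG n)"
      have f'h: "f' \<in> hom (GG n) G" using f' by (simp add: expansion_hom_def)
      have ag: "\<forall>s\<in>gamma n ` {1..n}. f' s = F s" using f' Fg by (auto simp: expansion_hom_def)
      show "f' x = F x"
        by (rule GGg.hom_agree_gen[OF D.H.is_group f'h Fh gs ag]) (use GG_gen x in blast)
    qed
    have eqiff: "\<forall>f. f \<in> epi (GG n) G \<and> expansion_hom n (GG n) (gamma n) G g f
                   \<longrightarrow> (order G = 2 ^ bound_exp n \<longleftrightarrow> f \<in> iso (GG n) G)"
    proof (intro allI impI)
      fix f assume f: "f \<in> epi (GG n) G \<and> expansion_hom n (GG n) (gamma n) G g f"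
      have fh: "f \<in> hom (GG n) G" and fs: "f ` carrier (GG n) = carrier G" using f by (auto simp: epi_def)
      show "order G = 2 ^ bound_exp n \<longleftrightarrow> f \<in> iso (GG n) G"
      proof
        assume o: "order G = 2 ^ bound_exp n"
        have "card (f ` carrier (GG n)) = card (carrier (GG n))" using o fs GGc by (simp add: order_def)
        then have "inj_on f (carrier (GG n))" using eq_card_imp_inj_on GGc by blast
        then show "f \<in> iso (GG n) G" using fh fs by (simp add: iso_def bij_betw_def)
      next
        assume "f \<in> iso (GG n) G"
        then have "bij_betw f (carrier (GG n)) (carrier G)" by (simp add: iso_def)
        then have "card (carrier (GG n)) = card (carrier G)" by (rule bij_betw_same_card)
        then show "order G = 2 ^ bound_exp n" using GGc by (simp add: order_def)
      qed
    qed
    show "(\<exists>f. f \<in> epi (GG n) G \<and> expansion_hom n (GG n) (gamma n) G g f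
               \<and> (\<forall>f'. f' \<in> epi (GG n) G \<and> expansion_hom n (GG n) (gamma n) G g f'
                        \<longrightarrow> (\<forall>x\<in>carrier (GG n). f' x = f x)))
          \<and> finite (carrier G)
          \<and> order G \<le> 2 ^ bound_exp n
          \<and> (\<forall>f. f \<in> epi (GG n) G \<and> expansion_hom n (GG n) (gamma n) G g f
                   \<longrightarrow> (order G = 2 ^ bound_exp n \<longleftrightarrow> f \<in> iso (GG n) G))"
      using Fepi Fexp uniq card eqiff by (auto simp: order_def)
  qed
  show ?thesis using GG_expansion[OF n] CC_expansion part3 part4 by blast
qed


end
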